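(* For all integers $n\ge0$, $$\overline{bt}(32n+20)\equiv\overline{bt}(64n+40)\equiv\overline{bt}(128n+80)\equiv -\overline{bt}(16n+10)\pmod{128}.$$
   Context: For $|q|<1$ and a positive integer $k$ let $f_k:=\prod_{m=1}^\infty(1-q^{mk})$. The function $\overline{bt}(n)$ is defined by $\sum_{n\ge0}\overline{bt}(n)q^n=\frac{f_4^3}{f_1^6f_2^3}$. *)

theory Defs
  imports "HOL-Computational_Algebra.Formal_Power_Series" "HOL-Number_Theory.Cong"
begin

text \<open>The formal power series f_k = prod_{m>=1} (1 - q^(m k)) over the integers.
  Its n-th coefficient equals the n-th coefficient of the finite product over 1 <= m <= n
  (factors with m > n, k >= 1 do not affect coefficients of degree <= n).\<close>
definition eta_fps :: "nat \<Rightarrow> int fps" where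
  "eta_fps k = Abs_fps (\<lambda>n. fps_nth (\<Prod>m\<in>{1..n}. (1 - fps_X ^ (m * k) :: int fps)) n)"

text \<open>Generating function of bt-bar: the unique integer power series G with
  G * f_1^6 * f_2^3 = f_4^3 (i.e. G = f_4^3 / (f_1^6 f_2^3)).\<close>
definition btbar_fps :: "int fps" where
  "btbar_fps = (THE G. G * (eta_fps 1 ^ 6 * eta_fps 2 ^ 3) = eta_fps 4 ^ 3)"

definition btbar :: "nat \<Rightarrow> int" where
  "btbar n = fps_nth btbar_fps n"

end

theory Submission
  imports Defs "HOL-Library.Numeral_Type"
begin
unbundle fps_syntax



section \<open>Dissection operators\<close>

definition sub2 :: "'a::comm_ring_1 fps \<Rightarrow> 'a fps" where
  "sub2 f = Abs_fps (\<lambda>n. if even n then f $ (n div 2) else 0)"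
definition ev :: "'a::comm_ring_1 fps \<Rightarrow> 'a fps" where
  "ev f = Abs_fps (\<lambda>n. f $ (2*n))"
definition od :: "'a::comm_ring_1 fps \<Rightarrow> 'a fps" where
  "od f = Abs_fps (\<lambda>n. f $ (2*n+1))"

lemma sub2_nth: "sub2 f $ n = (if even n then f $ (n div 2) else 0)"
  by (simp add: sub2_def)
lemma ev_nth[simp]: "ev f $ n = f $ (2*n)"
  by (simp add: ev_def)
lemma od_nth[simp]: "od f $ n = f $ (2*n+1)"
  by (simp add: od_def)

lemma sub2_add[simp]: "sub2 (f + g) = sub2 f + sub2 g"
  by (rule fps_ext) (simp add: sub2_nth)
lemma sub2_diff[simp]: "sub2 (f - g) = sub2 f - sub2 g"
  by (rule fps_ext) (simp add: sub2_nth)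
lemma sub2_uminus[simp]: "sub2 (- f) = - sub2 f"
  by (rule fps_ext) (simp add: sub2_nth)
lemma sub2_0[simp]: "sub2 0 = 0"
  by (rule fps_ext) (simp add: sub2_nth)
lemma sub2_1[simp]: "sub2 1 = 1"
  by (rule fps_ext) (auto simp add: sub2_nth)
lemma sub2_const[simp]: "sub2 (fps_const c) = fps_const c"
  by (rule fps_ext) (auto simp add: sub2_nth)
lemma sub2_of_int[simp]: "sub2 (of_int c) = of_int c"
  by (rule fps_ext) (auto simp add: sub2_nth fps_of_int)
lemma sub2_numeral[simp]: "sub2 (numeral c) = numeral c"
  by (rule fps_ext) (auto simp add: sub2_nth numeral_fps_const)
lemma sub2_X[simp]: "sub2 fps_X = fps_X ^ 2"
  by (rule fps_ext) (auto simp add: sub2_nth fps_X_power_nth)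

lemma sub2_mult[simp]: "sub2 (f * g) = sub2 f * sub2 g"
proof (rule fps_ext)
  fix n
  show "sub2 (f * g) $ n = (sub2 f * sub2 g) $ n"
  proof (cases "even n")
    case False
    have "(sub2 f * sub2 g) $ n = (\<Sum>i=0..n. sub2 f $ i * sub2 g $ (n - i))"
      by (simp add: fps_mult_nth)
    also have "\<dots> = 0"
    proof (rule sum.neutral, intro ballI)
      fix i assume "i \<in> {0..n}"
      hence "i \<le> n" by simp
      show "sub2 f $ i * sub2 g $ (n - i) = 0"
        using False \<open>i \<le> n\<close> by (cases "even i") (auto simp: sub2_nth)
    qed
    finally show ?thesis using False by (simp add: sub2_nth)
  next
    case True
    then obtain m where m: "n = 2*m" by blast
    have "(sub2 f * sub2 g) $ n = (\<Sum>i=0..n. sub2 f $ i * sub2 g $ (n - i))"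
      by (simp add: fps_mult_nth)
    also have "\<dots> = (\<Sum>i\<in>(\<lambda>j. 2*j) ` {0..m}. sub2 f $ i * sub2 g $ (n - i))"
    proof (rule sum.mono_neutral_right)
      show "finite {0..n}" by simp
      show "(\<lambda>j. 2*j) ` {0..m} \<subseteq> {0..n}" using m by auto
      show "\<forall>i\<in>{0..n} - (\<lambda>j. 2*j) ` {0..m}. sub2 f $ i * sub2 g $ (n - i) = 0"
      proof
        fix i assume i: "i \<in> {0..n} - (\<lambda>j. 2*j) ` {0..m}"
        have "odd i"
        proof
          assume "even i"
          then obtain j where "i = 2*j" by blast
          with i m show False by auto
        qed
        thus "sub2 f $ i * sub2 g $ (n - i) = 0" by (simp add: sub2_nth)
      qed
    qed
    also have "\<dots> = (\<Sum>j=0..m. sub2 f $ (2*j) * sub2 g $ (n - 2*j))"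
      by (subst sum.reindex) (auto simp: inj_on_def)
    also have "\<dots> = (\<Sum>j=0..m. f $ j * g $ (m - j))"
    proof (rule sum.cong[OF refl])
      fix j assume "j \<in> {0..m}"
      hence "n - 2*j = 2*(m-j)" using m by auto
      thus "sub2 f $ (2*j) * sub2 g $ (n - 2*j) = f $ j * g $ (m - j)"
        by (simp add: sub2_nth)
    qed
    also have "\<dots> = sub2 (f*g) $ n" using m by (simp add: sub2_nth fps_mult_nth)
    finally show ?thesis ..
  qed
qed

lemma sub2_power[simp]: "sub2 (f ^ k) = sub2 f ^ k"
  by (induction k) simp_all

lemma ev_add[simp]: "ev (f + g) = ev f + ev g" by (rule fps_ext) simp
lemma ev_diff[simp]: "ev (f - g) = ev f - ev g" by (rule fps_ext) simp
lemma ev_uminus[simp]: "ev (- f) = - ev f" by (rule fps_ext) simp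
lemma od_add[simp]: "od (f + g) = od f + od g" by (rule fps_ext) simp
lemma od_diff[simp]: "od (f - g) = od f - od g" by (rule fps_ext) simp
lemma od_uminus[simp]: "od (- f) = - od f" by (rule fps_ext) simp

lemma ev_sub2[simp]: "ev (sub2 f) = f" by (rule fps_ext) (simp add: sub2_nth)
lemma od_sub2[simp]: "od (sub2 f) = 0" by (rule fps_ext) (simp add: sub2_nth)
lemma ev_Xsub2[simp]: "ev (fps_X * sub2 f) = 0"
  by (rule fps_ext) (simp add: sub2_nth fps_X_mult_nth)
lemma od_Xsub2[simp]: "od (fps_X * sub2 f) = f"
  by (rule fps_ext) (simp add: sub2_nth fps_X_mult_nth)

lemma decomp: "f = sub2 (ev f) + fps_X * sub2 (od f)"
proof (rule fps_ext)
  fix n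
  show "f $ n = (sub2 (ev f) + fps_X * sub2 (od f)) $ n"
  proof (cases "even n")
    case True
    then show ?thesis by (auto simp: sub2_nth fps_X_mult_nth)
  next
    case False
    then obtain m where "n = 2*m+1" using oddE by blast
    then show ?thesis by (auto simp: sub2_nth fps_X_mult_nth)
  qed
qed

lemma ev_mult: "ev (f * g) = ev f * ev g + fps_X * (od f * od g)"
proof -
  have "f * g = (sub2 (ev f) + fps_X * sub2 (od f)) * (sub2 (ev g) + fps_X * sub2 (od g))"
    using decomp[of f] decomp[of g] by simp
  also have "\<dots> = sub2 (ev f * ev g + fps_X * (od f * od g))
      + fps_X * sub2 (ev f * od g + od f * ev g)"
    by (simp add: algebra_simps power2_eq_square)
  finally have e: "f * g = sub2 (ev f * ev g + fps_X * (od f * od g))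
      + fps_X * sub2 (ev f * od g + od f * ev g)" .
  show ?thesis by (subst e) (simp del: sub2_mult sub2_add)
qed

lemma od_mult: "od (f * g) = ev f * od g + od f * ev g"
proof -
  have "f * g = (sub2 (ev f) + fps_X * sub2 (od f)) * (sub2 (ev g) + fps_X * sub2 (od g))"
    using decomp[of f] decomp[of g] by simp
  also have "\<dots> = sub2 (ev f * ev g + fps_X * (od f * od g))
      + fps_X * sub2 (ev f * od g + od f * ev g)"
    by (simp add: algebra_simps power2_eq_square)
  finally have e: "f * g = sub2 (ev f * ev g + fps_X * (od f * od g))
      + fps_X * sub2 (ev f * od g + od f * ev g)" .
  show ?thesis by (subst e) (simp del: sub2_mult sub2_add)
qed

lemma ev_X[simp]: "ev fps_X = 0"
  using ev_Xsub2[of 1] by simp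
lemma od_X[simp]: "od fps_X = 1"
  using od_Xsub2[of 1] by simp
lemma ev_1[simp]: "ev 1 = 1" using ev_sub2[of 1] by simp
lemma od_1[simp]: "od 1 = 0" using od_sub2[of 1] by simp

lemma ev_sub2_mult[simp]: "ev (sub2 a * g) = a * ev g"
  by (simp add: ev_mult)
lemma od_sub2_mult[simp]: "od (sub2 a * g) = a * od g"
  by (simp add: od_mult)

lemma ev_four:
  "ev (sub2 y0 + fps_X * sub2 y1 + a * sub2 y2 + fps_X * a * sub2 y3)
     = y0 + ev a * y2 + fps_X * od a * y3"
  by (simp add: ev_mult od_mult algebra_simps)
lemma od_four:
  "od (sub2 y0 + fps_X * sub2 y1 + a * sub2 y2 + fps_X * a * sub2 y3)
     = y1 + od a * y2 + ev a * y3"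
  by (simp add: ev_mult od_mult algebra_simps)



section \<open>Sign change q -> -q\<close>

definition negq :: "'a::comm_ring_1 fps \<Rightarrow> 'a fps" where
  "negq f = Abs_fps (\<lambda>n. (-1)^n * f $ n)"

lemma negq_nth: "negq f $ n = (-1)^n * f $ n" by (simp add: negq_def)

lemma negq_add[simp]: "negq (f + g) = negq f + negq g"
  by (rule fps_ext) (simp add: negq_nth algebra_simps)
lemma negq_diff[simp]: "negq (f - g) = negq f - negq g"
  by (rule fps_ext) (simp add: negq_nth algebra_simps)
lemma negq_uminus[simp]: "negq (- f) = - negq f"
  by (rule fps_ext) (simp add: negq_nth algebra_simps)
lemma negq_1[simp]: "negq 1 = 1"
  by (rule fps_ext) (simp add: negq_nth)
lemma negq_0[simp]: "negq 0 = 0"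
  by (rule fps_ext) (simp add: negq_nth)
lemma negq_X[simp]: "negq fps_X = - fps_X"
  by (rule fps_ext) (simp add: negq_nth)
lemma negq_numeral[simp]: "negq (numeral k) = numeral k"
  by (rule fps_ext) (simp add: negq_nth numeral_fps_const)
lemma negq_negq[simp]: "negq (negq f) = f"
  by (rule fps_ext) (simp add: negq_nth)
lemma negq_mult[simp]: "negq (f * g) = negq f * negq g"
proof (rule fps_ext)
  fix n
  have "negq (f * g) $ n = (\<Sum>i=0..n. (-1)^n * (f $ i * g $ (n - i)))"
    by (simp add: negq_nth fps_mult_nth sum_distrib_left)
  also have "\<dots> = (\<Sum>i=0..n. ((-1)^i * f $ i) * ((-1)^(n-i) * g $ (n - i)))"
  proof (rule sum.cong[OF refl])
    fix i assume "i \<in> {0..n}"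
    hence "(-1::'a)^n = (-1)^i * (-1)^(n-i)" by (simp add: power_add[symmetric])
    thus "(-1)^n * (f $ i * g $ (n - i)) = ((-1)^i * f $ i) * ((-1)^(n-i) * g $ (n - i))"
      by (simp add: algebra_simps)
  qed
  also have "\<dots> = (negq f * negq g) $ n" by (simp add: fps_mult_nth negq_nth)
  finally show "negq (f * g) $ n = (negq f * negq g) $ n" .
qed
lemma negq_power[simp]: "negq (f ^ k) = negq f ^ k"
  by (induction k) simp_all
lemma negq_prod: "negq (\<Prod>i\<in>S. f i) = (\<Prod>i\<in>S. negq (f i))"
  by (induction S rule: infinite_finite_induct) simp_all
lemma negq_sub2[simp]: "negq (sub2 f) = sub2 f"
  by (rule fps_ext) (simp add: negq_nth sub2_nth)
lemma ev_negq[simp]: "ev (negq f) = ev f"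
  by (rule fps_ext) (simp add: negq_nth)
lemma od_negq[simp]: "od (negq f) = - od f"
  by (rule fps_ext) (simp add: negq_nth)

definition eqv :: "nat \<Rightarrow> 'a::comm_ring_1 fps \<Rightarrow> 'a fps \<Rightarrow> bool" where
  "eqv N f g \<longleftrightarrow> (\<forall>i<N. f $ i = g $ i)"

lemma eqv_refl[simp]: "eqv N f f" by (simp add: eqv_def)
lemma eqv_sym: "eqv N f g \<Longrightarrow> eqv N g f" by (simp add: eqv_def)
lemma eqv_trans: "eqv N f g \<Longrightarrow> eqv N g h \<Longrightarrow> eqv N f h" by (simp add: eqv_def)
lemma eqv_add: "eqv N f g \<Longrightarrow> eqv N f' g' \<Longrightarrow> eqv N (f + f') (g + g')"
  by (simp add: eqv_def)
lemma eqv_mult: "eqv N f g \<Longrightarrow> eqv N f' g' \<Longrightarrow> eqv N (f * f') (g * g')"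
  unfolding eqv_def fps_mult_nth by auto
lemma eqv_power: "eqv N f g \<Longrightarrow> eqv N (f ^ k) (g ^ k)"
  by (induction k) (simp_all add: eqv_mult)
lemma eqv_sum: "(\<And>i. i \<in> S \<Longrightarrow> eqv N (f i) (g i)) \<Longrightarrow> eqv N (\<Sum>i\<in>S. f i) (\<Sum>i\<in>S. g i)"
  by (induction S rule: infinite_finite_induct) (simp_all add: eqv_add)
lemma eqv_prod: "(\<And>i. i \<in> S \<Longrightarrow> eqv N (f i) (g i)) \<Longrightarrow> eqv N (\<Prod>i\<in>S. f i) (\<Prod>i\<in>S. g i)"
  by (induction S rule: infinite_finite_induct) (simp_all add: eqv_mult)
lemma eqv_mono: "eqv N f g \<Longrightarrow> M \<le> N \<Longrightarrow> eqv M f g" by (simp add: eqv_def)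
lemma eqv_negq: "eqv N f g \<Longrightarrow> eqv N (negq f) (negq g)" by (simp add: eqv_def negq_nth)
lemma eqv_Xpow: "N \<le> e \<Longrightarrow> eqv N (fps_X ^ e * a) 0"
  by (simp add: eqv_def fps_X_power_mult_nth)
lemma eqv_all: "(\<And>N. eqv N f g) \<Longrightarrow> f = g"
  by (rule fps_ext) (auto simp: eqv_def)

lemma eqv_one_minus_Xpow: "N \<le> e \<Longrightarrow> eqv N (1 - fps_X ^ e) 1"
  by (simp add: eqv_def)

lemma eqv_cancel:
  fixes u :: "'a::comm_ring_1 fps"
  assumes "u $ 0 = 1" "eqv N (u * a) (u * b)"
  shows "eqv N a b"
proof -
  have "\<forall>i<N. (a - b) $ i = 0"
  proof (intro allI impI)
    fix i assume "i < N"
    thus "(a - b) $ i = 0"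
    proof (induction i rule: less_induct)
      case (less i)
      have "(u * (a - b)) $ i = 0" using assms(2) less.prems
        by (simp add: eqv_def algebra_simps)
      moreover have "(u * (a - b)) $ i = (\<Sum>j=0..i. u $ j * (a-b) $ (i - j))"
        by (simp add: fps_mult_nth)
      moreover have "(\<Sum>j=0..i. u $ j * (a-b) $ (i - j)) = u $ 0 * (a-b) $ i"
      proof -
        have "(\<Sum>j=0..i. u $ j * (a-b) $ (i - j)) = u $ 0 * (a-b) $ (i - 0) + (\<Sum>j=Suc 0..i. u $ j * (a-b) $ (i - j))"
          by (simp add: sum.atLeast_Suc_atMost)
        moreover have "(\<Sum>j=Suc 0..i. u $ j * (a-b) $ (i - j)) = 0"
          by (rule sum.neutral) (use less in auto)
        ultimately show ?thesis by simp
      qed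
      ultimately show ?case using assms(1) by simp
    qed
  qed
  thus ?thesis by (simp add: eqv_def)
qed

section \<open>Finite eta products\<close>

definition pr :: "nat \<Rightarrow> nat \<Rightarrow> int fps" where
  "pr k M = (\<Prod>m\<in>{1..M}. (1 - fps_X ^ (m * k)))"

lemma eta_nth: "eta_fps k $ n = pr k n $ n"
  by (simp add: eta_fps_def pr_def)

lemma eqv_prod_tail:
  assumes "\<And>m. m \<in> S \<Longrightarrow> N \<le> e m"
  shows "eqv N (\<Prod>m\<in>S. (1 - fps_X ^ e m) :: 'a::comm_ring_1 fps) 1"
proof -
  have "eqv N (\<Prod>m\<in>S. (1 - fps_X ^ e m) :: 'a fps) (\<Prod>m\<in>S. 1)"
    by (rule eqv_prod) (simp add: eqv_one_minus_Xpow assms)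
  thus ?thesis by simp
qed

lemma pr_mono_eqv:
  assumes "k \<ge> 1" "M \<le> M'"
  shows "eqv (Suc M) (pr k M) (pr k M')"
proof -
  have split: "{1..M'} = {1..M} \<union> {Suc M..M'}" using assms by auto
  have "pr k M' = pr k M * (\<Prod>m\<in>{Suc M..M'}. (1 - fps_X ^ (m * k)))"
    unfolding pr_def split by (subst prod.union_disjoint) auto
  moreover have t: "eqv (Suc M) (\<Prod>m\<in>{Suc M..M'}. (1 - fps_X ^ (m * k)) :: int fps) 1"
  proof (rule eqv_prod_tail)
    fix m assume "m \<in> {Suc M..M'}"
    hence "Suc M \<le> m" by simp
    also have "m \<le> m * k" using assms(1) by simp
    finally show "Suc M \<le> m * k" .
  qed
  ultimately show ?thesis
    using eqv_mult[OF eqv_refl[of "Suc M" "pr k M"] eqv_sym[OF t]] by (metis mult.right_neutral)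
qed

lemma eta_eqv:
  assumes "k \<ge> 1" "N \<le> Suc M"
  shows "eqv N (eta_fps k) (pr k M)"
  unfolding eqv_def
proof (intro allI impI)
  fix i assume "i < N"
  hence "i \<le> M" using assms by simp
  have "eqv (Suc i) (pr k i) (pr k M)" by (rule pr_mono_eqv) (use assms \<open>i \<le> M\<close> in auto)
  thus "eta_fps k $ i = pr k M $ i" by (simp add: eta_nth eqv_def)
qed

lemma prod_split_odd_even:
  fixes g :: "nat \<Rightarrow> 'a::comm_monoid_mult" and M :: nat
  shows "(\<Prod>m\<in>{1..2*M}. g m) = (\<Prod>i<M. g (2*i+1)) * (\<Prod>i\<in>{1..M}. g (2*i))"
proof (induction M)
  case 0 then show ?case by simp
next
  case (Suc M)
  have e1: "{1..2 * Suc M} = insert (2*M+2) (insert (2*M+1) {1..2*M})" by auto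
  have "(\<Prod>m\<in>{1..2*Suc M}. g m) = g (2*M+2) * (g (2*M+1) * (\<Prod>m\<in>{1..2*M}. g m))"
    unfolding e1 by simp
  also have "\<dots> = (\<Prod>i<Suc M. g (2*i+1)) * (\<Prod>i\<in>{1..Suc M}. g (2*i))"
    using Suc by (simp add: algebra_simps)
  finally show ?case .
qed

lemma eta_pos: "eta_fps k $ 0 = 1"
  by (simp add: eta_nth pr_def)

lemma sub2_prod: "sub2 (\<Prod>i\<in>S. f i) = (\<Prod>i\<in>S. sub2 (f i))"
  by (induction S rule: infinite_finite_induct) simp_all

lemma sub2_pr: "sub2 (pr k M) = pr (2*k) M"
  unfolding pr_def sub2_prod
  by (rule prod.cong[OF refl]) (simp add: power_mult[symmetric] mult.commute mult.left_commute)


lemma eqv_eta_all: "(\<And>N. \<exists>a b. eqv N f a \<and> eqv N g b \<and> a = b) \<Longrightarrow> f = g"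
  by (metis eqv_all eqv_sym eqv_trans)

lemma sub2_eta: assumes "k \<ge> 1" shows "sub2 (eta_fps k) = eta_fps (2*k)"
proof (rule fps_ext)
  fix n
  show "sub2 (eta_fps k) $ n = eta_fps (2*k) $ n"
  proof (cases "even n")
    case False
    then show ?thesis by (simp add: sub2_nth eta_nth sub2_pr[symmetric])
  next
    case True
    then obtain m where m: "n = 2*m" by blast
    have "eqv (Suc m) (pr k m) (pr k n)" by (rule pr_mono_eqv) (use assms m in auto)
    hence "pr k m $ m = pr k n $ m" by (simp add: eqv_def)
    thus ?thesis using m by (simp add: sub2_nth eta_nth sub2_pr[symmetric])
  qed
qed

lemma negq_pr2: "negq (pr (2*k) M) = pr (2*k) M"
  unfolding pr_def negq_prod
  by (rule prod.cong[OF refl]) (simp add: power_mult[symmetric] power_mult_distrib mult.commute mult.left_commute)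

lemma negq_eta2: "negq (eta_fps 2) = eta_fps 2"
proof (rule eqv_all)
  fix N
  have e: "eqv N (eta_fps 2) (pr 2 N)" by (rule eta_eqv) auto
  have "eqv N (negq (eta_fps 2)) (negq (pr 2 N))" by (rule eqv_negq[OF e])
  also have "negq (pr 2 N) = pr 2 N" using negq_pr2[of 1 N] by simp
  finally show "eqv N (negq (eta_fps 2)) (eta_fps 2)" using eqv_trans eqv_sym e by blast
qed

lemma odd_factor: "(1 - (- x)^(2*i+1)) * (1 - x^(2*i+1)) = 1 - (x::'a::comm_ring_1)^((2*i+1)*2)"
proof -
  have h: "(- x)^(2*i+1) = - (x^(2*i+1))" by (rule power_minus_odd) simp
  have g: "\<And>y::'a. (1 - (- y)) * (1 - y) = 1 - y * y" by (simp add: algebra_simps)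
  have p: "x^((2*i+1)*2) = x^(2*i+1) * x^(2*i+1)" by (simp only: power_mult power2_eq_square)
  show ?thesis unfolding h p by (rule g)
qed

lemma even_factor: "(1 - (- x)^(2*i)) * (1 - x^(2*i)) = (1 - (x::'a::comm_ring_1)^(i*2))^2"
proof -
  have "(- x)^(2*i) = ((- x)^2)^i" by (rule power_mult)
  also have "\<dots> = (x^2)^i" by simp
  also have "\<dots> = x^(i*2)" by (simp add: power_mult[symmetric] mult.commute)
  finally have h: "(- x)^(2*i) = x^(i*2)" .
  have h2: "x^(2*i) = x^(i*2)" by (simp add: mult.commute)
  show ?thesis unfolding h h2 by (simp add: power2_eq_square)
qed

lemma pr_finite_id:
  "negq (pr 1 (2*M)) * pr 1 (2*M) * pr 4 M = pr 2 M ^ 2 * pr 2 (2*M)"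
proof -
  let ?g = "\<lambda>m. (1 - (- fps_X) ^ m) * (1 - fps_X ^ m) :: int fps"
  have "negq (pr 1 (2*M)) * pr 1 (2*M) = (\<Prod>m\<in>{1..2*M}. ?g m)"
    unfolding pr_def negq_prod by (simp add: prod.distrib)
  also have "\<dots> = (\<Prod>i<M. ?g (2*i+1)) * (\<Prod>i\<in>{1..M}. ?g (2*i))"
    by (rule prod_split_odd_even)
  also have "(\<Prod>i<M. ?g (2*i+1)) = (\<Prod>i<M. (1 - fps_X ^ ((2*i+1)*2)))"
    by (rule prod.cong[OF refl]) (rule odd_factor)
  also have "(\<Prod>i\<in>{1..M}. ?g (2*i)) = (\<Prod>i\<in>{1..M}. (1 - fps_X ^ (i*2))) ^ 2"
    unfolding prod_power_distrib by (rule prod.cong[OF refl]) (rule even_factor)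
  finally have 1: "negq (pr 1 (2*M)) * pr 1 (2*M) = (\<Prod>i<M. (1 - fps_X ^ ((2*i+1)*2))) * pr 2 M ^ 2"
    by (simp add: pr_def)
  have 2: "pr 2 (2*M) = (\<Prod>i<M. (1 - fps_X ^ ((2*i+1)*2))) * pr 4 M"
    unfolding pr_def by (subst prod_split_odd_even) (simp add: mult.commute mult.left_commute)
  show ?thesis using 1 2 by (simp add: algebra_simps)
qed

lemma eta_rel1: "negq (eta_fps 1) * eta_fps 1 * eta_fps 4 = eta_fps 2 ^ 3"
proof (rule eqv_all)
  fix N
  have a: "eqv N (eta_fps 1) (pr 1 (2*N))" by (rule eta_eqv) auto
  have b: "eqv N (eta_fps 4) (pr 4 N)" by (rule eta_eqv) auto
  have c: "eqv N (eta_fps 2) (pr 2 N)" by (rule eta_eqv) auto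
  have d: "eqv N (eta_fps 2) (pr 2 (2*N))" by (rule eta_eqv) auto
  have "eqv N (negq (eta_fps 1) * eta_fps 1 * eta_fps 4) (negq (pr 1 (2*N)) * pr 1 (2*N) * pr 4 N)"
    by (intro eqv_mult eqv_negq a b)
  also have "negq (pr 1 (2*N)) * pr 1 (2*N) * pr 4 N = pr 2 N ^ 2 * pr 2 (2*N)" by (rule pr_finite_id)
  finally have l: "eqv N (negq (eta_fps 1) * eta_fps 1 * eta_fps 4) (pr 2 N ^ 2 * pr 2 (2*N))" .
  have "eqv N (eta_fps 2 ^ 2 * eta_fps 2) (pr 2 N ^ 2 * pr 2 (2*N))"
    by (intro eqv_mult eqv_power c d)
  moreover have "eta_fps 2 ^ 3 = eta_fps 2 ^ 2 * eta_fps 2"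
    by (simp add: power2_eq_square power3_eq_cube)
  ultimately have "eqv N (eta_fps 2 ^ 3) (pr 2 N ^ 2 * pr 2 (2*N))" by simp
  thus "eqv N (negq (eta_fps 1) * eta_fps 1 * eta_fps 4) (eta_fps 2 ^ 3)"
    using l eqv_sym eqv_trans by blast
qed



section \<open>Gaussian binomial coefficients\<close>

fun gb :: "'a::comm_ring_1 \<Rightarrow> nat \<Rightarrow> nat \<Rightarrow> 'a" where
  "gb t 0 j = (if j = 0 then 1 else 0)"
| "gb t (Suc m) j = (if j = 0 then 1 else gb t m (j - 1) + t ^ j * gb t m j)"

lemma gb_0[simp]: "gb t m 0 = 1" by (cases m) auto
lemma gb_Suc_Suc: "gb t (Suc m) (Suc j) = gb t m j + t^(Suc j) * gb t m (Suc j)" by simp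
lemma gb_gt: "m < j \<Longrightarrow> gb t m j = 0" by (induction m arbitrary: j) auto
lemma gb_diag: "gb t m m = 1" by (induction m) (auto simp: gb_gt)

definition Pq :: "'a::comm_ring_1 \<Rightarrow> nat \<Rightarrow> 'a" where
  "Pq t k = (\<Prod>i\<in>{1..k}. (1 - t^i))"

lemma Pq_0[simp]: "Pq t 0 = 1" by (simp add: Pq_def)
lemma Pq_Suc: "Pq t (Suc k) = Pq t k * (1 - t^(Suc k))" by (simp add: Pq_def)

lemma gb_P: "j \<le> m \<Longrightarrow> gb t m j * Pq t j * Pq t (m - j) = Pq t m"
proof (induction m arbitrary: j)
  case 0 then show ?case by simp
next
  case (Suc m)
  show ?case
  proof (cases j)
    case 0 then show ?thesis by simp
  next
    case (Suc j')
    show ?thesis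
    proof (cases "j' = m")
      case True
      then show ?thesis using Suc by (simp add: gb_diag)
    next
      case False
      hence lt: "j' < m" using Suc \<open>j \<le> Suc m\<close> by simp
      have i1: "gb t m j' * Pq t j' * Pq t (m - j') = Pq t m" using Suc.IH[of j'] lt by simp
      have i2: "gb t m (Suc j') * Pq t (Suc j') * Pq t (m - Suc j') = Pq t m" using Suc.IH[of "Suc j'"] lt by simp
      have md: "m - j' = Suc (m - Suc j')" using lt by simp
      have pm: "Pq t (m - j') = Pq t (m - Suc j') * (1 - t^(m - j'))" unfolding md Pq_Suc ..
      have "Suc j' + (m - j') = Suc m" using lt by simp
      hence ex: "t^(Suc j') * t^(m - j') = t^(Suc m)" by (metis power_add)
      have "gb t (Suc m) j * Pq t j * Pq t (Suc m - j)
          = (gb t m j' + t^(Suc j') * gb t m (Suc j')) * Pq t (Suc j') * Pq t (m - j')"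
        using Suc by simp
      also have "\<dots> = (gb t m j' * Pq t j' * Pq t (m - j')) * (1 - t^(Suc j'))
          + t^(Suc j') * (1 - t^(m - j')) * (gb t m (Suc j') * Pq t (Suc j') * Pq t (m - Suc j'))"
        unfolding pm Pq_Suc[of t j'] by (simp add: algebra_simps)
      also have "\<dots> = Pq t m * (1 - t^(Suc j')) + t^(Suc j') * (1 - t^(m - j')) * Pq t m"
        unfolding i1 i2 ..
      also have "\<dots> = Pq t m * (1 - t^(Suc j') * t^(m - j'))" by (simp add: algebra_simps)
      also have "\<dots> = Pq t (Suc m)" unfolding ex Pq_Suc ..
      finally show ?thesis .
    qed
  qed
qed

section \<open>Cauchy's q-binomial theorem\<close>

definition T :: "nat \<Rightarrow> nat" where "T k = (\<Sum>i<k. i)"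
lemma T_0[simp]: "T 0 = 0" by (simp add: T_def)
lemma T_Suc: "T (Suc k) = T k + k" by (simp add: T_def)
lemma T_twice: "2 * T k = k * (k - 1)"
proof (induction k)
  case 0 show ?case by simp
next
  case (Suc k)
  have "2 * T (Suc k) = k * (k - 1) + 2 * k" using Suc by (simp add: T_Suc)
  also have "\<dots> = Suc k * (Suc k - 1)" by (cases k) (simp_all add: algebra_simps)
  finally show ?case .
qed

lemma cauchy:
  fixes y t :: "'a::comm_ring_1"
  shows "(\<Prod>i<m. (y + t^i)) = (\<Sum>j\<le>m. gb t m j * t^(T (m - j)) * y^j)"
proof (induction m)
  case 0 then show ?case by simp
next
  case (Suc m)
  define c where "c j = gb t m j * t^(T (m - j))" for j
  have "(\<Prod>i<Suc m. (y + t^i)) = (\<Sum>j\<le>m. c j * y^j) * (y + t^m)"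
    using Suc by (simp add: c_def)
  also have "\<dots> = (\<Sum>j\<le>m. c j * y^j * y) + (\<Sum>j\<le>m. c j * y^j * t^m)"
    by (simp add: distrib_left sum_distrib_right)
  also have "\<dots> = (\<Sum>j\<le>m. c j * y^(Suc j)) + (\<Sum>j\<le>m. c j * t^m * y^j)"
    by (simp add: mult_ac)
  finally have L: "(\<Prod>i<Suc m. (y + t^i)) = (\<Sum>j\<le>m. c j * y^(Suc j)) + (\<Sum>j\<le>m. c j * t^m * y^j)" .
  have S2: "(\<Sum>j\<le>m. c j * t^m * y^j) = t^(T (Suc m)) + (\<Sum>j<m. gb t m (Suc j) * t^(T (m - Suc j)) * t^m * y^(Suc j))"
    by (subst sum.atMost_shift) (simp add: c_def T_Suc power_add)
  have S3: "(\<Sum>j\<le>m. t^(Suc j) * gb t m (Suc j) * t^(T (m - j)) * y^(Suc j))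
      = (\<Sum>j<m. gb t m (Suc j) * t^(T (m - Suc j)) * t^m * y^(Suc j))"
  proof -
    have "(\<Sum>j\<le>m. t^(Suc j) * gb t m (Suc j) * t^(T (m - j)) * y^(Suc j))
        = (\<Sum>j<m. t^(Suc j) * gb t m (Suc j) * t^(T (m - j)) * y^(Suc j))"
      by (simp add: lessThan_Suc_atMost[symmetric] gb_gt)
    also have "\<dots> = (\<Sum>j<m. gb t m (Suc j) * t^(T (m - Suc j)) * t^m * y^(Suc j))"
    proof (rule sum.cong[OF refl])
      fix j assume "j \<in> {..<m}"
      hence jm: "j < m" by simp
      have md: "m - j = Suc (m - Suc j)" using jm by simp
      have "Suc j + T (m - j) = T (m - Suc j) + m" unfolding md T_Suc using jm by simp
      hence "t^(Suc j) * t^(T (m - j)) = t^(T (m - Suc j)) * t^m" by (metis power_add)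
      thus "t^(Suc j) * gb t m (Suc j) * t^(T (m - j)) * y^(Suc j) = gb t m (Suc j) * t^(T (m - Suc j)) * t^m * y^(Suc j)"
        by (metis (no_types, lifting) mult.assoc mult.commute)
    qed
    finally show ?thesis .
  qed
  have R: "(\<Sum>j\<le>Suc m. gb t (Suc m) j * t^(T (Suc m - j)) * y^j)
      = t^(T (Suc m)) + (\<Sum>j\<le>m. c j * y^(Suc j))
        + (\<Sum>j\<le>m. t^(Suc j) * gb t m (Suc j) * t^(T (m - j)) * y^(Suc j))"
    by (subst sum.atMost_Suc_shift) (simp add: c_def algebra_simps sum.distrib)
  show ?case using L S2 S3 R by (simp add: algebra_simps)
qed



definition Ood :: "nat \<Rightarrow> int fps" where "Ood n = (\<Prod>i<n. (1 - fps_X^(2*i+1)))"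
definition dd :: "nat \<Rightarrow> nat \<Rightarrow> nat" where "dd n j = (if j \<le> n then n - j else j - n)"

lemma prod_lessThan_add:
  fixes f :: "nat \<Rightarrow> 'a::comm_monoid_mult" and n m :: nat
  shows "(\<Prod>i<n+m. f i) = (\<Prod>i<n. f i) * (\<Prod>i<m. f (n+i))"
  by (induction m) (simp_all add: mult.assoc)

lemma int_k_km1: "int (k * (k - 1)) = int k * (int k - 1)"
  by (cases k) (auto simp: algebra_simps)

lemma exp_id:
  assumes "n \<ge> 1" "j \<le> 2*n"
  shows "2*T(2*n-j) + (2*n-1)*j = 2*T n + (2*n-1)*n + dd n j ^ 2"
proof -
  have a: "int (2*T(2*n-j)) = (2*int n - int j) * (2*int n - int j - 1)"
    unfolding T_twice int_k_km1 using assms by (simp add: of_nat_diff)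
  have b: "int (2*T n) = int n * (int n - 1)" unfolding T_twice int_k_km1 ..
  have "int (dd n j) = \<bar>int n - int j\<bar>" by (simp add: dd_def of_nat_diff)
  hence c: "int (dd n j ^ 2) = (int n - int j)^2" by simp
  have d: "int (2*n-1) = 2 * int n - 1" using assms by (simp add: of_nat_diff)
  have "int (2*T(2*n-j) + (2*n-1)*j) = int (2*T(2*n-j)) + int (2*n-1) * int j" by simp
  also have "\<dots> = (2*int n - int j) * (2*int n - int j - 1) + (2*int n - 1)*int j" unfolding a d ..
  also have "\<dots> = int n*(int n - 1) + (2*int n - 1)*int n + (int n - int j)^2"
    by (simp add: algebra_simps power2_eq_square)
  also have "\<dots> = int (2*T n) + int (2*n-1) * int n + int (dd n j ^ 2)" unfolding b c d ..
  also have "\<dots> = int (2*T n + (2*n-1)*n + dd n j ^ 2)" by simp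
  finally show ?thesis by (simp only: of_nat_eq_iff)
qed

lemma m1m1: "(-1::'a::comm_ring_1)^n * (-1)^n = 1"
  by (induction n) (auto simp: algebra_simps)

lemma finite_gauss:
  assumes n1: "n \<ge> 1"
  shows "Ood n ^ 2 = (\<Sum>j\<le>2*n. (-1)^(n+j) * fps_X^(dd n j ^ 2) * gb (fps_X^2) (2*n) j)"
proof -
  define y :: "int fps" where "y = - (fps_X^(2*n-1))"
  define t :: "int fps" where "t = fps_X^2"
  define E where "E = 2*T n + (2*n-1)*n"
  have C: "(\<Prod>i<2*n. (y + t^i)) = (\<Sum>j\<le>2*n. gb t (2*n) j * t^(T (2*n - j)) * y^j)"
    by (rule cauchy)
  have h1: "(\<Prod>i<2*n. (y + t^i)) = (\<Prod>i<n. (y + t^i)) * (\<Prod>i<n. (y + t^(n+i)))"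
    using prod_lessThan_add[of "\<lambda>i. y + t^i" n n] by (simp add: mult_2)
  have h2: "(\<Prod>i<n. (y + t^i)) = fps_X^(2*T n) * Ood n"
  proof -
    have "(\<Prod>i<n. (y + t^i)) = (\<Prod>i<n. fps_X^(2*i) * (1 - fps_X^(2*(n - Suc i)+1)))"
    proof (rule prod.cong[OF refl])
      fix i assume "i \<in> {..<n}"
      hence "2*i + (2*(n - Suc i)+1) = 2*n-1" by auto
      hence "fps_X^(2*n-1) = (fps_X^(2*i) :: int fps) * fps_X^(2*(n - Suc i)+1)"
        by (metis power_add)
      thus "y + t^i = fps_X^(2*i) * (1 - fps_X^(2*(n - Suc i)+1))"
        by (simp add: y_def t_def power_mult[symmetric] algebra_simps)
    qed
    also have "\<dots> = (\<Prod>i<n. fps_X^(2*i)) * (\<Prod>i<n. (1 - fps_X^(2*(n - Suc i)+1)))"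
      by (rule prod.distrib)
    also have "(\<Prod>i<n. fps_X^(2*i)) = (fps_X :: int fps)^(2*T n)"
      by (simp add: power_sum[symmetric] T_def sum_distrib_left)
    also have "(\<Prod>i<n. (1 - fps_X^(2*(n - Suc i)+1))) = Ood n"
      unfolding Ood_def by (rule prod.nat_diff_reindex)
    finally show ?thesis .
  qed
  have h3: "(\<Prod>i<n. (y + t^(n+i))) = (- (fps_X^(2*n-1)))^n * Ood n"
  proof -
    have "(\<Prod>i<n. (y + t^(n+i))) = (\<Prod>i<n. (- (fps_X^(2*n-1))) * (1 - fps_X^(2*i+1)))"
    proof (rule prod.cong[OF refl])
      fix i assume "i \<in> {..<n}"
      have "(2*n-1) + (2*i+1) = 2*(n+i)" using n1 by auto
      hence "fps_X^(2*n-1) * fps_X^(2*i+1) = (fps_X^(2*(n+i)) :: int fps)"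
        by (metis power_add)
      thus "y + t^(n+i) = (- (fps_X^(2*n-1))) * (1 - fps_X^(2*i+1))"
        by (simp add: y_def t_def power_mult[symmetric] algebra_simps)
    qed
    also have "\<dots> = (\<Prod>i<n. - (fps_X^(2*n-1))) * (\<Prod>i<n. (1 - fps_X^(2*i+1)))"
      by (rule prod.distrib)
    also have "\<dots> = (- (fps_X^(2*n-1)))^n * Ood n"
      by (simp only: prod_constant card_lessThan Ood_def)
    finally show ?thesis .
  qed
  have m: "(- (fps_X^(2*n-1)))^n = (-1)^n * (fps_X::int fps)^((2*n-1)*n)"
    by (subst power_minus, simp only: power_mult)
  have "(\<Prod>i<2*n. (y + t^i)) = fps_X^(2*T n) * Ood n * ((-1)^n * fps_X^((2*n-1)*n) * Ood n)"
    unfolding h1 h2 h3 m ..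
  also have "\<dots> = fps_X^(2*T n) * fps_X^((2*n-1)*n) * ((-1)^n * (Ood n * Ood n))"
    by (simp only: mult_ac)
  also have "\<dots> = fps_X^E * ((-1)^n * Ood n ^ 2)"
    by (simp only: E_def power_add power2_eq_square)
  finally have L: "(\<Prod>i<2*n. (y + t^i)) = fps_X^E * ((-1)^n * Ood n ^ 2)" .
  have R: "(\<Sum>j\<le>2*n. gb t (2*n) j * t^(T (2*n - j)) * y^j)
     = fps_X^E * (\<Sum>j\<le>2*n. (-1)^j * fps_X^(dd n j ^ 2) * gb (fps_X^2) (2*n) j)"
    unfolding sum_distrib_left
  proof (rule sum.cong[OF refl])
    fix j assume "j \<in> {..2*n}"
    hence ex: "2*T(2*n-j) + (2*n-1)*j = E + dd n j ^ 2" using exp_id[OF n1] by (simp add: E_def)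
    have yj: "y^j = (-1)^j * (fps_X :: int fps)^((2*n-1)*j)"
      unfolding y_def by (subst power_minus, simp only: power_mult)
    have tj: "t^(T (2*n - j)) = (fps_X :: int fps)^(2*T(2*n-j))"
      unfolding t_def by (simp only: power_mult)
    have "t^(T (2*n - j)) * y^j = (-1)^j * (fps_X :: int fps)^(2*T(2*n-j) + (2*n-1)*j)"
      unfolding yj tj by (simp only: power_add mult_ac)
    also have "\<dots> = (-1)^j * fps_X^(E + dd n j ^ 2)" unfolding ex ..
    finally show "gb t (2*n) j * t^(T (2*n - j)) * y^j = fps_X^E * ((-1)^j * fps_X^(dd n j ^ 2) * gb (fps_X^2) (2*n) j)"
      by (simp add: t_def power_add algebra_simps)
  qed
  have "fps_X^E * ((-1)^n * Ood n ^ 2) = fps_X^E * (\<Sum>j\<le>2*n. (-1)^j * fps_X^(dd n j ^ 2) * gb (fps_X^2) (2*n) j)"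
    using C L R by simp
  hence e: "(-1)^n * Ood n ^ 2 = (\<Sum>j\<le>2*n. (-1)^j * fps_X^(dd n j ^ 2) * gb (fps_X^2) (2*n) j)"
    using mult_left_cancel[of "fps_X^E :: int fps"] by (simp add: power_not_zero)
  have "Ood n ^ 2 = ((-1)^n * (-1)^n) * Ood n ^ 2" by (simp add: m1m1)
  also have "\<dots> = (-1)^n * ((-1)^n * Ood n ^ 2)" by (rule mult.assoc)
  also have "\<dots> = (\<Sum>j\<le>2*n. (-1)^(n+j) * fps_X^(dd n j ^ 2) * gb (fps_X^2) (2*n) j)"
    unfolding e sum_distrib_left by (simp add: power_add mult.assoc)
  finally show ?thesis .
qed



definition thc :: "nat \<Rightarrow> int" where
  "thc n = (if n = 0 then 1 else if (\<exists>k. n = k^2) then 2 else 0)"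
definition phiA :: "int fps" where "phiA = Abs_fps thc"
definition phiB :: "int fps" where "phiB = negq phiA"

lemma phiB_nth: "phiB $ n = (-1)^n * thc n"
  by (simp add: phiB_def phiA_def negq_nth)

lemma neg1pow_fps: "(-1::'a::comm_ring_1 fps)^k = fps_const ((-1)^k)"
  by (induction k) simp_all

lemma nat_sq_eq: "(a::nat)^2 = b^2 \<longleftrightarrow> a = b"
  using power2_nat_le_eq_le[of a b] power2_nat_le_eq_le[of b a] by linarith

lemma neg1_par: "even (a + b) \<Longrightarrow> (-1::int)^a = (-1)^b"
  by (cases "even a") (auto simp: minus_one_power_iff)

lemma theta_trunc:
  assumes "N \<le> n"
  shows "eqv N (\<Sum>j\<le>2*n. (-1)^(n+j) * fps_X^(dd n j ^ 2)) phiB"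
  unfolding eqv_def
proof (intro allI impI)
  fix i assume iN: "i < N"
  have "(\<Sum>j\<le>2*n. (-1)^(n+j) * fps_X^(dd n j ^ 2)) $ i
      = (\<Sum>j\<le>2*n. (if dd n j ^ 2 = i then (-1::int)^(n+j) else 0))"
    by (auto simp: fps_sum_nth neg1pow_fps intro!: sum.cong)
  also have "\<dots> = (\<Sum>j\<in>{j\<in>{..2*n}. dd n j ^ 2 = i}. (-1::int)^(n+j))"
    by (rule sum.inter_filter[symmetric]) simp
  finally have s: "(\<Sum>j\<le>2*n. (-1)^(n+j) * fps_X^(dd n j ^ 2)) $ i
      = (\<Sum>j\<in>{j\<in>{..2*n}. dd n j ^ 2 = i}. (-1::int)^(n+j))" .
  show "(\<Sum>j\<le>2*n. (-1)^(n+j) * fps_X^(dd n j ^ 2)) $ i = phiB $ i"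
  proof (cases "\<exists>k. i = k^2")
    case False
    hence e: "{j\<in>{..2*n}. dd n j ^ 2 = i} = {}" by auto
    have i0: "i \<noteq> 0"
    proof
      assume "i = 0" hence "i = 0^2" by simp
      with False show False by blast
    qed
    show ?thesis unfolding s e using i0 False by (simp add: phiB_nth thc_def)
  next
    case True
    then obtain k where k: "i = k^2" by blast
    have "k \<le> k^2" by (simp add: power2_eq_square)
    hence kn: "k < n" using k iN assms by linarith
    have S: "{j\<in>{..2*n}. dd n j ^ 2 = i} = {n - k, n + k}"
      using kn unfolding k nat_sq_eq by (auto simp: dd_def split: if_splits)
    show ?thesis
    proof (cases "k = 0")
      case True
      show ?thesis unfolding s S using k True by (simp add: phiB_nth thc_def power_add m1m1)
    next
      case False
      have d: "n - k \<noteq> n + k" using False kn by simp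
      have p1: "(-1::int)^(n + (n - k)) = (-1)^k" by (rule neg1_par) (use kn in auto)
      have p2: "(-1::int)^(n + (n + k)) = (-1)^k" by (rule neg1_par) auto
      have p3: "(-1::int)^(k^2) = (-1)^k" by (rule neg1_par) (auto simp: power2_eq_square)
      have "i \<noteq> 0" using False k by simp
      thus ?thesis unfolding s S using k d p1 p2 p3 by (auto simp: phiB_nth thc_def)
    qed
  qed
qed

lemma Pq_pr2: "Pq (fps_X^2) k = pr 2 k"
  unfolding Pq_def pr_def by (rule prod.cong[OF refl]) (simp add: power_mult[symmetric] mult.commute)

lemma split_pr1: "pr 1 (2*n) = Ood n * pr 2 n"
  unfolding pr_def Ood_def by (subst prod_split_odd_even) (simp add: mult.commute)

lemma gb_eta2:
  assumes "N \<le> j" "N \<le> 2*n - j" "j \<le> 2*n"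
  shows "eqv N (gb (fps_X^2) (2*n) j * eta_fps 2) 1"
proof -
  let ?g = "gb (fps_X^2) (2*n) j :: int fps"
  have "?g * Pq (fps_X^2) j * Pq (fps_X^2) (2*n - j) = Pq (fps_X^2) (2*n)"
    by (rule gb_P[OF assms(3)])
  hence e: "?g * pr 2 j * pr 2 (2*n - j) = pr 2 (2*n)" unfolding Pq_pr2 .
  have a: "eqv N (pr 2 j) (eta_fps 2)" by (rule eqv_sym, rule eta_eqv) (use assms in auto)
  have b: "eqv N (pr 2 (2*n - j)) (eta_fps 2)" by (rule eqv_sym, rule eta_eqv) (use assms in auto)
  have c: "eqv N (pr 2 (2*n)) (eta_fps 2)" by (rule eqv_sym, rule eta_eqv) (use assms in auto)
  have "eqv N (?g * pr 2 j * pr 2 (2*n - j)) (?g * eta_fps 2 * eta_fps 2)"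
    by (intro eqv_mult a b eqv_refl)
  hence "eqv N (?g * eta_fps 2 * eta_fps 2) (eta_fps 2)"
    using e c by (metis eqv_sym eqv_trans)
  hence "eqv N (eta_fps 2 * (?g * eta_fps 2)) (eta_fps 2 * 1)"
    by (simp add: mult_ac)
  thus ?thesis by (rule eqv_cancel[rotated]) (simp add: eta_pos)
qed

theorem gauss: "phiB * eta_fps 2 = eta_fps 1 ^ 2"
proof (rule eqv_all)
  fix N :: nat
  define n where "n = 2*N+1"
  have n1: "n \<ge> 1" by (simp add: n_def)
  have a: "eqv N (eta_fps 1) (pr 1 (2*n))" by (rule eta_eqv) (auto simp: n_def)
  have c: "eqv N (pr 2 n) (eta_fps 2)" by (rule eqv_sym, rule eta_eqv) (auto simp: n_def)
  have "eqv N (eta_fps 1 ^ 2) (pr 1 (2*n) ^ 2)" by (rule eqv_power[OF a])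
  also have "pr 1 (2*n) ^ 2 = Ood n ^ 2 * pr 2 n ^ 2" by (simp only: split_pr1 power_mult_distrib)
  also have "\<dots> = (\<Sum>j\<le>2*n. (-1)^(n+j) * fps_X^(dd n j ^ 2) * (gb (fps_X^2) (2*n) j * pr 2 n ^ 2))"
    unfolding finite_gauss[OF n1] sum_distrib_right by (simp add: mult.assoc)
  finally have s1: "eqv N (eta_fps 1 ^ 2) (\<Sum>j\<le>2*n. (-1)^(n+j) * fps_X^(dd n j ^ 2) * (gb (fps_X^2) (2*n) j * pr 2 n ^ 2))" .
  have s2: "eqv N (\<Sum>j\<le>2*n. (-1)^(n+j) * fps_X^(dd n j ^ 2) * (gb (fps_X^2) (2*n) j * pr 2 n ^ 2))
                  (\<Sum>j\<le>2*n. (-1)^(n+j) * fps_X^(dd n j ^ 2) * eta_fps 2)"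
  proof (rule eqv_sum)
    fix j assume "j \<in> {..2*n}"
    hence j2n: "j \<le> 2*n" by simp
    let ?c = "(-1)^(n+j) :: int fps"
    show "eqv N (?c * fps_X^(dd n j ^ 2) * (gb (fps_X^2) (2*n) j * pr 2 n ^ 2)) (?c * fps_X^(dd n j ^ 2) * eta_fps 2)"
    proof (cases "N \<le> dd n j ^ 2")
      case True
      have "eqv N (fps_X^(dd n j ^ 2) * (?c * (gb (fps_X^2) (2*n) j * pr 2 n ^ 2))) 0" by (rule eqv_Xpow[OF True])
      moreover have "eqv N (fps_X^(dd n j ^ 2) * (?c * eta_fps 2)) 0" by (rule eqv_Xpow[OF True])
      ultimately show ?thesis by (simp add: mult_ac eqv_def)
    next
      case False
      have "dd n j \<le> dd n j ^ 2" by (simp add: power2_eq_square)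
      hence dN: "dd n j < N" using False by linarith
      have jN: "N \<le> j" and jN2: "N \<le> 2*n - j" using dN j2n by (auto simp: dd_def n_def split: if_splits)
      have g: "eqv N (gb (fps_X^2) (2*n) j * eta_fps 2) 1" by (rule gb_eta2[OF jN jN2 j2n])
      have "eqv N (gb (fps_X^2) (2*n) j * pr 2 n ^ 2) (gb (fps_X^2) (2*n) j * eta_fps 2 ^ 2)"
        by (intro eqv_mult eqv_power eqv_refl c)
      also have "gb (fps_X^2) (2*n) j * eta_fps 2 ^ 2 = (gb (fps_X^2) (2*n) j * eta_fps 2) * eta_fps 2"
        by (simp add: power2_eq_square mult_ac)
      finally have "eqv N (gb (fps_X^2) (2*n) j * pr 2 n ^ 2) ((gb (fps_X^2) (2*n) j * eta_fps 2) * eta_fps 2)" .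
      moreover have "eqv N ((gb (fps_X^2) (2*n) j * eta_fps 2) * eta_fps 2) (1 * eta_fps 2)"
        by (intro eqv_mult g eqv_refl)
      ultimately have "eqv N (gb (fps_X^2) (2*n) j * pr 2 n ^ 2) (1 * eta_fps 2)"
        by (rule eqv_trans)
      hence "eqv N (gb (fps_X^2) (2*n) j * pr 2 n ^ 2) (eta_fps 2)" by simp
      thus ?thesis by (rule eqv_mult[OF eqv_refl])
    qed
  qed
  have s3: "(\<Sum>j\<le>2*n. (-1)^(n+j) * fps_X^(dd n j ^ 2) * eta_fps 2)
      = (\<Sum>j\<le>2*n. (-1)^(n+j) * fps_X^(dd n j ^ 2)) * eta_fps 2"
    by (rule sum_distrib_right[symmetric])
  have s4: "eqv N ((\<Sum>j\<le>2*n. (-1)^(n+j) * fps_X^(dd n j ^ 2)) * eta_fps 2) (phiB * eta_fps 2)"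
    by (intro eqv_mult theta_trunc eqv_refl) (simp add: n_def)
  show "eqv N (phiB * eta_fps 2) (eta_fps 1 ^ 2)"
    using eqv_trans[OF eqv_trans[OF s1 s2] s4[folded s3]] by (rule eqv_sym)
qed



definition P1 :: "int fps" where "P1 = Abs_fps (\<lambda>m. thc (8*m+1) div 2)"
definition Cf :: "int fps" where "Cf = sub2 phiA"
definition Df :: "int fps" where "Df = sub2 phiB"
definition P2 :: "int fps" where "P2 = sub2 P1"
definition P4 :: "int fps" where "P4 = sub2 P2"

lemma even_sq: "even ((k::nat)^2) \<longleftrightarrow> even k"
  by (simp add: power2_eq_square)

lemma thc_even: "thc (2*n) = (if even n then thc (n div 2) else 0)"
proof (cases "n = 0")
  case True then show ?thesis by (simp add: thc_def)
next
  case n0: False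
  show ?thesis
  proof (cases "even n")
    case True
    then obtain m where m: "n = 2*m" by blast
    have m0: "m \<noteq> 0" using n0 m by simp
    have "(\<exists>k. 2*n = k^2) \<longleftrightarrow> (\<exists>j. m = j^2)"
    proof
      assume "\<exists>k. 2*n = k^2"
      then obtain k where k: "2*n = k^2" by blast
      hence "even (k^2)" by (metis dvd_triv_left)
      hence "even k" by (simp add: even_sq)
      then obtain j where "k = 2*j" by blast
      hence "m = j^2" using k m by (simp add: power2_eq_square)
      thus "\<exists>j. m = j^2" by blast
    next
      assume "\<exists>j. m = j^2"
      then obtain j where "m = j^2" by blast
      hence "2*n = (2*j)^2" using m by (simp add: power2_eq_square)
      thus "\<exists>k. 2*n = k^2" by blast
    qed
    thus ?thesis using True m m0 n0 by (simp add: thc_def)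
  next
    case False
    have "\<not> (\<exists>k. 2*n = k^2)"
    proof
      assume "\<exists>k. 2*n = k^2"
      then obtain k where k: "2*n = k^2" by blast
      hence "even (k^2)" by (metis dvd_triv_left)
      hence "even k" by (simp add: even_sq)
      then obtain j where "k = 2*j" by blast
      hence "n = 2*(j*j)" using k by (simp add: power2_eq_square)
      thus False using False by simp
    qed
    thus ?thesis using False n0 by (simp add: thc_def)
  qed
qed

lemma thc_odd: "thc (2*n+1) = (if 4 dvd n then 2 * (thc (8*(n div 4)+1) div 2) else 0)"
proof (cases "4 dvd n")
  case True
  then obtain m where m: "n = 4*m" by blast
  have "thc (8*m+1) = 0 \<or> thc (8*m+1) = 2" by (simp add: thc_def)
  thus ?thesis using m by (auto simp: mult.assoc)
next
  case False
  have "\<not> (\<exists>k. 2*n+1 = k^2)"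
  proof
    assume "\<exists>k. 2*n+1 = k^2"
    then obtain k where k: "2*n+1 = k^2" by blast
    have ok2: "odd (k^2)" unfolding k[symmetric] by simp
    have "odd k" using ok2 by (simp add: even_sq)
    then obtain j where j: "k = 2*j+1" using oddE by blast
    hence "2*n+1 = 4*(j*j+j)+1" using k by (simp add: power2_eq_square algebra_simps)
    hence nj: "n = 2*(j*j+j)" by simp
    have "even (j*j+j)" by simp
    then obtain r where "j*j+j = 2*r" by blast
    hence "n = 4*r" using nj by simp
    hence "4 dvd n" by simp
    thus False using False by simp
  qed
  thus ?thesis using False by (simp add: thc_def)
qed

lemma thc_nz2: "n \<noteq> 0 \<Longrightarrow> 2 * (thc n div 2) = thc n"
  by (simp add: thc_def)

lemma ev_A: "ev phiA = Cf"
  by (rule fps_ext) (simp add: Cf_def phiA_def sub2_nth thc_even)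

lemma numeral_fps_nth: "(numeral k * f) $ n = numeral k * f $ n"
  by (simp add: numeral_fps_const)

lemma od_A: "od phiA = 2 * P4"
proof (rule fps_ext)
  fix n
  have "od phiA $ n = thc (2*n+1)" by (simp add: phiA_def)
  also have "\<dots> = (2 * P4) $ n"
  proof (cases "4 dvd n")
    case True
    then obtain m where m: "n = 4*m" by blast
    thus ?thesis by (simp add: thc_odd numeral_fps_nth P4_def P2_def P1_def sub2_nth thc_nz2)
  next
    case False
    have "odd n \<or> odd (n div 2)"
    proof (rule ccontr)
      assume "\<not> (odd n \<or> odd (n div 2))"
      hence en: "even n" and e2: "even (n div 2)" by auto
      obtain a where a: "n div 2 = 2*a" using e2 by blast
      have "n = 2*(n div 2)" using en by simp
      hence "n = 4*a" using a by simp
      thus False using False by simp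
    qed
    moreover have "thc (2*n+1) = 0" using thc_odd[of n] False by simp
    ultimately show ?thesis by (auto simp: numeral_fps_nth P4_def P2_def P1_def sub2_nth)
  qed
  finally show "od phiA $ n = (2 * P4) $ n" .
qed

lemma ev_B: "ev phiB = Cf" by (simp add: phiB_def ev_A)
lemma od_B: "od phiB = - (2 * P4)" by (simp add: phiB_def od_A)

lemma eta_nz: "eta_fps k \<noteq> 0"
proof
  assume "eta_fps k = 0"
  hence "eta_fps k $ 0 = 0" by simp
  thus False by (simp add: eta_pos)
qed

lemma gaussA: "phiA * eta_fps 2 = negq (eta_fps 1) ^ 2"
proof -
  have "negq (phiB * eta_fps 2) = negq (eta_fps 1 ^ 2)" by (simp only: gauss)
  thus ?thesis by (simp add: phiB_def negq_eta2)
qed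

lemma gaussD: "Df * eta_fps 4 = eta_fps 2 ^ 2"
proof -
  have "sub2 (phiB * eta_fps 2) = sub2 (eta_fps 1 ^ 2)" by (simp only: gauss)
  moreover have "sub2 (eta_fps 2) = eta_fps 4" using sub2_eta[of 2] by simp
  moreover have "sub2 (eta_fps 1) = eta_fps 2" using sub2_eta[of 1] by simp
  ultimately show ?thesis by (simp add: Df_def)
qed

lemma R1: "phiA * phiB = Df ^ 2"
proof -
  let ?f1 = "eta_fps 1" and ?f2 = "eta_fps 2" and ?f4 = "eta_fps 4"
  have "(phiA * phiB) * (?f2^2 * ?f4^2) = (phiA * ?f2) * (phiB * ?f2) * ?f4^2"
    by (simp add: power2_eq_square mult_ac)
  also have "\<dots> = (negq ?f1 * ?f1 * ?f4)^2"
    unfolding gaussA gauss by (simp add: power2_eq_square mult_ac)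
  also have "\<dots> = (?f2^3)^2" by (simp only: eta_rel1)
  also have "\<dots> = (Df * ?f4)^2 * ?f2^2"
    unfolding gaussD by (simp add: power2_eq_square power3_eq_cube mult_ac)
  also have "\<dots> = Df^2 * (?f2^2 * ?f4^2)" by (simp add: power2_eq_square mult_ac)
  finally have "(phiA * phiB) * (?f2^2 * ?f4^2) = Df^2 * (?f2^2 * ?f4^2)" .
  moreover have "?f2^2 * ?f4^2 \<noteq> 0" by (simp add: eta_nz)
  ultimately show ?thesis by simp
qed

lemma R2: "phiB ^ 2 = Cf ^ 2 - 4 * fps_X * P4 ^ 2"
proof -
  have "ev (phiA * phiB) = ev (sub2 (phiB ^ 2))" by (simp add: R1 Df_def)
  hence "phiB ^ 2 = ev phiA * ev phiB + fps_X * (od phiA * od phiB)"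
    by (simp add: ev_mult del: sub2_power)
  thus ?thesis by (simp add: ev_A ev_B od_A od_B power2_eq_square algebra_simps)
qed

lemma R2A: "phiA ^ 2 = Cf ^ 2 + 4 * fps_X * P4 ^ 2"
proof -
  have "negq (phiB ^ 2) = negq (Cf ^ 2 - 4 * fps_X * P4 ^ 2)" by (simp only: R2)
  thus ?thesis by (simp add: phiB_def Cf_def P4_def)
qed

lemma btbar_rel: "btbar_fps * phiB ^ 3 * Df ^ 3 = 1"
proof -
  let ?f1 = "eta_fps 1" and ?f2 = "eta_fps 2" and ?f4 = "eta_fps 4"
  let ?W = "?f1 ^ 6 * ?f2 ^ 3"
  have W0: "?W $ 0 * 1 = 1" by (simp add: eta_pos fps_nth_power_0)
  define V where "V = fps_right_inverse ?W 1"
  have WV: "?W * V = 1" unfolding V_def by (rule fps_right_inverse[OF W0])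
  have ex: "(?f4^3 * V) * ?W = ?f4^3" using WV by (simp add: mult_ac)
  have Wnz: "?W \<noteq> 0" by (simp add: eta_nz)
  have uq: "G = ?f4^3 * V" if "G * ?W = ?f4^3" for G
  proof -
    have "G = G * (?W * V)" by (simp only: WV mult_1_right)
    also have "\<dots> = (G * ?W) * V" by (simp only: mult.assoc)
    also have "\<dots> = ?f4^3 * V" by (simp only: that)
    finally show ?thesis .
  qed
  have G: "btbar_fps * ?W = ?f4^3"
    unfolding btbar_fps_def by (rule theI[of _ "?f4^3 * V"]) (use ex uq in auto)
  have "phiB^3 * Df^3 * ?f4^3 * ?f2^3 = (phiB * ?f2)^3 * (Df * ?f4)^3"
    by (simp add: power_mult_distrib mult_ac)
  also have "\<dots> = ?W * ?f2^3"
  proof -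
    have a: "(?f1^2)^3 = ?f1^6" by (simp only: power_mult[symmetric]) simp
    have b: "(?f2^2)^3 = ?f2^3 * ?f2^3" by (simp only: power_mult[symmetric] power_add[symmetric]) simp
    show ?thesis unfolding gauss gaussD a b by (simp only: mult_ac)
  qed
  finally have "phiB^3 * Df^3 * ?f4^3 * ?f2^3 = ?W * ?f2^3" .
  hence h: "phiB^3 * Df^3 * ?f4^3 = ?W" using eta_nz[of 2] by simp
  have "(btbar_fps * phiB ^ 3 * Df ^ 3) * ?f4^3 = 1 * ?f4^3"
    using G h by (simp add: mult_ac)
  thus ?thesis using eta_nz[of 4] by simp
qed



definition red :: "int fps \<Rightarrow> 'r::comm_ring_1 fps" where
  "red f = Abs_fps (\<lambda>n. of_int (f $ n))"

lemma red_nth: "red f $ n = of_int (f $ n)" by (simp add: red_def)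
lemma red_add[simp]: "red (f + g) = red f + red g" by (rule fps_ext) (simp add: red_nth)
lemma red_diff[simp]: "red (f - g) = red f - red g" by (rule fps_ext) (simp add: red_nth)
lemma red_uminus[simp]: "red (- f) = - red f" by (rule fps_ext) (simp add: red_nth)
lemma red_0[simp]: "red 0 = 0" by (rule fps_ext) (simp add: red_nth)
lemma red_1[simp]: "red 1 = 1" by (rule fps_ext) (simp add: red_nth)
lemma red_X[simp]: "red fps_X = fps_X" by (rule fps_ext) (simp add: red_nth)
lemma red_numeral[simp]: "red (numeral k) = numeral k"
  by (rule fps_ext) (simp add: red_nth numeral_fps_const)
lemma red_mult[simp]: "red (f * g) = red f * red g"
  by (rule fps_ext) (simp add: red_nth fps_mult_nth)
lemma red_power[simp]: "red (f ^ k) = red f ^ k" by (induction k) simp_all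
lemma red_sub2[simp]: "red (sub2 f) = sub2 (red f)" by (rule fps_ext) (simp add: red_nth sub2_nth)
lemma red_ev[simp]: "red (ev f) = ev (red f)" by (rule fps_ext) (simp add: red_nth)
lemma red_od[simp]: "red (od f) = od (red f)" by (rule fps_ext) (simp add: red_nth)

definition Bi :: "int fps" where "Bi = btbar_fps * phiB ^ 2 * Df ^ 3"
definition Di :: "int fps" where "Di = btbar_fps * phiB ^ 3 * Df ^ 2"

lemma B_Bi: "phiB * Bi = 1"
  using btbar_rel by (simp add: Bi_def power2_eq_square power3_eq_cube mult_ac)
lemma D_Di: "Df * Di = 1"
  using btbar_rel by (simp add: Di_def power2_eq_square power3_eq_cube mult_ac)
lemma sub2_Bi: "sub2 Bi = Di"
proof -
  have "Df * sub2 Bi = 1" using arg_cong[OF B_Bi, of sub2] by (simp add: Df_def)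
  hence "sub2 Bi = sub2 Bi * (Df * Di)" using D_Di by simp
  also have "\<dots> = (Df * sub2 Bi) * Di" by (simp only: mult_ac)
  also have "\<dots> = Di" using \<open>Df * sub2 Bi = 1\<close> by simp
  finally show ?thesis .
qed
lemma Bi_A: "Bi = phiA * Di ^ 2"
proof -
  have "phiA * Di ^ 2 = phiA * (phiB * Bi) * Di ^ 2" using B_Bi by simp
  also have "\<dots> = (phiA * phiB) * Bi * Di ^ 2" by (simp only: mult_ac)
  also have "\<dots> = Bi * (Df * Di) ^ 2" unfolding R1 by (simp add: power_mult_distrib mult_ac)
  also have "\<dots> = Bi" using D_Di by simp
  finally show ?thesis ..
qed
lemma G_Bi: "btbar_fps = Bi ^ 3 * Di ^ 3"
proof -
  have "btbar_fps = btbar_fps * (phiB * Bi) ^ 3 * (Df * Di) ^ 3" using B_Bi D_Di by simp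
  also have "\<dots> = (btbar_fps * phiB ^ 3 * Df ^ 3) * Bi ^ 3 * Di ^ 3"
    by (simp add: power_mult_distrib mult_ac)
  also have "\<dots> = Bi ^ 3 * Di ^ 3" using btbar_rel by simp
  finally show ?thesis .
qed

lemma R3: "P2 ^ 2 = Cf * P4"
proof -
  have "od (phiA ^ 2) = od (Cf ^ 2 + 4 * fps_X * P4 ^ 2)" by (simp only: R2A)
  moreover have "od (phiA ^ 2) = 2 * ev phiA * od phiA"
    by (simp add: power2_eq_square od_mult)
  moreover have "od (Cf ^ 2 + 4 * fps_X * P4 ^ 2) = 4 * P2 ^ 2"
  proof -
    have "Cf ^ 2 = sub2 (phiA ^ 2)" by (simp add: Cf_def)
    moreover have "4 * fps_X * P4 ^ 2 = fps_X * sub2 (4 * P2 ^ 2)" by (simp add: P4_def mult_ac)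
    ultimately show ?thesis by (simp only: od_add od_sub2 od_Xsub2) simp
  qed
  ultimately have "4 * P2 ^ 2 = 4 * (Cf * P4)" by (simp add: ev_A od_A mult_ac)
  thus ?thesis by simp
qed

definition Uh :: "int fps" where "Uh = Abs_fps (\<lambda>n. if n = 0 then 0 else thc n div 2)"
lemma A_unit: "phiA = 1 + 2 * Uh"
  by (rule fps_ext) (auto simp: phiA_def Uh_def numeral_fps_nth thc_nz2, simp add: thc_def)

lemma unit_pow_sq:
  fixes u v :: "'r::comm_ring_1"
  assumes "u = 1 + 2 * v" "(128::'r) = 0"
  shows "32 * u ^ 2 = 32"
proof -
  have "32 * u ^ 2 = 32 + 128 * (v + v * v)" using assms(1) by (simp add: power2_eq_square algebra_simps)
  thus ?thesis using assms(2) by simp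
qed

lemma unit_power: "u = 1 + 2 * (v::'r::comm_ring_1) \<Longrightarrow> \<exists>w. u ^ k = 1 + 2 * w"
proof (induction k)
  case 0 then show ?case by (intro exI[of _ 0]) simp
next
  case (Suc k)
  then obtain w where "u ^ k = 1 + 2 * w" by blast
  hence "u ^ Suc k = 1 + 2 * (v + w + 2 * v * w)" using Suc.prems by (simp add: algebra_simps)
  thus ?case by blast
qed

lemma C_unit: "\<exists>v. Cf = 1 + 2 * v"
  by (intro exI[of _ "sub2 Uh"]) (simp add: Cf_def A_unit)
lemma D_unit: "\<exists>v. Df = 1 + 2 * v"
  by (intro exI[of _ "sub2 (negq Uh)"]) (simp add: Df_def phiB_def A_unit)
lemma Di_unit: "\<exists>v. Di = 1 + 2 * v"
proof -
  obtain v where v: "Df = 1 + 2 * v" using D_unit by blast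
  have "Df - 2 * v = 1" unfolding v by simp
  hence "Di = (Df - 2 * v) * Di" by simp
  also have "\<dots> = 1 + 2 * (- v * Di)" using D_Di by (simp add: algebra_simps)
  finally show ?thesis by blast
qed

section \<open>Truncated binomial expansion modulo 128\<close>

lemma binom4_key:
  fixes y w K Y :: "'r::comm_ring_1"
  shows "(y + 4*w) * (Y*y^3 + 4*(K+3)*w*(Y*y^2) + 8*(K+3)*(K+2)*w^2*(Y*y) + 96*(K+3)*(K+2)*(K+1)*w^3*Y)
   = Y*y^4 + 4*(K+4)*w*(Y*y^3) + 8*(K+4)*(K+3)*w^2*(Y*y^2) + 96*(K+4)*(K+3)*(K+2)*w^3*(Y*y)
     + 128*(3*(K+3)*(K+2)*(K+1)*w^4*Y - 2*(K+3)*(K+2)*w^3*(Y*y))"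
  by (simp add: algebra_simps power2_eq_square power3_eq_cube power4_eq_xxxx)

lemma binom4:
  fixes y w :: "'r::comm_ring_1"
  assumes z: "(128::'r) = 0"
  shows "(y + 4*w)^(k+3) = y^(k+3) + of_nat (4*(k+3)) * w * y^(k+2)
           + of_nat (8*(k+3)*(k+2)) * w^2 * y^(k+1) + of_nat (96*(k+3)*(k+2)*(k+1)) * w^3 * y^k"
proof (induction k)
  case 0
  have "(y + 4*w)^3 = y^3 + 12 * w * y^2 + 48 * w^2 * y + 576 * w^3 - 128 * (4 * w^3)"
    by (simp add: power3_eq_cube power2_eq_square algebra_simps)
  thus ?case using z by (simp add: power2_eq_square)
next
  case (Suc k)
  let ?K = "of_nat k :: 'r" and ?Y = "y^k"
  have ex: "y^(Suc k+3) = ?Y*y^4" "y^(Suc k+2) = ?Y*y^3" "y^(Suc k+1) = ?Y*y^2" "y^(Suc k) = ?Y * y"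
     "y^(k+3) = ?Y*y^3" "y^(k+2) = ?Y*y^2" "y^(k+1) = ?Y*y"
    by (simp_all only: power_add power_Suc mult_ac add_Suc numeral_3_eq_3 numeral_2_eq_2
         Suc_eq_plus1 add.assoc) (simp_all add: power_add mult_ac numeral_eq_Suc)
  have cf: "(of_nat (4*(k+3)) :: 'r) = 4*(?K+3)" "(of_nat (8*(k+3)*(k+2)) :: 'r) = 8*(?K+3)*(?K+2)"
    "(of_nat (96*(k+3)*(k+2)*(k+1)) :: 'r) = 96*(?K+3)*(?K+2)*(?K+1)"
    "(of_nat (4*(Suc k+3)) :: 'r) = 4*(?K+4)" "(of_nat (8*(Suc k+3)*(Suc k+2)) :: 'r) = 8*(?K+4)*(?K+3)"
    "(of_nat (96*(Suc k+3)*(Suc k+2)*(Suc k+1)) :: 'r) = 96*(?K+4)*(?K+3)*(?K+2)"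
    by (simp_all add: algebra_simps)
  have "(y + 4*w)^(Suc k + 3) = (y + 4*w) * (y + 4*w)^(k+3)" by (simp only: add_Suc power_Suc)
  also have "\<dots> = (y + 4*w) * (?Y*y^3 + 4*(?K+3)*w*(?Y*y^2) + 8*(?K+3)*(?K+2)*w^2*(?Y*y) + 96*(?K+3)*(?K+2)*(?K+1)*w^3*?Y)"
    unfolding Suc.IH ex cf by (simp only: mult_ac)
  also have "\<dots> = ?Y*y^4 + 4*(?K+4)*w*(?Y*y^3) + 8*(?K+4)*(?K+3)*w^2*(?Y*y^2) + 96*(?K+4)*(?K+3)*(?K+2)*w^3*(?Y*y)"
    unfolding binom4_key z by simp
  also have "\<dots> = y^(Suc k+3) + of_nat (4*(Suc k+3)) * w * y^(Suc k+2)
           + of_nat (8*(Suc k+3)*(Suc k+2)) * w^2 * y^(Suc k+1) + of_nat (96*(Suc k+3)*(Suc k+2)*(Suc k+1)) * w^3 * y^(Suc k)"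
    unfolding ex cf by (simp only: mult_ac)
  finally show ?case .
qed



definition cg :: "int fps \<Rightarrow> int fps \<Rightarrow> bool" where
  "cg f g \<longleftrightarrow> (\<exists>h. f = g + 128 * h)"

lemma cg_refl[simp]: "cg f f" unfolding cg_def by (rule exI[of _ 0]) simp
lemma cg_sym: assumes "cg f g" shows "cg g f"
proof -
  obtain h where "f = g + 128 * h" using assms cg_def by blast
  hence "g = f + 128 * (- h)" by simp
  thus ?thesis unfolding cg_def by blast
qed
lemma cg_trans: assumes "cg f g" "cg g k" shows "cg f k"
proof -
  obtain h where h: "f = g + 128 * h" using assms cg_def by blast
  obtain h' where h': "g = k + 128 * h'" using assms cg_def by blast
  have "f = k + 128 * (h' + h)" unfolding h h' by (simp add: distrib_left add.assoc)
  thus ?thesis unfolding cg_def by blast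
qed
lemma ev_num: "ev (numeral k * h) = numeral k * ev h"
  using ev_sub2_mult[of "numeral k" h] by simp
lemma od_num: "od (numeral k * h) = numeral k * od h"
  using od_sub2_mult[of "numeral k" h] by simp
lemma cg_ev: assumes "cg f g" shows "cg (ev f) (ev g)"
proof -
  obtain h where "f = g + 128 * h" using assms cg_def by blast
  hence "ev f = ev g + 128 * ev h" by (simp add: ev_num)
  thus ?thesis unfolding cg_def by blast
qed
lemma cg_od: assumes "cg f g" shows "cg (od f) (od g)"
proof -
  obtain h where "f = g + 128 * h" using assms cg_def by blast
  hence "od f = od g + 128 * od h" by (simp add: od_num)
  thus ?thesis unfolding cg_def by blast
qed
lemma cg_uminus: assumes "cg f g" shows "cg (- f) (- g)"
proof -
  obtain h where "f = g + 128 * h" using assms cg_def by blast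
  hence "- f = - g + 128 * (- h)" by simp
  thus ?thesis unfolding cg_def by blast
qed
lemma cg_nth: "cg f g \<Longrightarrow> [f $ n = g $ n] (mod 128)"
  unfolding cg_def cong_def by (auto simp: numeral_fps_const)

lemma sub2_A: "sub2 phiA = Cf" by (simp add: Cf_def)
lemma sub2_P2: "sub2 P2 = P4" by (simp add: P4_def)
lemma sub2_P1: "sub2 P1 = P2" by (simp add: P2_def)

lemma binom4c:
  fixes y w :: "'r::comm_ring_1"
  shows "\<exists>h. (y + 4*w)^(k+3) = y^(k+3) + of_nat (4*(k+3)) * w * y^(k+2)
           + of_nat (8*(k+3)*(k+2)) * w^2 * y^(k+1) + of_nat (96*(k+3)*(k+2)*(k+1)) * w^3 * y^k + 128 * h"
proof (induction k)
  case 0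
  have "(y + 4*w)^3 = y^3 + 12 * w * y^2 + 48 * w^2 * y + 576 * w^3 + 128 * (- 4 * w^3)"
    by (simp add: power3_eq_cube power2_eq_square algebra_simps)
  thus ?case by (intro exI[of _ "- 4 * w^3"]) (simp add: power2_eq_square)
next
  case (Suc k)
  then obtain h where h: "(y + 4*w)^(k+3) = y^(k+3) + of_nat (4*(k+3)) * w * y^(k+2)
           + of_nat (8*(k+3)*(k+2)) * w^2 * y^(k+1) + of_nat (96*(k+3)*(k+2)*(k+1)) * w^3 * y^k + 128 * h" by blast
  let ?K = "of_nat k :: 'r" and ?Y = "y^k"
  have ex: "y^(Suc k+3) = ?Y*y^4" "y^(Suc k+2) = ?Y*y^3" "y^(Suc k+1) = ?Y*y^2" "y^(Suc k) = ?Y * y"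
     "y^(k+3) = ?Y*y^3" "y^(k+2) = ?Y*y^2" "y^(k+1) = ?Y*y"
    by (simp_all add: power_add mult_ac numeral_eq_Suc)
  have cf: "(of_nat (4*(k+3)) :: 'r) = 4*(?K+3)" "(of_nat (8*(k+3)*(k+2)) :: 'r) = 8*(?K+3)*(?K+2)"
    "(of_nat (96*(k+3)*(k+2)*(k+1)) :: 'r) = 96*(?K+3)*(?K+2)*(?K+1)"
    "(of_nat (4*(Suc k+3)) :: 'r) = 4*(?K+4)" "(of_nat (8*(Suc k+3)*(Suc k+2)) :: 'r) = 8*(?K+4)*(?K+3)"
    "(of_nat (96*(Suc k+3)*(Suc k+2)*(Suc k+1)) :: 'r) = 96*(?K+4)*(?K+3)*(?K+2)"
    by (simp_all add: algebra_simps)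
  have "(y + 4*w)^(Suc k + 3) = (y + 4*w) * (y + 4*w)^(k+3)" by (simp only: add_Suc power_Suc)
  also have "\<dots> = (y + 4*w) * ((?Y*y^3 + 4*(?K+3)*w*(?Y*y^2) + 8*(?K+3)*(?K+2)*w^2*(?Y*y) + 96*(?K+3)*(?K+2)*(?K+1)*w^3*?Y) + 128 * h)"
    unfolding h ex cf by (simp only: mult_ac)
  also have "\<dots> = (y + 4*w) * (?Y*y^3 + 4*(?K+3)*w*(?Y*y^2) + 8*(?K+3)*(?K+2)*w^2*(?Y*y) + 96*(?K+3)*(?K+2)*(?K+1)*w^3*?Y) + 128 * ((y + 4*w) * h)"
    by (simp only: distrib_left mult.left_commute)
  also have "\<dots> = ?Y*y^4 + 4*(?K+4)*w*(?Y*y^3) + 8*(?K+4)*(?K+3)*w^2*(?Y*y^2) + 96*(?K+4)*(?K+3)*(?K+2)*w^3*(?Y*y)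
     + 128*(3*(?K+3)*(?K+2)*(?K+1)*w^4*?Y - 2*(?K+3)*(?K+2)*w^3*(?Y*y) + (y + 4*w) * h)"
    unfolding binom4_key by (simp only: distrib_left add.assoc)
  also have "\<dots> = y^(Suc k+3) + of_nat (4*(Suc k+3)) * w * y^(Suc k+2)
           + of_nat (8*(Suc k+3)*(Suc k+2)) * w^2 * y^(Suc k+1) + of_nat (96*(Suc k+3)*(Suc k+2)*(Suc k+1)) * w^3 * y^(Suc k)
     + 128*(3*(?K+3)*(?K+2)*(?K+1)*w^4*?Y - 2*(?K+3)*(?K+2)*w^3*(?Y*y) + (y + 4*w) * h)"
    unfolding ex cf by (simp only: mult_ac)
  finally show ?case by blast
qed

lemma apow_gen:
  "\<exists>h. phiA^(2*(k+3)+r) = phiA^r * (Cf^(2*(k+3)) + of_nat (4*(k+3)) * fps_X * Cf^(2*(k+2)) * P4^2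
   + of_nat (8*(k+3)*(k+2)) * fps_X^2 * Cf^(2*(k+1)) * P4^4 + of_nat (96*(k+3)*(k+2)*(k+1)) * fps_X^3 * Cf^(2*k) * P4^6) + 128*h"
proof -
  have rA': "phiA^2 = Cf^2 + 4 * (fps_X * P4^2)" using R2A by (simp only: mult.assoc)
  obtain h where h: "(Cf^2 + 4 * (fps_X * P4^2))^(k+3) = (Cf^2)^(k+3) + of_nat (4*(k+3)) * (fps_X * P4^2) * (Cf^2)^(k+2)
           + of_nat (8*(k+3)*(k+2)) * (fps_X * P4^2)^2 * (Cf^2)^(k+1) + of_nat (96*(k+3)*(k+2)*(k+1)) * (fps_X * P4^2)^3 * (Cf^2)^k + 128 * h"
    using binom4c by blast
  have p: "(Cf^2)^(k+3) = Cf^(2*(k+3))" "(Cf^2)^(k+2) = Cf^(2*(k+2))" "(Cf^2)^(k+1) = Cf^(2*(k+1))" "(Cf^2)^k = Cf^(2*k)"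
    by (simp_all only: power_mult)
  have q: "(fps_X * P4^2)^2 = fps_X^2 * P4^4" "(fps_X * P4^2)^3 = fps_X^3 * P4^6"
    by (simp_all only: power_mult_distrib power_mult[symmetric]) simp_all
  have "phiA^(2*(k+3)+r) = (phiA^2)^(k+3) * phiA^r" by (simp only: power_add power_mult)
  also have "\<dots> = ((Cf^2)^(k+3) + of_nat (4*(k+3)) * (fps_X * P4^2) * (Cf^2)^(k+2)
           + of_nat (8*(k+3)*(k+2)) * (fps_X * P4^2)^2 * (Cf^2)^(k+1) + of_nat (96*(k+3)*(k+2)*(k+1)) * (fps_X * P4^2)^3 * (Cf^2)^k + 128 * h) * phiA^r"
    unfolding rA' h ..
  also have "\<dots> = phiA^r * (Cf^(2*(k+3)) + of_nat (4*(k+3)) * fps_X * Cf^(2*(k+2)) * P4^2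
   + of_nat (8*(k+3)*(k+2)) * fps_X^2 * Cf^(2*(k+1)) * P4^4 + of_nat (96*(k+3)*(k+2)*(k+1)) * fps_X^3 * Cf^(2*k) * P4^6) + 128*(phiA^r * h)"
    unfolding p q by (simp only: distrib_right distrib_left mult_ac)
  finally show ?thesis by blast
qed

lemma unit32: "(u::int fps) = 1 + 2 * v \<Longrightarrow> 32 * u^2 = 32 + 128 * (v + v^2)"
  by (simp add: power2_eq_square algebra_simps)

lemma cg_of_eq: "f = g + 128 * h \<Longrightarrow> cg f g" unfolding cg_def by blast

lemma inst_9: "\<exists>h. phiA^9 = phiA * (Cf^8 + 16 * fps_X * Cf^6 * P4^2 + 96 * fps_X^2 * Cf^4 * P4^4 + 2304 * fps_X^3 * Cf^2 * P4^6) + 128 * h"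
  using apow_gen[of 1 1] by simp

lemma inst_11: "\<exists>h. phiA^11 = phiA * (Cf^10 + 20 * fps_X * Cf^8 * P4^2 + 160 * fps_X^2 * Cf^6 * P4^4 + 5760 * fps_X^3 * Cf^4 * P4^6) + 128 * h"
  using apow_gen[of 2 1] by simp

lemma inst_25: "\<exists>h. phiA^25 = phiA * (Cf^24 + 48 * fps_X * Cf^22 * P4^2 + 1056 * fps_X^2 * Cf^20 * P4^4 + 126720 * fps_X^3 * Cf^18 * P4^6) + 128 * h"
  using apow_gen[of 9 1] by simp

lemma inst_27: "\<exists>h. phiA^27 = phiA * (Cf^26 + 52 * fps_X * Cf^24 * P4^2 + 1248 * fps_X^2 * Cf^22 * P4^4 + 164736 * fps_X^3 * Cf^20 * P4^6) + 128 * h"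
  using apow_gen[of 10 1] by simp

lemma inst_29: "\<exists>h. phiA^29 = phiA * (Cf^28 + 56 * fps_X * Cf^26 * P4^2 + 1456 * fps_X^2 * Cf^24 * P4^4 + 209664 * fps_X^3 * Cf^22 * P4^6) + 128 * h"
  using apow_gen[of 11 1] by simp

lemma inst_60: "\<exists>h. phiA^60 = (Cf^60 + 120 * fps_X * Cf^58 * P4^2 + 6960 * fps_X^2 * Cf^56 * P4^4 + 2338560 * fps_X^3 * Cf^54 * P4^6) + 128 * h"
  using apow_gen[of 27 0] by simp

lemma inst_61: "\<exists>h. phiA^61 = phiA * (Cf^60 + 120 * fps_X * Cf^58 * P4^2 + 6960 * fps_X^2 * Cf^56 * P4^4 + 2338560 * fps_X^3 * Cf^54 * P4^6) + 128 * h"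
  using apow_gen[of 27 1] by simp

lemma inst_62: "\<exists>h. phiA^62 = (Cf^62 + 124 * fps_X * Cf^60 * P4^2 + 7440 * fps_X^2 * Cf^58 * P4^4 + 2589120 * fps_X^3 * Cf^56 * P4^6) + 128 * h"
  using apow_gen[of 28 0] by simp

lemma inst_63: "\<exists>h. phiA^63 = phiA * (Cf^62 + 124 * fps_X * Cf^60 * P4^2 + 7440 * fps_X^2 * Cf^58 * P4^4 + 2589120 * fps_X^3 * Cf^56 * P4^6) + 128 * h"
  using apow_gen[of 28 1] by simp

lemma inst_64: "\<exists>h. phiA^64 = (Cf^64 + 128 * fps_X * Cf^62 * P4^2 + 7936 * fps_X^2 * Cf^60 * P4^4 + 2856960 * fps_X^3 * Cf^58 * P4^6) + 128 * h"
  using apow_gen[of 29 0] by simp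

lemma inst_65: "\<exists>h. phiA^65 = phiA * (Cf^64 + 128 * fps_X * Cf^62 * P4^2 + 7936 * fps_X^2 * Cf^60 * P4^4 + 2856960 * fps_X^3 * Cf^58 * P4^6) + 128 * h"
  using apow_gen[of 29 1] by simp

lemma inst_134: "\<exists>h. phiA^134 = (Cf^134 + 268 * fps_X * Cf^132 * P4^2 + 35376 * fps_X^2 * Cf^130 * P4^4 + 27593280 * fps_X^3 * Cf^128 * P4^6) + 128 * h"
  using apow_gen[of 64 0] by simp

lemma inst_135: "\<exists>h. phiA^135 = phiA * (Cf^134 + 268 * fps_X * Cf^132 * P4^2 + 35376 * fps_X^2 * Cf^130 * P4^4 + 27593280 * fps_X^3 * Cf^128 * P4^6) + 128 * h"
  using apow_gen[of 64 1] by simp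

lemma inst_136: "\<exists>h. phiA^136 = (Cf^136 + 272 * fps_X * Cf^134 * P4^2 + 36448 * fps_X^2 * Cf^132 * P4^4 + 28866816 * fps_X^3 * Cf^130 * P4^6) + 128 * h"
  using apow_gen[of 65 0] by simp

lemma inst_137: "\<exists>h. phiA^137 = phiA * (Cf^136 + 272 * fps_X * Cf^134 * P4^2 + 36448 * fps_X^2 * Cf^132 * P4^4 + 28866816 * fps_X^3 * Cf^130 * P4^6) + 128 * h"
  using apow_gen[of 65 1] by simp

lemma inst_276: "\<exists>h. phiA^276 = (Cf^276 + 552 * fps_X * Cf^274 * P4^2 + 151248 * fps_X^2 * Cf^272 * P4^4 + 246836736 * fps_X^3 * Cf^270 * P4^6) + 128 * h"
  using apow_gen[of 135 0] by simp

lemma inst_277: "\<exists>h. phiA^277 = phiA * (Cf^276 + 552 * fps_X * Cf^274 * P4^2 + 151248 * fps_X^2 * Cf^272 * P4^4 + 246836736 * fps_X^3 * Cf^270 * P4^6) + 128 * h"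
  using apow_gen[of 135 1] by simp

lemma inst_278: "\<exists>h. phiA^278 = (Cf^278 + 556 * fps_X * Cf^276 * P4^2 + 153456 * fps_X^2 * Cf^274 * P4^4 + 252281664 * fps_X^3 * Cf^272 * P4^6) + 128 * h"
  using apow_gen[of 136 0] by simp

lemma inst_279: "\<exists>h. phiA^279 = phiA * (Cf^278 + 556 * fps_X * Cf^276 * P4^2 + 153456 * fps_X^2 * Cf^274 * P4^4 + 252281664 * fps_X^3 * Cf^272 * P4^6) + 128 * h"
  using apow_gen[of 136 1] by simp

lemma inst_280: "\<exists>h. phiA^280 = (Cf^280 + 560 * fps_X * Cf^278 * P4^2 + 155680 * fps_X^2 * Cf^276 * P4^4 + 257806080 * fps_X^3 * Cf^274 * P4^6) + 128 * h"
  using apow_gen[of 137 0] by simp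

lemma inst_281: "\<exists>h. phiA^281 = phiA * (Cf^280 + 560 * fps_X * Cf^278 * P4^2 + 155680 * fps_X^2 * Cf^276 * P4^4 + 257806080 * fps_X^3 * Cf^274 * P4^6) + 128 * h"
  using apow_gen[of 137 1] by simp

lemma inst_564: "\<exists>h. phiA^564 = (Cf^564 + 1128 * fps_X * Cf^562 * P4^2 + 633936 * fps_X^2 * Cf^560 * P4^4 + 2130024960 * fps_X^3 * Cf^558 * P4^6) + 128 * h"
  using apow_gen[of 279 0] by simp

lemma inst_566: "\<exists>h. phiA^566 = (Cf^566 + 1132 * fps_X * Cf^564 * P4^2 + 638448 * fps_X^2 * Cf^562 * P4^4 + 2152846656 * fps_X^3 * Cf^560 * P4^6) + 128 * h"
  using apow_gen[of 280 0] by simp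

lemma inst_567: "\<exists>h. phiA^567 = phiA * (Cf^566 + 1132 * fps_X * Cf^564 * P4^2 + 638448 * fps_X^2 * Cf^562 * P4^4 + 2152846656 * fps_X^3 * Cf^560 * P4^6) + 128 * h"
  using apow_gen[of 280 1] by simp

lemma inst_568: "\<exists>h. phiA^568 = (Cf^568 + 1136 * fps_X * Cf^566 * P4^2 + 642976 * fps_X^2 * Cf^564 * P4^4 + 2175830784 * fps_X^3 * Cf^562 * P4^6) + 128 * h"
  using apow_gen[of 281 0] by simp

lemma inst_1143: "\<exists>h. phiA^1143 = phiA * (Cf^1142 + 2284 * fps_X * Cf^1140 * P4^2 + 2603760 * fps_X^2 * Cf^1138 * P4^4 + 17778473280 * fps_X^3 * Cf^1136 * P4^6) + 128 * h"
  using apow_gen[of 568 1] by simp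

definition H0 :: "int fps" where "H0 = (phiA * Cf^2 * Di^9 + 4 * fps_X * phiA * Di^9 * P4^2)"

lemma H0_eq: "btbar_fps = H0"
  unfolding G_Bi Bi_A H0_def using R2A by algebra

definition H1 :: "int fps" where "H1 = (phiA * Cf^11 * Di^18 + 28 * fps_X * phiA * Cf^9 * Di^18 * P4^2 + 32 * fps_X^2 * phiA * Cf^7 * Di^18 * P4^4)"

lemma H1_eq: "cg (ev H0) H1"
proof -
  have dec: "H0 = sub2 0 + fps_X * sub2 0 + phiA * sub2 (phiA^2 * Bi^9) + fps_X * phiA * sub2 (4 * P2^2 * Bi^9)"
    unfolding H0_def by (simp only: sub2_add sub2_diff sub2_uminus sub2_mult sub2_power sub2_numeral sub2_X sub2_0 sub2_1 sub2_A sub2_Bi sub2_P2 sub2_P1) algebra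
  have raw: "ev H0 = 0 + Cf * (phiA^2 * Bi^9) + fps_X * (2 * P4) * (4 * P2^2 * Bi^9)"
    by (subst dec, simp only: ev_four ev_A od_A)
  have cert: "0 + Cf * (phiA^2 * Bi^9) + fps_X * (2 * P4) * (4 * P2^2 * Bi^9) = (phiA * Cf^11 * Di^18 + 28 * fps_X * phiA * Cf^9 * Di^18 * P4^2 + 32 * fps_X^2 * phiA * Cf^7 * Di^18 * P4^4) + 128 * (2 * fps_X^2 * phiA * Cf^7 * Di^18 * P4^4 + 51 * fps_X^3 * phiA * Cf^5 * Di^18 * P4^6 + 144 * fps_X^4 * phiA * Cf^3 * Di^18 * P4^8) + (phiA^9 - phiA * (Cf^8 + 16 * fps_X * Cf^6 * P4^2 + 96 * fps_X^2 * Cf^4 * P4^4 + 2304 * fps_X^3 * Cf^2 * P4^6)) * (8 * fps_X * Di^18 * P4 * P2^2) + (phiA^11 - phiA * (Cf^10 + 20 * fps_X * Cf^8 * P4^2 + 160 * fps_X^2 * Cf^6 * P4^4 + 5760 * fps_X^3 * Cf^4 * P4^6)) * (Cf * Di^18) + (P2^2 - Cf * P4) * (8 * fps_X * phiA * Cf^8 * Di^18 * P4 + 128 * fps_X^2 * phiA * Cf^6 * Di^18 * P4^3 + 768 * fps_X^3 * phiA * Cf^4 * Di^18 * P4^5 + 18432 * fps_X^4 * phiA * Cf^2 * Di^18 * P4^7)"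
    unfolding Bi_A by algebra
  obtain h9 where h9: "phiA^9 = phiA * (Cf^8 + 16 * fps_X * Cf^6 * P4^2 + 96 * fps_X^2 * Cf^4 * P4^4 + 2304 * fps_X^3 * Cf^2 * P4^6) + 128 * h9" using inst_9 by blast
  have d9: "phiA^9 - phiA * (Cf^8 + 16 * fps_X * Cf^6 * P4^2 + 96 * fps_X^2 * Cf^4 * P4^4 + 2304 * fps_X^3 * Cf^2 * P4^6) = 128 * h9" using h9 by simp
  obtain h11 where h11: "phiA^11 = phiA * (Cf^10 + 20 * fps_X * Cf^8 * P4^2 + 160 * fps_X^2 * Cf^6 * P4^4 + 5760 * fps_X^3 * Cf^4 * P4^6) + 128 * h11" using inst_11 by blast
  have d11: "phiA^11 - phiA * (Cf^10 + 20 * fps_X * Cf^8 * P4^2 + 160 * fps_X^2 * Cf^6 * P4^4 + 5760 * fps_X^3 * Cf^4 * P4^6) = 128 * h11" using h11 by simp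
  have R3z: "P2^2 - Cf * P4 = 0" using R3 by simp
  have "0 + Cf * (phiA^2 * Bi^9) + fps_X * (2 * P4) * (4 * P2^2 * Bi^9) = (phiA * Cf^11 * Di^18 + 28 * fps_X * phiA * Cf^9 * Di^18 * P4^2 + 32 * fps_X^2 * phiA * Cf^7 * Di^18 * P4^4) + 128 * (2 * fps_X^2 * phiA * Cf^7 * Di^18 * P4^4 + 51 * fps_X^3 * phiA * Cf^5 * Di^18 * P4^6 + 144 * fps_X^4 * phiA * Cf^3 * Di^18 * P4^8) + (128 * h9) * (8 * fps_X * Di^18 * P4 * P2^2) + (128 * h11) * (Cf * Di^18) + 0 * (8 * fps_X * phiA * Cf^8 * Di^18 * P4 + 128 * fps_X^2 * phiA * Cf^6 * Di^18 * P4^3 + 768 * fps_X^3 * phiA * Cf^4 * Di^18 * P4^5 + 18432 * fps_X^4 * phiA * Cf^2 * Di^18 * P4^7)"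
    by (simp only: cert d9 d11 R3z)
  also have "\<dots> = (phiA * Cf^11 * Di^18 + 28 * fps_X * phiA * Cf^9 * Di^18 * P4^2 + 32 * fps_X^2 * phiA * Cf^7 * Di^18 * P4^4) + 128 * ((2 * fps_X^2 * phiA * Cf^7 * Di^18 * P4^4 + 51 * fps_X^3 * phiA * Cf^5 * Di^18 * P4^6 + 144 * fps_X^4 * phiA * Cf^3 * Di^18 * P4^8) + h9 * (8 * fps_X * Di^18 * P4 * P2^2) + h11 * (Cf * Di^18))" by algebra
  finally show ?thesis unfolding raw H1_def by (rule cg_of_eq)
qed

definition O1 :: "int fps" where "O1 = (30 * phiA * Cf^28 * Di^36 * P4 - 32 * fps_X * phiA * Cf^26 * Di^36 * P4^3 - 32 * fps_X^2 * phiA * Cf^24 * Di^36 * P4^5)"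

lemma O1_eq: "cg (od H1) O1"
proof -
  have dec: "H1 = sub2 0 + fps_X * sub2 0 + phiA * sub2 (phiA^11 * Bi^18 + 32 * fps_X * phiA^7 * P2^4 * Bi^18) + fps_X * phiA * sub2 (28 * phiA^9 * P2^2 * Bi^18)"
    unfolding H1_def by (simp only: sub2_add sub2_diff sub2_uminus sub2_mult sub2_power sub2_numeral sub2_X sub2_0 sub2_1 sub2_A sub2_Bi sub2_P2 sub2_P1) algebra
  have raw: "od H1 = 0 + (2 * P4) * (phiA^11 * Bi^18 + 32 * fps_X * phiA^7 * P2^4 * Bi^18) + Cf * (28 * phiA^9 * P2^2 * Bi^18)"
    by (subst dec, simp only: od_four ev_A od_A)
  have cert: "0 + (2 * P4) * (phiA^11 * Bi^18 + 32 * fps_X * phiA^7 * P2^4 * Bi^18) + Cf * (28 * phiA^9 * P2^2 * Bi^18) = (30 * phiA * Cf^28 * Di^36 * P4 - 32 * fps_X * phiA * Cf^26 * Di^36 * P4^3 - 32 * fps_X^2 * phiA * Cf^24 * Di^36 * P4^5) + 128 * (13 * fps_X * phiA * Cf^26 * Di^36 * P4^3 + 320 * fps_X^2 * phiA * Cf^24 * Di^36 * P4^5 + 39840 * fps_X^3 * phiA * Cf^22 * Di^36 * P4^7 + 63360 * fps_X^4 * phiA * Cf^20 * Di^36 * P4^9) + (phiA^25 - phiA * (Cf^24 + 48 * fps_X * Cf^22 * P4^2 + 1056 * fps_X^2 * Cf^20 * P4^4 + 126720 * fps_X^3 * Cf^18 * P4^6)) * (64 * fps_X * Di^36 * P4 *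 P2^4) + (phiA^27 - phiA * (Cf^26 + 52 * fps_X * Cf^24 * P4^2 + 1248 * fps_X^2 * Cf^22 * P4^4 + 164736 * fps_X^3 * Cf^20 * P4^6)) * (28 * Cf * Di^36 * P2^2) + (phiA^29 - phiA * (Cf^28 + 56 * fps_X * Cf^26 * P4^2 + 1456 * fps_X^2 * Cf^24 * P4^4 + 209664 * fps_X^3 * Cf^22 * P4^6)) * (2 * Di^36 * P4) + (P2^2 - Cf * P4) * (28 * phiA * Cf^27 * Di^36 + 64 * fps_X * phiA * Cf^24 * Di^36 * P4 * P2^2 + 1520 * fps_X * phiA * Cf^25 * Di^36 * P4^2 + 3072 * fps_X^2 * phiA * Cf^22 * Di^36 * P4^3 * P2^2 + 38016 * fps_X^2 * phiA * Cf^23 * Di^36 * P4^4 + 67584 * fps_X^3 * phiA * Cf^20 * Di^36 * P4^5 * P2^2 + 4680192 * fps_X^3 * phiA * Cf^21 * Di^36 * P4^6 + 8110080 * fps_X^4 * phiA * Cf^18 * Di^36 * P4^7 * P2^2 + 8110080 * fps_X^4 * phiA * Cf^19 * Di^36 * P4^8)"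
    unfolding Bi_A by algebra
  obtain h25 where h25: "phiA^25 = phiA * (Cf^24 + 48 * fps_X * Cf^22 * P4^2 + 1056 * fps_X^2 * Cf^20 * P4^4 + 126720 * fps_X^3 * Cf^18 * P4^6) + 128 * h25" using inst_25 by blast
  have d25: "phiA^25 - phiA * (Cf^24 + 48 * fps_X * Cf^22 * P4^2 + 1056 * fps_X^2 * Cf^20 * P4^4 + 126720 * fps_X^3 * Cf^18 * P4^6) = 128 * h25" using h25 by simp
  obtain h27 where h27: "phiA^27 = phiA * (Cf^26 + 52 * fps_X * Cf^24 * P4^2 + 1248 * fps_X^2 * Cf^22 * P4^4 + 164736 * fps_X^3 * Cf^20 * P4^6) + 128 * h27" using inst_27 by blast
  have d27: "phiA^27 - phiA * (Cf^26 + 52 * fps_X * Cf^24 * P4^2 + 1248 * fps_X^2 * Cf^22 * P4^4 + 164736 * fps_X^3 * Cf^20 * P4^6) = 128 * h27" using h27 by simp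
  obtain h29 where h29: "phiA^29 = phiA * (Cf^28 + 56 * fps_X * Cf^26 * P4^2 + 1456 * fps_X^2 * Cf^24 * P4^4 + 209664 * fps_X^3 * Cf^22 * P4^6) + 128 * h29" using inst_29 by blast
  have d29: "phiA^29 - phiA * (Cf^28 + 56 * fps_X * Cf^26 * P4^2 + 1456 * fps_X^2 * Cf^24 * P4^4 + 209664 * fps_X^3 * Cf^22 * P4^6) = 128 * h29" using h29 by simp
  have R3z: "P2^2 - Cf * P4 = 0" using R3 by simp
  have "0 + (2 * P4) * (phiA^11 * Bi^18 + 32 * fps_X * phiA^7 * P2^4 * Bi^18) + Cf * (28 * phiA^9 * P2^2 * Bi^18) = (30 * phiA * Cf^28 * Di^36 * P4 - 32 * fps_X * phiA * Cf^26 * Di^36 * P4^3 - 32 * fps_X^2 * phiA * Cf^24 * Di^36 * P4^5) + 128 * (13 * fps_X * phiA * Cf^26 * Di^36 * P4^3 + 320 * fps_X^2 * phiA * Cf^24 * Di^36 * P4^5 + 39840 * fps_X^3 * phiA * Cf^22 * Di^36 * P4^7 + 63360 * fps_X^4 * phiA * Cf^20 * Di^36 * P4^9) + (128 * h25) * (64 * fps_X * Di^36 * P4 * P2^4) + (128 * h27) * (28 * Cf * Di^36 * P2^2) + (128 * h29) * (2 * Di^36 * P4) + 0 * (28 * phiA * Cf^27 * Di^36 + 64 * fps_X * phiA * Cf^24 * Di^36 * P4 * P2^2 + 1520 * fps_X * phiA * Cf^25 * Di^36 * P4^2 + 3072 * fps_X^2 * phiA * Cf^22 * Di^36 * P4^3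 * P2^2 + 38016 * fps_X^2 * phiA * Cf^23 * Di^36 * P4^4 + 67584 * fps_X^3 * phiA * Cf^20 * Di^36 * P4^5 * P2^2 + 4680192 * fps_X^3 * phiA * Cf^21 * Di^36 * P4^6 + 8110080 * fps_X^4 * phiA * Cf^18 * Di^36 * P4^7 * P2^2 + 8110080 * fps_X^4 * phiA * Cf^19 * Di^36 * P4^8)"
    by (simp only: cert d25 d27 d29 R3z)
  also have "\<dots> = (30 * phiA * Cf^28 * Di^36 * P4 - 32 * fps_X * phiA * Cf^26 * Di^36 * P4^3 - 32 * fps_X^2 * phiA * Cf^24 * Di^36 * P4^5) + 128 * ((13 * fps_X * phiA * Cf^26 * Di^36 * P4^3 + 320 * fps_X^2 * phiA * Cf^24 * Di^36 * P4^5 + 39840 * fps_X^3 * phiA * Cf^22 * Di^36 * P4^7 + 63360 * fps_X^4 * phiA * Cf^20 * Di^36 * P4^9) + h25 * (64 * fps_X * Di^36 * P4 * P2^4) + h27 * (28 * Cf * Di^36 * P2^2) + h29 * (2 * Di^36 * P4))" by algebra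
  finally show ?thesis unfolding raw O1_def by (rule cg_of_eq)
qed

definition EO1 :: "int fps" where "EO1 = (30 * Cf^65 * Di^72 * P2 + 32 * fps_X * Cf^63 * Di^72 * P4^2 * P2)"

lemma EO1_eq: "cg (ev O1) EO1"
proof -
  have dec: "O1 = sub2 0 + fps_X * sub2 0 + phiA * sub2 (30 * phiA^28 * P2 * Bi^36 - 32 * fps_X * phiA^24 * P2^5 * Bi^36) + fps_X * phiA * sub2 (- 32 * phiA^26 * P2^3 * Bi^36)"
    unfolding O1_def by (simp only: sub2_add sub2_diff sub2_uminus sub2_mult sub2_power sub2_numeral sub2_X sub2_0 sub2_1 sub2_A sub2_Bi sub2_P2 sub2_P1) algebra
  have raw: "ev O1 = 0 + Cf * (30 * phiA^28 * P2 * Bi^36 - 32 * fps_X * phiA^24 * P2^5 * Bi^36) + fps_X * (2 * P4) * (- 32 * phiA^26 * P2^3 * Bi^36)"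
    by (subst dec, simp only: ev_four ev_A od_A)
  have cert: "0 + Cf * (30 * phiA^28 * P2 * Bi^36 - 32 * fps_X * phiA^24 * P2^5 * Bi^36) + fps_X * (2 * P4) * (- 32 * phiA^26 * P2^3 * Bi^36) = (30 * Cf^65 * Di^72 * P2 + 32 * fps_X * Cf^63 * Di^72 * P4^2 * P2) + 128 * (29 * fps_X * Cf^63 * Di^72 * P4^2 * P2 + 1768 * fps_X^2 * Cf^61 * Di^72 * P4^4 * P2 + 664140 * fps_X^3 * Cf^59 * Di^72 * P4^6 * P2 - 1879200 * fps_X^4 * Cf^57 * Di^72 * P4^8 * P2) + (phiA^60 - (Cf^60 + 120 * fps_X * Cf^58 * P4^2 + 6960 * fps_X^2 * Cf^56 * P4^4 + 2338560 * fps_X^3 * Cf^54 * P4^6)) * (- 32 * fps_X * Cf * Di^72 * P2^5) + (phiA^62 - (Cf^62 + 124 * fps_X * Cf^60 * P4^2 + 7440 * fps_X^2 * Cf^58 * P4^4 + 2589120 * fps_X^3 * Cf^56 * P4^6)) * (- 64 * fps_X * Di^72 * P4 * P2^3) + (phiA^64 - (Cf^64 + 128 * fps_X * Cf^62 * P4^2 + 7936 * fps_X^2 * Cf^60 * P4^4 + 2856960 * fps_X^3 * Cf^58 * P4^6)) * (30 * Cf * Di^72 * P2) + (P2^2 - Cf * P4) * (- 32 * fps_X * Cf^61 * Di^72 * P2^3 - 96 * fps_X * Cf^62 * Di^72 * P4 * P2 - 3840 * fps_X^2 * Cf^59 * Di^72 * P4^2 * P2^3 - 11776 * fps_X^2 *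 Cf^60 * Di^72 * P4^3 * P2 - 222720 * fps_X^3 * Cf^57 * Di^72 * P4^4 * P2^3 - 698880 * fps_X^3 * Cf^58 * Di^72 * P4^5 * P2 - 74833920 * fps_X^4 * Cf^55 * Di^72 * P4^6 * P2^3 - 240537600 * fps_X^4 * Cf^56 * Di^72 * P4^7 * P2)"
    unfolding Bi_A by algebra
  obtain h60 where h60: "phiA^60 = (Cf^60 + 120 * fps_X * Cf^58 * P4^2 + 6960 * fps_X^2 * Cf^56 * P4^4 + 2338560 * fps_X^3 * Cf^54 * P4^6) + 128 * h60" using inst_60 by blast
  have d60: "phiA^60 - (Cf^60 + 120 * fps_X * Cf^58 * P4^2 + 6960 * fps_X^2 * Cf^56 * P4^4 + 2338560 * fps_X^3 * Cf^54 * P4^6) = 128 * h60" using h60 by simp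
  obtain h62 where h62: "phiA^62 = (Cf^62 + 124 * fps_X * Cf^60 * P4^2 + 7440 * fps_X^2 * Cf^58 * P4^4 + 2589120 * fps_X^3 * Cf^56 * P4^6) + 128 * h62" using inst_62 by blast
  have d62: "phiA^62 - (Cf^62 + 124 * fps_X * Cf^60 * P4^2 + 7440 * fps_X^2 * Cf^58 * P4^4 + 2589120 * fps_X^3 * Cf^56 * P4^6) = 128 * h62" using h62 by simp
  obtain h64 where h64: "phiA^64 = (Cf^64 + 128 * fps_X * Cf^62 * P4^2 + 7936 * fps_X^2 * Cf^60 * P4^4 + 2856960 * fps_X^3 * Cf^58 * P4^6) + 128 * h64" using inst_64 by blast
  have d64: "phiA^64 - (Cf^64 + 128 * fps_X * Cf^62 * P4^2 + 7936 * fps_X^2 * Cf^60 * P4^4 + 2856960 * fps_X^3 * Cf^58 * P4^6) = 128 * h64" using h64 by simp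
  have R3z: "P2^2 - Cf * P4 = 0" using R3 by simp
  have "0 + Cf * (30 * phiA^28 * P2 * Bi^36 - 32 * fps_X * phiA^24 * P2^5 * Bi^36) + fps_X * (2 * P4) * (- 32 * phiA^26 * P2^3 * Bi^36) = (30 * Cf^65 * Di^72 * P2 + 32 * fps_X * Cf^63 * Di^72 * P4^2 * P2) + 128 * (29 * fps_X * Cf^63 * Di^72 * P4^2 * P2 + 1768 * fps_X^2 * Cf^61 * Di^72 * P4^4 * P2 + 664140 * fps_X^3 * Cf^59 * Di^72 * P4^6 * P2 - 1879200 * fps_X^4 * Cf^57 * Di^72 * P4^8 * P2) + (128 * h60) * (- 32 * fps_X * Cf * Di^72 * P2^5) + (128 * h62) * (- 64 * fps_X * Di^72 * P4 * P2^3) + (128 * h64) * (30 * Cf * Di^72 * P2) + 0 * (- 32 * fps_X * Cf^61 * Di^72 * P2^3 - 96 * fps_X * Cf^62 * Di^72 * P4 * P2 - 3840 * fps_X^2 * Cf^59 * Di^72 * P4^2 * P2^3 - 11776 * fps_X^2 * Cf^60 * Di^72 * P4^3 * P2 - 222720 * fps_X^3 * Cf^57 * Di^72 * P4^4 * P2^3 - 698880 * fps_X^3 * Cf^58 * Di^72 * P4^5 * P2 - 74833920 * fps_X^4 * Cf^55 * Di^72 * P4^6 * P2^3 - 240537600 * fps_X^4 * Cf^56 * Di^72 * P4^7 * P2)"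
    by (simp only: cert d60 d62 d64 R3z)
  also have "\<dots> = (30 * Cf^65 * Di^72 * P2 + 32 * fps_X * Cf^63 * Di^72 * P4^2 * P2) + 128 * ((29 * fps_X * Cf^63 * Di^72 * P4^2 * P2 + 1768 * fps_X^2 * Cf^61 * Di^72 * P4^4 * P2 + 664140 * fps_X^3 * Cf^59 * Di^72 * P4^6 * P2 - 1879200 * fps_X^4 * Cf^57 * Di^72 * P4^8 * P2) + h60 * (- 32 * fps_X * Cf * Di^72 * P2^5) + h62 * (- 64 * fps_X * Di^72 * P4 * P2^3) + h64 * (30 * Cf * Di^72 * P2))" by algebra
  finally show ?thesis unfolding raw EO1_def by (rule cg_of_eq)
qed

definition T1 :: "int fps" where "T1 = (32 * phiA * Cf^135 * Di^144 * P4 * P1)"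

lemma T1_eq: "cg (od EO1) T1"
proof -
  have dec: "EO1 = sub2 (30 * phiA^65 * P1 * Bi^72) + fps_X * sub2 (32 * phiA^63 * P2^2 * P1 * Bi^72) + phiA * sub2 0 + fps_X * phiA * sub2 0"
    unfolding EO1_def by (simp only: sub2_add sub2_diff sub2_uminus sub2_mult sub2_power sub2_numeral sub2_X sub2_0 sub2_1 sub2_A sub2_Bi sub2_P2 sub2_P1) algebra
  have raw: "od EO1 = (32 * phiA^63 * P2^2 * P1 * Bi^72) + (2 * P4) * 0 + Cf * 0"
    by (subst dec, simp only: od_four ev_A od_A)
  have cert: "(32 * phiA^63 * P2^2 * P1 * Bi^72) + (2 * P4) * 0 + Cf * 0 = (32 * phiA * Cf^135 * Di^144 * P4 * P1) + 128 * (67 * fps_X * phiA * Cf^133 * Di^144 * P4^3 * P1 + 8844 * fps_X^2 * phiA * Cf^131 * Di^144 * P4^5 * P1 + 6898320 * fps_X^3 * phiA * Cf^129 * Di^144 * P4^7 * P1) + (phiA^135 - phiA * (Cf^134 + 268 * fps_X * Cf^132 * P4^2 + 35376 * fps_X^2 * Cf^130 * P4^4 + 27593280 * fps_X^3 * Cf^128 * P4^6)) * (32 * Di^144 * P2^2 * P1) + (P2^2 - Cf * P4) * (32 * phiA * Cf^134 * Di^144 * P1 + 8576 * fps_X * phiA * Cf^132 * Di^144 * P4^2 * P1 + 1132032 * fps_X^2 * phiA * Cf^130 * Di^144 * P4^4 * P1 + 882984960 * fps_X^3 * phiA * Cf^128 * Di^144 * P4^6 * P1)"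
    unfolding Bi_A by algebra
  obtain h135 where h135: "phiA^135 = phiA * (Cf^134 + 268 * fps_X * Cf^132 * P4^2 + 35376 * fps_X^2 * Cf^130 * P4^4 + 27593280 * fps_X^3 * Cf^128 * P4^6) + 128 * h135" using inst_135 by blast
  have d135: "phiA^135 - phiA * (Cf^134 + 268 * fps_X * Cf^132 * P4^2 + 35376 * fps_X^2 * Cf^130 * P4^4 + 27593280 * fps_X^3 * Cf^128 * P4^6) = 128 * h135" using h135 by simp
  have R3z: "P2^2 - Cf * P4 = 0" using R3 by simp
  have "(32 * phiA^63 * P2^2 * P1 * Bi^72) + (2 * P4) * 0 + Cf * 0 = (32 * phiA * Cf^135 * Di^144 * P4 * P1) + 128 * (67 * fps_X * phiA * Cf^133 * Di^144 * P4^3 * P1 + 8844 * fps_X^2 * phiA * Cf^131 * Di^144 * P4^5 * P1 + 6898320 * fps_X^3 * phiA * Cf^129 * Di^144 * P4^7 * P1) + (128 * h135) * (32 * Di^144 * P2^2 * P1) + 0 * (32 * phiA * Cf^134 * Di^144 * P1 + 8576 * fps_X * phiA * Cf^132 * Di^144 * P4^2 * P1 + 1132032 * fps_X^2 * phiA * Cf^130 * Di^144 * P4^4 * P1 + 882984960 * fps_X^3 * phiA * Cf^128 * Di^144 * P4^6 * P1)"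
    by (simp only: cert d135 R3z)
  also have "\<dots> = (32 * phiA * Cf^135 * Di^144 * P4 * P1) + 128 * ((67 * fps_X * phiA * Cf^133 * Di^144 * P4^3 * P1 + 8844 * fps_X^2 * phiA * Cf^131 * Di^144 * P4^5 * P1 + 6898320 * fps_X^3 * phiA * Cf^129 * Di^144 * P4^7 * P1) + h135 * (32 * Di^144 * P2^2 * P1))" by algebra
  finally show ?thesis unfolding raw T1_def by (rule cg_of_eq)
qed

definition H2 :: "int fps" where "H2 = (phiA * Cf^29 * Di^36 + 16 * fps_X * phiA * Cf^27 * Di^36 * P4^2 + 16 * fps_X^2 * phiA * Cf^25 * Di^36 * P4^4)"

lemma H2_eq: "cg (ev H1) H2"
proof -
  have dec: "H1 = sub2 0 + fps_X * sub2 0 + phiA * sub2 (phiA^11 * Bi^18 + 32 * fps_X * phiA^7 * P2^4 * Bi^18) + fps_X * phiA * sub2 (28 * phiA^9 * P2^2 * Bi^18)"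
    unfolding H1_def by (simp only: sub2_add sub2_diff sub2_uminus sub2_mult sub2_power sub2_numeral sub2_X sub2_0 sub2_1 sub2_A sub2_Bi sub2_P2 sub2_P1) algebra
  have raw: "ev H1 = 0 + Cf * (phiA^11 * Bi^18 + 32 * fps_X * phiA^7 * P2^4 * Bi^18) + fps_X * (2 * P4) * (28 * phiA^9 * P2^2 * Bi^18)"
    by (subst dec, simp only: ev_four ev_A od_A)
  have cert: "0 + Cf * (phiA^11 * Bi^18 + 32 * fps_X * phiA^7 * P2^4 * Bi^18) + fps_X * (2 * P4) * (28 * phiA^9 * P2^2 * Bi^18) = (phiA * Cf^29 * Di^36 + 16 * fps_X * phiA * Cf^27 * Di^36 * P4^2 + 16 * fps_X^2 * phiA * Cf^25 * Di^36 * P4^4) + 128 * (fps_X * phiA * Cf^27 * Di^36 * P4^2 + 46 * fps_X^2 * phiA * Cf^25 * Di^36 * P4^4 + 2448 * fps_X^3 * phiA * Cf^23 * Di^36 * P4^6 + 103752 * fps_X^4 * phiA * Cf^21 * Di^36 * P4^8) + (phiA^25 - phiA * (Cf^24 + 48 * fps_X * Cf^22 * P4^2 + 1056 * fps_X^2 * Cf^20 * P4^4 + 126720 * fps_X^3 * Cf^18 * P4^6)) * (32 * fps_X * Cf * Di^36 * P2^4) + (phiA^27 - phiA * (Cf^26 + 52 * fps_X * Cf^24 * P4^2 + 1248 * fps_X^2 * Cf^22 * P4^4 + 164736 * fps_X^3 * Cf^20 * P4^6)) * (56 * fps_X * Di^36 * P4 * P2^2) + (phiA^29 - phiA * (Cf^28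 + 56 * fps_X * Cf^26 * P4^2 + 1456 * fps_X^2 * Cf^24 * P4^4 + 209664 * fps_X^3 * Cf^22 * P4^6)) * (Cf * Di^36) + (P2^2 - Cf * P4) * (32 * fps_X * phiA * Cf^25 * Di^36 * P2^2 + 88 * fps_X * phiA * Cf^26 * Di^36 * P4 + 1536 * fps_X^2 * phiA * Cf^23 * Di^36 * P4^2 * P2^2 + 4448 * fps_X^2 * phiA * Cf^24 * Di^36 * P4^3 + 33792 * fps_X^3 * phiA * Cf^21 * Di^36 * P4^4 * P2^2 + 103680 * fps_X^3 * phiA * Cf^22 * Di^36 * P4^5 + 4055040 * fps_X^4 * phiA * Cf^19 * Di^36 * P4^6 * P2^2 + 13280256 * fps_X^4 * phiA * Cf^20 * Di^36 * P4^7)"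
    unfolding Bi_A by algebra
  obtain h25 where h25: "phiA^25 = phiA * (Cf^24 + 48 * fps_X * Cf^22 * P4^2 + 1056 * fps_X^2 * Cf^20 * P4^4 + 126720 * fps_X^3 * Cf^18 * P4^6) + 128 * h25" using inst_25 by blast
  have d25: "phiA^25 - phiA * (Cf^24 + 48 * fps_X * Cf^22 * P4^2 + 1056 * fps_X^2 * Cf^20 * P4^4 + 126720 * fps_X^3 * Cf^18 * P4^6) = 128 * h25" using h25 by simp
  obtain h27 where h27: "phiA^27 = phiA * (Cf^26 + 52 * fps_X * Cf^24 * P4^2 + 1248 * fps_X^2 * Cf^22 * P4^4 + 164736 * fps_X^3 * Cf^20 * P4^6) + 128 * h27" using inst_27 by blast
  have d27: "phiA^27 - phiA * (Cf^26 + 52 * fps_X * Cf^24 * P4^2 + 1248 * fps_X^2 * Cf^22 * P4^4 + 164736 * fps_X^3 * Cf^20 * P4^6) = 128 * h27" using h27 by simp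
  obtain h29 where h29: "phiA^29 = phiA * (Cf^28 + 56 * fps_X * Cf^26 * P4^2 + 1456 * fps_X^2 * Cf^24 * P4^4 + 209664 * fps_X^3 * Cf^22 * P4^6) + 128 * h29" using inst_29 by blast
  have d29: "phiA^29 - phiA * (Cf^28 + 56 * fps_X * Cf^26 * P4^2 + 1456 * fps_X^2 * Cf^24 * P4^4 + 209664 * fps_X^3 * Cf^22 * P4^6) = 128 * h29" using h29 by simp
  have R3z: "P2^2 - Cf * P4 = 0" using R3 by simp
  have "0 + Cf * (phiA^11 * Bi^18 + 32 * fps_X * phiA^7 * P2^4 * Bi^18) + fps_X * (2 * P4) * (28 * phiA^9 * P2^2 * Bi^18) = (phiA * Cf^29 * Di^36 + 16 * fps_X * phiA * Cf^27 * Di^36 * P4^2 + 16 * fps_X^2 * phiA * Cf^25 * Di^36 * P4^4) + 128 * (fps_X * phiA * Cf^27 * Di^36 * P4^2 + 46 * fps_X^2 * phiA * Cf^25 * Di^36 * P4^4 + 2448 * fps_X^3 * phiA * Cf^23 * Di^36 * P4^6 + 103752 * fps_X^4 * phiA * Cf^21 * Di^36 * P4^8) + (128 * h25) * (32 * fps_X * Cf * Di^36 * P2^4) + (128 * h27) * (56 * fps_X * Di^36 * P4 * P2^2) + (128 * h29) * (Cf * Di^36) + 0 * (32 * fps_X * phiA * Cf^25 * Di^36 * P2^2 + 88 * fps_X * phiA * Cf^26 * Di^36 * P4 + 1536 * fps_X^2 * phiA * Cf^23 * Di^36 * P4^2 * P2^2 + 4448 * fps_X^2 * phiA * Cf^24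 * Di^36 * P4^3 + 33792 * fps_X^3 * phiA * Cf^21 * Di^36 * P4^4 * P2^2 + 103680 * fps_X^3 * phiA * Cf^22 * Di^36 * P4^5 + 4055040 * fps_X^4 * phiA * Cf^19 * Di^36 * P4^6 * P2^2 + 13280256 * fps_X^4 * phiA * Cf^20 * Di^36 * P4^7)"
    by (simp only: cert d25 d27 d29 R3z)
  also have "\<dots> = (phiA * Cf^29 * Di^36 + 16 * fps_X * phiA * Cf^27 * Di^36 * P4^2 + 16 * fps_X^2 * phiA * Cf^25 * Di^36 * P4^4) + 128 * ((fps_X * phiA * Cf^27 * Di^36 * P4^2 + 46 * fps_X^2 * phiA * Cf^25 * Di^36 * P4^4 + 2448 * fps_X^3 * phiA * Cf^23 * Di^36 * P4^6 + 103752 * fps_X^4 * phiA * Cf^21 * Di^36 * P4^8) + h25 * (32 * fps_X * Cf * Di^36 * P2^4) + h27 * (56 * fps_X * Di^36 * P4 * P2^2) + h29 * (Cf * Di^36))" by algebra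
  finally show ?thesis unfolding raw H2_def by (rule cg_of_eq)
qed

definition O2 :: "int fps" where "O2 = (18 * phiA * Cf^64 * Di^72 * P4 - 32 * fps_X * phiA * Cf^62 * Di^72 * P4^3)"

lemma O2_eq: "cg (od H2) O2"
proof -
  have dec: "H2 = sub2 0 + fps_X * sub2 0 + phiA * sub2 (phiA^29 * Bi^36 + 16 * fps_X * phiA^25 * P2^4 * Bi^36) + fps_X * phiA * sub2 (16 * phiA^27 * P2^2 * Bi^36)"
    unfolding H2_def by (simp only: sub2_add sub2_diff sub2_uminus sub2_mult sub2_power sub2_numeral sub2_X sub2_0 sub2_1 sub2_A sub2_Bi sub2_P2 sub2_P1) algebra
  have raw: "od H2 = 0 + (2 * P4) * (phiA^29 * Bi^36 + 16 * fps_X * phiA^25 * P2^4 * Bi^36) + Cf * (16 * phiA^27 * P2^2 * Bi^36)"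
    by (subst dec, simp only: od_four ev_A od_A)
  have cert: "0 + (2 * P4) * (phiA^29 * Bi^36 + 16 * fps_X * phiA^25 * P2^4 * Bi^36) + Cf * (16 * phiA^27 * P2^2 * Bi^36) = (18 * phiA * Cf^64 * Di^72 * P4 - 32 * fps_X * phiA * Cf^62 * Di^72 * P4^3) + 128 * (18 * fps_X * phiA * Cf^62 * Di^72 * P4^3 + 1084 * fps_X^2 * phiA * Cf^60 * Di^72 * P4^5 + 370020 * fps_X^3 * phiA * Cf^58 * Di^72 * P4^7 + 584640 * fps_X^4 * phiA * Cf^56 * Di^72 * P4^9) + (phiA^61 - phiA * (Cf^60 + 120 * fps_X * Cf^58 * P4^2 + 6960 * fps_X^2 * Cf^56 * P4^4 + 2338560 * fps_X^3 * Cf^54 * P4^6)) * (32 * fps_X * Di^72 * P4 * P2^4) + (phiA^63 - phiA * (Cf^62 + 124 * fps_X * Cf^60 * P4^2 + 7440 * fps_X^2 * Cf^58 * P4^4 + 2589120 * fps_X^3 * Cf^56 * P4^6)) * (16 * Cf * Di^72 * P2^2) + (phiA^65 - phiA * (Cf^64 + 128 * fps_X * Cf^62 * P4^2 + 7936 * fps_X^2 * Cf^60 * P4^4 + 2856960 * fps_X^3 * Cf^58 * P4^6)) * (2 * Di^72 * P4) + (P2^2 - Cf * P4) * (16 * phiA * Cf^63 * Di^72 + 32 * fps_X * phiA * Cf^60 * Di^72 * P4 * P2^2 + 2016 * fps_X * phiA * Cf^61 * Di^72 * P4^2 + 3840 * fps_X^2 * phiA * Cf^58 * Di^72 * P4^3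 * P2^2 + 122880 * fps_X^2 * phiA * Cf^59 * Di^72 * P4^4 + 222720 * fps_X^3 * phiA * Cf^56 * Di^72 * P4^5 * P2^2 + 41648640 * fps_X^3 * phiA * Cf^57 * Di^72 * P4^6 + 74833920 * fps_X^4 * phiA * Cf^54 * Di^72 * P4^7 * P2^2 + 74833920 * fps_X^4 * phiA * Cf^55 * Di^72 * P4^8)"
    unfolding Bi_A by algebra
  obtain h61 where h61: "phiA^61 = phiA * (Cf^60 + 120 * fps_X * Cf^58 * P4^2 + 6960 * fps_X^2 * Cf^56 * P4^4 + 2338560 * fps_X^3 * Cf^54 * P4^6) + 128 * h61" using inst_61 by blast
  have d61: "phiA^61 - phiA * (Cf^60 + 120 * fps_X * Cf^58 * P4^2 + 6960 * fps_X^2 * Cf^56 * P4^4 + 2338560 * fps_X^3 * Cf^54 * P4^6) = 128 * h61" using h61 by simp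
  obtain h63 where h63: "phiA^63 = phiA * (Cf^62 + 124 * fps_X * Cf^60 * P4^2 + 7440 * fps_X^2 * Cf^58 * P4^4 + 2589120 * fps_X^3 * Cf^56 * P4^6) + 128 * h63" using inst_63 by blast
  have d63: "phiA^63 - phiA * (Cf^62 + 124 * fps_X * Cf^60 * P4^2 + 7440 * fps_X^2 * Cf^58 * P4^4 + 2589120 * fps_X^3 * Cf^56 * P4^6) = 128 * h63" using h63 by simp
  obtain h65 where h65: "phiA^65 = phiA * (Cf^64 + 128 * fps_X * Cf^62 * P4^2 + 7936 * fps_X^2 * Cf^60 * P4^4 + 2856960 * fps_X^3 * Cf^58 * P4^6) + 128 * h65" using inst_65 by blast
  have d65: "phiA^65 - phiA * (Cf^64 + 128 * fps_X * Cf^62 * P4^2 + 7936 * fps_X^2 * Cf^60 * P4^4 + 2856960 * fps_X^3 * Cf^58 * P4^6) = 128 * h65" using h65 by simp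
  have R3z: "P2^2 - Cf * P4 = 0" using R3 by simp
  have "0 + (2 * P4) * (phiA^29 * Bi^36 + 16 * fps_X * phiA^25 * P2^4 * Bi^36) + Cf * (16 * phiA^27 * P2^2 * Bi^36) = (18 * phiA * Cf^64 * Di^72 * P4 - 32 * fps_X * phiA * Cf^62 * Di^72 * P4^3) + 128 * (18 * fps_X * phiA * Cf^62 * Di^72 * P4^3 + 1084 * fps_X^2 * phiA * Cf^60 * Di^72 * P4^5 + 370020 * fps_X^3 * phiA * Cf^58 * Di^72 * P4^7 + 584640 * fps_X^4 * phiA * Cf^56 * Di^72 * P4^9) + (128 * h61) * (32 * fps_X * Di^72 * P4 * P2^4) + (128 * h63) * (16 * Cf * Di^72 * P2^2) + (128 * h65) * (2 * Di^72 * P4) + 0 * (16 * phiA * Cf^63 * Di^72 + 32 * fps_X * phiA * Cf^60 * Di^72 * P4 * P2^2 + 2016 * fps_X * phiA * Cf^61 * Di^72 * P4^2 + 3840 * fps_X^2 * phiA * Cf^58 * Di^72 * P4^3 * P2^2 + 122880 * fps_X^2 * phiA * Cf^59 * Di^72 * P4^4 + 222720 * fps_X^3 * phiA * Cf^56 * Di^72 * P4^5 * P2^2 + 41648640 * fps_X^3 * phiA * Cf^57 * Di^72 * P4^6 + 74833920 * fps_X^4 * phiA * Cf^54 * Di^72 * P4^7 * P2^2 + 74833920 * fps_X^4 * phiA * Cf^55 * Di^72 * P4^8)"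
    by (simp only: cert d61 d63 d65 R3z)
  also have "\<dots> = (18 * phiA * Cf^64 * Di^72 * P4 - 32 * fps_X * phiA * Cf^62 * Di^72 * P4^3) + 128 * ((18 * fps_X * phiA * Cf^62 * Di^72 * P4^3 + 1084 * fps_X^2 * phiA * Cf^60 * Di^72 * P4^5 + 370020 * fps_X^3 * phiA * Cf^58 * Di^72 * P4^7 + 584640 * fps_X^4 * phiA * Cf^56 * Di^72 * P4^9) + h61 * (32 * fps_X * Di^72 * P4 * P2^4) + h63 * (16 * Cf * Di^72 * P2^2) + h65 * (2 * Di^72 * P4))" by algebra
  finally show ?thesis unfolding raw O2_def by (rule cg_of_eq)
qed

definition EO2 :: "int fps" where "EO2 = (18 * Cf^137 * Di^144 * P2 - 32 * fps_X * Cf^135 * Di^144 * P4^2 * P2 + 64 * fps_X^2 * Cf^133 * Di^144 * P4^4 * P2)"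

lemma EO2_eq: "cg (ev O2) EO2"
proof -
  have dec: "O2 = sub2 0 + fps_X * sub2 0 + phiA * sub2 (18 * phiA^64 * P2 * Bi^72) + fps_X * phiA * sub2 (- 32 * phiA^62 * P2^3 * Bi^72)"
    unfolding O2_def by (simp only: sub2_add sub2_diff sub2_uminus sub2_mult sub2_power sub2_numeral sub2_X sub2_0 sub2_1 sub2_A sub2_Bi sub2_P2 sub2_P1) algebra
  have raw: "ev O2 = 0 + Cf * (18 * phiA^64 * P2 * Bi^72) + fps_X * (2 * P4) * (- 32 * phiA^62 * P2^3 * Bi^72)"
    by (subst dec, simp only: ev_four ev_A od_A)
  have cert: "0 + Cf * (18 * phiA^64 * P2 * Bi^72) + fps_X * (2 * P4) * (- 32 * phiA^62 * P2^3 * Bi^72) = (18 * Cf^137 * Di^144 * P2 - 32 * fps_X * Cf^135 * Di^144 * P4^2 * P2 + 64 * fps_X^2 * Cf^133 * Di^144 * P4^4 * P2) + 128 * (38 * fps_X * Cf^135 * Di^144 * P4^2 * P2 + 4991 * fps_X^2 * Cf^133 * Di^144 * P4^4 * P2 + 4041708 * fps_X^3 * Cf^131 * Di^144 * P4^6 * P2 - 13796640 * fps_X^4 * Cf^129 * Di^144 * P4^8 * P2) + (phiA^134 - (Cf^134 + 268 * fps_X * Cf^132 * P4^2 + 35376 * fps_X^2 * Cf^130 * P4^4 + 27593280 * fps_X^3 * Cf^128 * P4^6)) * (- 64 * fps_X * Di^144 * P4 * P2^3) + (phiA^136 - (Cf^136 + 272 * fps_X * Cf^134 * P4^2 + 36448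 * fps_X^2 * Cf^132 * P4^4 + 28866816 * fps_X^3 * Cf^130 * P4^6)) * (18 * Cf * Di^144 * P2) + (P2^2 - Cf * P4) * (- 64 * fps_X * Cf^134 * Di^144 * P4 * P2 - 17152 * fps_X^2 * Cf^132 * Di^144 * P4^3 * P2 - 2264064 * fps_X^3 * Cf^130 * Di^144 * P4^5 * P2 - 1765969920 * fps_X^4 * Cf^128 * Di^144 * P4^7 * P2)"
    unfolding Bi_A by algebra
  obtain h134 where h134: "phiA^134 = (Cf^134 + 268 * fps_X * Cf^132 * P4^2 + 35376 * fps_X^2 * Cf^130 * P4^4 + 27593280 * fps_X^3 * Cf^128 * P4^6) + 128 * h134" using inst_134 by blast
  have d134: "phiA^134 - (Cf^134 + 268 * fps_X * Cf^132 * P4^2 + 35376 * fps_X^2 * Cf^130 * P4^4 + 27593280 * fps_X^3 * Cf^128 * P4^6) = 128 * h134" using h134 by simp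
  obtain h136 where h136: "phiA^136 = (Cf^136 + 272 * fps_X * Cf^134 * P4^2 + 36448 * fps_X^2 * Cf^132 * P4^4 + 28866816 * fps_X^3 * Cf^130 * P4^6) + 128 * h136" using inst_136 by blast
  have d136: "phiA^136 - (Cf^136 + 272 * fps_X * Cf^134 * P4^2 + 36448 * fps_X^2 * Cf^132 * P4^4 + 28866816 * fps_X^3 * Cf^130 * P4^6) = 128 * h136" using h136 by simp
  have R3z: "P2^2 - Cf * P4 = 0" using R3 by simp
  have "0 + Cf * (18 * phiA^64 * P2 * Bi^72) + fps_X * (2 * P4) * (- 32 * phiA^62 * P2^3 * Bi^72) = (18 * Cf^137 * Di^144 * P2 - 32 * fps_X * Cf^135 * Di^144 * P4^2 * P2 + 64 * fps_X^2 * Cf^133 * Di^144 * P4^4 * P2) + 128 * (38 * fps_X * Cf^135 * Di^144 * P4^2 * P2 + 4991 * fps_X^2 * Cf^133 * Di^144 * P4^4 * P2 + 4041708 * fps_X^3 * Cf^131 * Di^144 * P4^6 * P2 - 13796640 * fps_X^4 * Cf^129 * Di^144 * P4^8 * P2) + (128 * h134) * (- 64 * fps_X * Di^144 * P4 * P2^3) + (128 * h136) * (18 * Cf * Di^144 * P2) + 0 * (- 64 * fps_X * Cf^134 * Di^144 * P4 * P2 - 17152 * fps_X^2 * Cf^132 * Di^144 * P4^3 * P2 - 2264064 * fps_X^3 * Cf^130 * Di^144 * P4^5 * P2 - 1765969920 * fps_X^4 * Cf^128 * Di^144 * P4^7 * P2)"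
    by (simp only: cert d134 d136 R3z)
  also have "\<dots> = (18 * Cf^137 * Di^144 * P2 - 32 * fps_X * Cf^135 * Di^144 * P4^2 * P2 + 64 * fps_X^2 * Cf^133 * Di^144 * P4^4 * P2) + 128 * ((38 * fps_X * Cf^135 * Di^144 * P4^2 * P2 + 4991 * fps_X^2 * Cf^133 * Di^144 * P4^4 * P2 + 4041708 * fps_X^3 * Cf^131 * Di^144 * P4^6 * P2 - 13796640 * fps_X^4 * Cf^129 * Di^144 * P4^8 * P2) + h134 * (- 64 * fps_X * Di^144 * P4 * P2^3) + h136 * (18 * Cf * Di^144 * P2))" by algebra
  finally show ?thesis unfolding raw EO2_def by (rule cg_of_eq)
qed

definition T2 :: "int fps" where "T2 = (- 32 * phiA * Cf^279 * Di^288 * P4 * P1)"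

lemma T2_eq: "cg (od EO2) T2"
proof -
  have dec: "EO2 = sub2 (18 * phiA^137 * P1 * Bi^144 + 64 * fps_X * phiA^133 * P2^4 * P1 * Bi^144) + fps_X * sub2 (- 32 * phiA^135 * P2^2 * P1 * Bi^144) + phiA * sub2 0 + fps_X * phiA * sub2 0"
    unfolding EO2_def by (simp only: sub2_add sub2_diff sub2_uminus sub2_mult sub2_power sub2_numeral sub2_X sub2_0 sub2_1 sub2_A sub2_Bi sub2_P2 sub2_P1) algebra
  have raw: "od EO2 = (- 32 * phiA^135 * P2^2 * P1 * Bi^144) + (2 * P4) * 0 + Cf * 0"
    by (subst dec, simp only: od_four ev_A od_A)
  have cert: "(- 32 * phiA^135 * P2^2 * P1 * Bi^144) + (2 * P4) * 0 + Cf * 0 = (- 32 * phiA * Cf^279 * Di^288 * P4 * P1) + 128 * (- 139 * fps_X * phiA * Cf^277 * Di^288 * P4^3 * P1 - 38364 * fps_X^2 * phiA * Cf^275 * Di^288 * P4^5 * P1 - 63070416 * fps_X^3 * phiA * Cf^273 * Di^288 * P4^7 * P1) + (phiA^279 - phiA * (Cf^278 + 556 * fps_X * Cf^276 * P4^2 + 153456 * fps_X^2 * Cf^274 * P4^4 + 252281664 * fps_X^3 * Cf^272 * P4^6)) * (- 32 * Di^288 * P2^2 * P1) + (P2^2 - Cf * P4) * (- 32 * phiA * Cf^278 * Di^288 * P1 - 17792 * fps_X * phiA * Cf^276 * Di^288 * P4^2 * P1 - 4910592 * fps_X^2 * phiA * Cf^274 * Di^288 * P4^4 * P1 - 8073013248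 * fps_X^3 * phiA * Cf^272 * Di^288 * P4^6 * P1)"
    unfolding Bi_A by algebra
  obtain h279 where h279: "phiA^279 = phiA * (Cf^278 + 556 * fps_X * Cf^276 * P4^2 + 153456 * fps_X^2 * Cf^274 * P4^4 + 252281664 * fps_X^3 * Cf^272 * P4^6) + 128 * h279" using inst_279 by blast
  have d279: "phiA^279 - phiA * (Cf^278 + 556 * fps_X * Cf^276 * P4^2 + 153456 * fps_X^2 * Cf^274 * P4^4 + 252281664 * fps_X^3 * Cf^272 * P4^6) = 128 * h279" using h279 by simp
  have R3z: "P2^2 - Cf * P4 = 0" using R3 by simp
  have "(- 32 * phiA^135 * P2^2 * P1 * Bi^144) + (2 * P4) * 0 + Cf * 0 = (- 32 * phiA * Cf^279 * Di^288 * P4 * P1) + 128 * (- 139 * fps_X * phiA * Cf^277 * Di^288 * P4^3 * P1 - 38364 * fps_X^2 * phiA * Cf^275 * Di^288 * P4^5 * P1 - 63070416 * fps_X^3 * phiA * Cf^273 * Di^288 * P4^7 * P1) + (128 * h279) * (- 32 * Di^288 * P2^2 * P1) + 0 * (- 32 * phiA * Cf^278 * Di^288 * P1 - 17792 * fps_X * phiA * Cf^276 * Di^288 * P4^2 * P1 - 4910592 * fps_X^2 * phiA * Cf^274 * Di^288 * P4^4 * P1 - 8073013248 * fps_X^3 * phiA * Cf^272 * Di^288 * P4^6 * P1)"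
    by (simp only: cert d279 R3z)
  also have "\<dots> = (- 32 * phiA * Cf^279 * Di^288 * P4 * P1) + 128 * ((- 139 * fps_X * phiA * Cf^277 * Di^288 * P4^3 * P1 - 38364 * fps_X^2 * phiA * Cf^275 * Di^288 * P4^5 * P1 - 63070416 * fps_X^3 * phiA * Cf^273 * Di^288 * P4^7 * P1) + h279 * (- 32 * Di^288 * P2^2 * P1))" by algebra
  finally show ?thesis unfolding raw T2_def by (rule cg_of_eq)
qed

definition H3 :: "int fps" where "H3 = (phiA * Cf^65 * Di^72 + 48 * fps_X * phiA * Cf^63 * Di^72 * P4^2)"

lemma H3_eq: "cg (ev H2) H3"
proof -
  have dec: "H2 = sub2 0 + fps_X * sub2 0 + phiA * sub2 (phiA^29 * Bi^36 + 16 * fps_X * phiA^25 * P2^4 * Bi^36) + fps_X * phiA * sub2 (16 * phiA^27 * P2^2 * Bi^36)"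
    unfolding H2_def by (simp only: sub2_add sub2_diff sub2_uminus sub2_mult sub2_power sub2_numeral sub2_X sub2_0 sub2_1 sub2_A sub2_Bi sub2_P2 sub2_P1) algebra
  have raw: "ev H2 = 0 + Cf * (phiA^29 * Bi^36 + 16 * fps_X * phiA^25 * P2^4 * Bi^36) + fps_X * (2 * P4) * (16 * phiA^27 * P2^2 * Bi^36)"
    by (subst dec, simp only: ev_four ev_A od_A)
  have cert: "0 + Cf * (phiA^29 * Bi^36 + 16 * fps_X * phiA^25 * P2^4 * Bi^36) + fps_X * (2 * P4) * (16 * phiA^27 * P2^2 * Bi^36) = (phiA * Cf^65 * Di^72 + 48 * fps_X * phiA * Cf^63 * Di^72 * P4^2) + 128 * (fps_X * phiA * Cf^63 * Di^72 * P4^2 + 108 * fps_X^2 * phiA * Cf^61 * Di^72 * P4^4 + 25050 * fps_X^3 * phiA * Cf^59 * Di^72 * P4^6 + 939600 * fps_X^4 * phiA * Cf^57 * Di^72 * P4^8) + (phiA^61 - phiA * (Cf^60 + 120 * fps_X * Cf^58 * P4^2 + 6960 * fps_X^2 * Cf^56 * P4^4 + 2338560 * fps_X^3 * Cf^54 * P4^6)) * (16 * fps_X * Cf * Di^72 * P2^4) + (phiA^63 - phiA * (Cf^62 + 124 * fps_X * Cf^60 * P4^2 + 7440 * fps_X^2 * Cf^58 * P4^4 + 2589120 * fps_X^3 * Cf^56 * P4^6)) * (32 * fps_X * Di^72 * P4 * P2^2) + (phiA^65 - phiA * (Cf^64 + 128 * fps_X * Cf^62 * P4^2 + 7936 * fps_X^2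 * Cf^60 * P4^4 + 2856960 * fps_X^3 * Cf^58 * P4^6)) * (Cf * Di^72) + (P2^2 - Cf * P4) * (16 * fps_X * phiA * Cf^61 * Di^72 * P2^2 + 48 * fps_X * phiA * Cf^62 * Di^72 * P4 + 1920 * fps_X^2 * phiA * Cf^59 * Di^72 * P4^2 * P2^2 + 5888 * fps_X^2 * phiA * Cf^60 * Di^72 * P4^3 + 111360 * fps_X^3 * phiA * Cf^57 * Di^72 * P4^4 * P2^2 + 349440 * fps_X^3 * phiA * Cf^58 * Di^72 * P4^5 + 37416960 * fps_X^4 * phiA * Cf^55 * Di^72 * P4^6 * P2^2 + 120268800 * fps_X^4 * phiA * Cf^56 * Di^72 * P4^7)"
    unfolding Bi_A by algebra
  obtain h61 where h61: "phiA^61 = phiA * (Cf^60 + 120 * fps_X * Cf^58 * P4^2 + 6960 * fps_X^2 * Cf^56 * P4^4 + 2338560 * fps_X^3 * Cf^54 * P4^6) + 128 * h61" using inst_61 by blast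
  have d61: "phiA^61 - phiA * (Cf^60 + 120 * fps_X * Cf^58 * P4^2 + 6960 * fps_X^2 * Cf^56 * P4^4 + 2338560 * fps_X^3 * Cf^54 * P4^6) = 128 * h61" using h61 by simp
  obtain h63 where h63: "phiA^63 = phiA * (Cf^62 + 124 * fps_X * Cf^60 * P4^2 + 7440 * fps_X^2 * Cf^58 * P4^4 + 2589120 * fps_X^3 * Cf^56 * P4^6) + 128 * h63" using inst_63 by blast
  have d63: "phiA^63 - phiA * (Cf^62 + 124 * fps_X * Cf^60 * P4^2 + 7440 * fps_X^2 * Cf^58 * P4^4 + 2589120 * fps_X^3 * Cf^56 * P4^6) = 128 * h63" using h63 by simp
  obtain h65 where h65: "phiA^65 = phiA * (Cf^64 + 128 * fps_X * Cf^62 * P4^2 + 7936 * fps_X^2 * Cf^60 * P4^4 + 2856960 * fps_X^3 * Cf^58 * P4^6) + 128 * h65" using inst_65 by blast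
  have d65: "phiA^65 - phiA * (Cf^64 + 128 * fps_X * Cf^62 * P4^2 + 7936 * fps_X^2 * Cf^60 * P4^4 + 2856960 * fps_X^3 * Cf^58 * P4^6) = 128 * h65" using h65 by simp
  have R3z: "P2^2 - Cf * P4 = 0" using R3 by simp
  have "0 + Cf * (phiA^29 * Bi^36 + 16 * fps_X * phiA^25 * P2^4 * Bi^36) + fps_X * (2 * P4) * (16 * phiA^27 * P2^2 * Bi^36) = (phiA * Cf^65 * Di^72 + 48 * fps_X * phiA * Cf^63 * Di^72 * P4^2) + 128 * (fps_X * phiA * Cf^63 * Di^72 * P4^2 + 108 * fps_X^2 * phiA * Cf^61 * Di^72 * P4^4 + 25050 * fps_X^3 * phiA * Cf^59 * Di^72 * P4^6 + 939600 * fps_X^4 * phiA * Cf^57 * Di^72 * P4^8) + (128 * h61) * (16 * fps_X * Cf * Di^72 * P2^4) + (128 * h63) * (32 * fps_X * Di^72 * P4 * P2^2) + (128 * h65) * (Cf * Di^72) + 0 * (16 * fps_X * phiA * Cf^61 * Di^72 * P2^2 + 48 * fps_X * phiA * Cf^62 * Di^72 * P4 + 1920 * fps_X^2 * phiA * Cf^59 * Di^72 * P4^2 * P2^2 + 5888 * fps_X^2 * phiA * Cf^60 * Di^72 * P4^3 + 111360 * fps_X^3 * phiA * Cf^57 * Di^72 * P4^4 * P2^2 + 349440 * fps_X^3 * phiA * Cf^58 * Di^72 * P4^5 + 37416960 * fps_X^4 * phiA * Cf^55 * Di^72 * P4^6 * P2^2 + 120268800 * fps_X^4 * phiA * Cf^56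 * Di^72 * P4^7)"
    by (simp only: cert d61 d63 d65 R3z)
  also have "\<dots> = (phiA * Cf^65 * Di^72 + 48 * fps_X * phiA * Cf^63 * Di^72 * P4^2) + 128 * ((fps_X * phiA * Cf^63 * Di^72 * P4^2 + 108 * fps_X^2 * phiA * Cf^61 * Di^72 * P4^4 + 25050 * fps_X^3 * phiA * Cf^59 * Di^72 * P4^6 + 939600 * fps_X^4 * phiA * Cf^57 * Di^72 * P4^8) + h61 * (16 * fps_X * Cf * Di^72 * P2^4) + h63 * (32 * fps_X * Di^72 * P4 * P2^2) + h65 * (Cf * Di^72))" by algebra
  finally show ?thesis unfolding raw H3_def by (rule cg_of_eq)
qed

definition O3 :: "int fps" where "O3 = (50 * phiA * Cf^136 * Di^144 * P4 - 32 * fps_X * phiA * Cf^134 * Di^144 * P4^3 + 64 * fps_X^2 * phiA * Cf^132 * Di^144 * P4^5)"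

lemma O3_eq: "cg (od H3) O3"
proof -
  have dec: "H3 = sub2 0 + fps_X * sub2 0 + phiA * sub2 (phiA^65 * Bi^72) + fps_X * phiA * sub2 (48 * phiA^63 * P2^2 * Bi^72)"
    unfolding H3_def by (simp only: sub2_add sub2_diff sub2_uminus sub2_mult sub2_power sub2_numeral sub2_X sub2_0 sub2_1 sub2_A sub2_Bi sub2_P2 sub2_P1) algebra
  have raw: "od H3 = 0 + (2 * P4) * (phiA^65 * Bi^72) + Cf * (48 * phiA^63 * P2^2 * Bi^72)"
    by (subst dec, simp only: od_four ev_A od_A)
  have cert: "0 + (2 * P4) * (phiA^65 * Bi^72) + Cf * (48 * phiA^63 * P2^2 * Bi^72) = (50 * phiA * Cf^136 * Di^144 * P4 - 32 * fps_X * phiA * Cf^134 * Di^144 * P4^3 + 64 * fps_X^2 * phiA * Cf^132 * Di^144 * P4^5) + 128 * (105 * fps_X * phiA * Cf^134 * Di^144 * P4^3 + 13835 * fps_X^2 * phiA * Cf^132 * Di^144 * P4^5 + 10798524 * fps_X^3 * phiA * Cf^130 * Di^144 * P4^7) + (phiA^135 - phiA * (Cf^134 + 268 * fps_X * Cf^132 * P4^2 + 35376 * fps_X^2 * Cf^130 * P4^4 + 27593280 * fps_X^3 * Cf^128 * P4^6)) * (48 * Cf * Di^144 * P2^2) + (phiA^137 - phiA * (Cf^136 + 272 * fps_X * Cf^134 * P4^2 + 36448 * fps_X^2 * Cf^132 * P4^4 + 28866816 * fps_X^3 * Cf^130 * P4^6)) * (2 * Di^144 * P4) + (P2^2 - Cf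 * P4) * (48 * phiA * Cf^135 * Di^144 + 12864 * fps_X * phiA * Cf^133 * Di^144 * P4^2 + 1698048 * fps_X^2 * phiA * Cf^131 * Di^144 * P4^4 + 1324477440 * fps_X^3 * phiA * Cf^129 * Di^144 * P4^6)"
    unfolding Bi_A by algebra
  obtain h135 where h135: "phiA^135 = phiA * (Cf^134 + 268 * fps_X * Cf^132 * P4^2 + 35376 * fps_X^2 * Cf^130 * P4^4 + 27593280 * fps_X^3 * Cf^128 * P4^6) + 128 * h135" using inst_135 by blast
  have d135: "phiA^135 - phiA * (Cf^134 + 268 * fps_X * Cf^132 * P4^2 + 35376 * fps_X^2 * Cf^130 * P4^4 + 27593280 * fps_X^3 * Cf^128 * P4^6) = 128 * h135" using h135 by simp
  obtain h137 where h137: "phiA^137 = phiA * (Cf^136 + 272 * fps_X * Cf^134 * P4^2 + 36448 * fps_X^2 * Cf^132 * P4^4 + 28866816 * fps_X^3 * Cf^130 * P4^6) + 128 * h137" using inst_137 by blast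
  have d137: "phiA^137 - phiA * (Cf^136 + 272 * fps_X * Cf^134 * P4^2 + 36448 * fps_X^2 * Cf^132 * P4^4 + 28866816 * fps_X^3 * Cf^130 * P4^6) = 128 * h137" using h137 by simp
  have R3z: "P2^2 - Cf * P4 = 0" using R3 by simp
  have "0 + (2 * P4) * (phiA^65 * Bi^72) + Cf * (48 * phiA^63 * P2^2 * Bi^72) = (50 * phiA * Cf^136 * Di^144 * P4 - 32 * fps_X * phiA * Cf^134 * Di^144 * P4^3 + 64 * fps_X^2 * phiA * Cf^132 * Di^144 * P4^5) + 128 * (105 * fps_X * phiA * Cf^134 * Di^144 * P4^3 + 13835 * fps_X^2 * phiA * Cf^132 * Di^144 * P4^5 + 10798524 * fps_X^3 * phiA * Cf^130 * Di^144 * P4^7) + (128 * h135) * (48 * Cf * Di^144 * P2^2) + (128 * h137) * (2 * Di^144 * P4) + 0 * (48 * phiA * Cf^135 * Di^144 + 12864 * fps_X * phiA * Cf^133 * Di^144 * P4^2 + 1698048 * fps_X^2 * phiA * Cf^131 * Di^144 * P4^4 + 1324477440 * fps_X^3 * phiA * Cf^129 * Di^144 * P4^6)"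
    by (simp only: cert d135 d137 R3z)
  also have "\<dots> = (50 * phiA * Cf^136 * Di^144 * P4 - 32 * fps_X * phiA * Cf^134 * Di^144 * P4^3 + 64 * fps_X^2 * phiA * Cf^132 * Di^144 * P4^5) + 128 * ((105 * fps_X * phiA * Cf^134 * Di^144 * P4^3 + 13835 * fps_X^2 * phiA * Cf^132 * Di^144 * P4^5 + 10798524 * fps_X^3 * phiA * Cf^130 * Di^144 * P4^7) + h135 * (48 * Cf * Di^144 * P2^2) + h137 * (2 * Di^144 * P4))" by algebra
  finally show ?thesis unfolding raw O3_def by (rule cg_of_eq)
qed

definition EO3 :: "int fps" where "EO3 = (50 * Cf^281 * Di^288 * P2 - 32 * fps_X * Cf^279 * Di^288 * P4^2 * P2 + 64 * fps_X^2 * Cf^277 * Di^288 * P4^4 * P2)"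

lemma EO3_eq: "cg (ev O3) EO3"
proof -
  have dec: "O3 = sub2 0 + fps_X * sub2 0 + phiA * sub2 (50 * phiA^136 * P2 * Bi^144 + 64 * fps_X * phiA^132 * P2^5 * Bi^144) + fps_X * phiA * sub2 (- 32 * phiA^134 * P2^3 * Bi^144)"
    unfolding O3_def by (simp only: sub2_add sub2_diff sub2_uminus sub2_mult sub2_power sub2_numeral sub2_X sub2_0 sub2_1 sub2_A sub2_Bi sub2_P2 sub2_P1) algebra
  have raw: "ev O3 = 0 + Cf * (50 * phiA^136 * P2 * Bi^144 + 64 * fps_X * phiA^132 * P2^5 * Bi^144) + fps_X * (2 * P4) * (- 32 * phiA^134 * P2^3 * Bi^144)"
    by (subst dec, simp only: ev_four ev_A od_A)
  have cert: "0 + Cf * (50 * phiA^136 * P2 * Bi^144 + 64 * fps_X * phiA^132 * P2^5 * Bi^144) + fps_X * (2 * P4) * (- 32 * phiA^134 * P2^3 * Bi^144) = (50 * Cf^281 * Di^288 * P2 - 32 * fps_X * Cf^279 * Di^288 * P4^2 * P2 + 64 * fps_X^2 * Cf^277 * Di^288 * P4^4 * P2) + 128 * (219 * fps_X * Cf^279 * Di^288 * P4^2 * P2 + 60810 * fps_X^2 * Cf^277 * Di^288 * P4^4 * P2 + 100704396 * fps_X^3 * Cf^275 * Di^288 * P4^6 * P2 - 2722464 * fps_X^4 * Cf^273 * Di^288 * P4^8 * P2) + (phiA^276 - (Cf^276 + 552 * fps_X * Cf^274 * P4^2 + 151248 * fps_X^2 * Cf^272 * P4^4 + 246836736 * fps_X^3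 * Cf^270 * P4^6)) * (64 * fps_X * Cf * Di^288 * P2^5) + (phiA^278 - (Cf^278 + 556 * fps_X * Cf^276 * P4^2 + 153456 * fps_X^2 * Cf^274 * P4^4 + 252281664 * fps_X^3 * Cf^272 * P4^6)) * (- 64 * fps_X * Di^288 * P4 * P2^3) + (phiA^280 - (Cf^280 + 560 * fps_X * Cf^278 * P4^2 + 155680 * fps_X^2 * Cf^276 * P4^4 + 257806080 * fps_X^3 * Cf^274 * P4^6)) * (50 * Cf * Di^288 * P2) + (P2^2 - Cf * P4) * (64 * fps_X * Cf^277 * Di^288 * P2^3 + 35328 * fps_X^2 * Cf^275 * Di^288 * P4^2 * P2^3 - 256 * fps_X^2 * Cf^276 * Di^288 * P4^3 * P2 + 9679872 * fps_X^3 * Cf^273 * Di^288 * P4^4 * P2^3 - 141312 * fps_X^3 * Cf^274 * Di^288 * P4^5 * P2 + 15797551104 * fps_X^4 * Cf^271 * Di^288 * P4^6 * P2^3 - 348475392 * fps_X^4 * Cf^272 * Di^288 * P4^7 * P2)"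
    unfolding Bi_A by algebra
  obtain h276 where h276: "phiA^276 = (Cf^276 + 552 * fps_X * Cf^274 * P4^2 + 151248 * fps_X^2 * Cf^272 * P4^4 + 246836736 * fps_X^3 * Cf^270 * P4^6) + 128 * h276" using inst_276 by blast
  have d276: "phiA^276 - (Cf^276 + 552 * fps_X * Cf^274 * P4^2 + 151248 * fps_X^2 * Cf^272 * P4^4 + 246836736 * fps_X^3 * Cf^270 * P4^6) = 128 * h276" using h276 by simp
  obtain h278 where h278: "phiA^278 = (Cf^278 + 556 * fps_X * Cf^276 * P4^2 + 153456 * fps_X^2 * Cf^274 * P4^4 + 252281664 * fps_X^3 * Cf^272 * P4^6) + 128 * h278" using inst_278 by blast
  have d278: "phiA^278 - (Cf^278 + 556 * fps_X * Cf^276 * P4^2 + 153456 * fps_X^2 * Cf^274 * P4^4 + 252281664 * fps_X^3 * Cf^272 * P4^6) = 128 * h278" using h278 by simp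
  obtain h280 where h280: "phiA^280 = (Cf^280 + 560 * fps_X * Cf^278 * P4^2 + 155680 * fps_X^2 * Cf^276 * P4^4 + 257806080 * fps_X^3 * Cf^274 * P4^6) + 128 * h280" using inst_280 by blast
  have d280: "phiA^280 - (Cf^280 + 560 * fps_X * Cf^278 * P4^2 + 155680 * fps_X^2 * Cf^276 * P4^4 + 257806080 * fps_X^3 * Cf^274 * P4^6) = 128 * h280" using h280 by simp
  have R3z: "P2^2 - Cf * P4 = 0" using R3 by simp
  have "0 + Cf * (50 * phiA^136 * P2 * Bi^144 + 64 * fps_X * phiA^132 * P2^5 * Bi^144) + fps_X * (2 * P4) * (- 32 * phiA^134 * P2^3 * Bi^144) = (50 * Cf^281 * Di^288 * P2 - 32 * fps_X * Cf^279 * Di^288 * P4^2 * P2 + 64 * fps_X^2 * Cf^277 * Di^288 * P4^4 * P2) + 128 * (219 * fps_X * Cf^279 * Di^288 * P4^2 * P2 + 60810 * fps_X^2 * Cf^277 * Di^288 * P4^4 * P2 + 100704396 * fps_X^3 * Cf^275 * Di^288 * P4^6 * P2 - 2722464 * fps_X^4 * Cf^273 * Di^288 * P4^8 * P2) + (128 * h276) * (64 * fps_X * Cf * Di^288 * P2^5) + (128 * h278) * (- 64 * fps_X * Di^288 * P4 * P2^3) + (128 * h280) * (50 * Cf * Di^288 * P2) + 0 * (64 * fps_X * Cf^277 * Di^288 * P2^3 + 35328 * fps_X^2 * Cf^275 * Di^288 * P4^2 * P2^3 - 256 * fps_X^2 * Cf^276 * Di^288 * P4^3 * P2 + 9679872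 * fps_X^3 * Cf^273 * Di^288 * P4^4 * P2^3 - 141312 * fps_X^3 * Cf^274 * Di^288 * P4^5 * P2 + 15797551104 * fps_X^4 * Cf^271 * Di^288 * P4^6 * P2^3 - 348475392 * fps_X^4 * Cf^272 * Di^288 * P4^7 * P2)"
    by (simp only: cert d276 d278 d280 R3z)
  also have "\<dots> = (50 * Cf^281 * Di^288 * P2 - 32 * fps_X * Cf^279 * Di^288 * P4^2 * P2 + 64 * fps_X^2 * Cf^277 * Di^288 * P4^4 * P2) + 128 * ((219 * fps_X * Cf^279 * Di^288 * P4^2 * P2 + 60810 * fps_X^2 * Cf^277 * Di^288 * P4^4 * P2 + 100704396 * fps_X^3 * Cf^275 * Di^288 * P4^6 * P2 - 2722464 * fps_X^4 * Cf^273 * Di^288 * P4^8 * P2) + h276 * (64 * fps_X * Cf * Di^288 * P2^5) + h278 * (- 64 * fps_X * Di^288 * P4 * P2^3) + h280 * (50 * Cf * Di^288 * P2))" by algebra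
  finally show ?thesis unfolding raw EO3_def by (rule cg_of_eq)
qed

definition T3 :: "int fps" where "T3 = (- 32 * phiA * Cf^567 * Di^576 * P4 * P1)"

lemma T3_eq: "cg (od EO3) T3"
proof -
  have dec: "EO3 = sub2 (50 * phiA^281 * P1 * Bi^288 + 64 * fps_X * phiA^277 * P2^4 * P1 * Bi^288) + fps_X * sub2 (- 32 * phiA^279 * P2^2 * P1 * Bi^288) + phiA * sub2 0 + fps_X * phiA * sub2 0"
    unfolding EO3_def by (simp only: sub2_add sub2_diff sub2_uminus sub2_mult sub2_power sub2_numeral sub2_X sub2_0 sub2_1 sub2_A sub2_Bi sub2_P2 sub2_P1) algebra
  have raw: "od EO3 = (- 32 * phiA^279 * P2^2 * P1 * Bi^288) + (2 * P4) * 0 + Cf * 0"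
    by (subst dec, simp only: od_four ev_A od_A)
  have cert: "(- 32 * phiA^279 * P2^2 * P1 * Bi^288) + (2 * P4) * 0 + Cf * 0 = (- 32 * phiA * Cf^567 * Di^576 * P4 * P1) + 128 * (- 283 * fps_X * phiA * Cf^565 * Di^576 * P4^3 * P1 - 159612 * fps_X^2 * phiA * Cf^563 * Di^576 * P4^5 * P1 - 538211664 * fps_X^3 * phiA * Cf^561 * Di^576 * P4^7 * P1) + (phiA^567 - phiA * (Cf^566 + 1132 * fps_X * Cf^564 * P4^2 + 638448 * fps_X^2 * Cf^562 * P4^4 + 2152846656 * fps_X^3 * Cf^560 * P4^6)) * (- 32 * Di^576 * P2^2 * P1) + (P2^2 - Cf * P4) * (- 32 * phiA * Cf^566 * Di^576 * P1 - 36224 * fps_X * phiA * Cf^564 * Di^576 * P4^2 * P1 - 20430336 * fps_X^2 * phiA * Cf^562 * Di^576 * P4^4 * P1 - 68891092992 * fps_X^3 * phiA * Cf^560 * Di^576 * P4^6 * P1)"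
    unfolding Bi_A by algebra
  obtain h567 where h567: "phiA^567 = phiA * (Cf^566 + 1132 * fps_X * Cf^564 * P4^2 + 638448 * fps_X^2 * Cf^562 * P4^4 + 2152846656 * fps_X^3 * Cf^560 * P4^6) + 128 * h567" using inst_567 by blast
  have d567: "phiA^567 - phiA * (Cf^566 + 1132 * fps_X * Cf^564 * P4^2 + 638448 * fps_X^2 * Cf^562 * P4^4 + 2152846656 * fps_X^3 * Cf^560 * P4^6) = 128 * h567" using h567 by simp
  have R3z: "P2^2 - Cf * P4 = 0" using R3 by simp
  have "(- 32 * phiA^279 * P2^2 * P1 * Bi^288) + (2 * P4) * 0 + Cf * 0 = (- 32 * phiA * Cf^567 * Di^576 * P4 * P1) + 128 * (- 283 * fps_X * phiA * Cf^565 * Di^576 * P4^3 * P1 - 159612 * fps_X^2 * phiA * Cf^563 * Di^576 * P4^5 * P1 - 538211664 * fps_X^3 * phiA * Cf^561 * Di^576 * P4^7 * P1) + (128 * h567) * (- 32 * Di^576 * P2^2 * P1) + 0 * (- 32 * phiA * Cf^566 * Di^576 * P1 - 36224 * fps_X * phiA * Cf^564 * Di^576 * P4^2 * P1 - 20430336 * fps_X^2 * phiA * Cf^562 * Di^576 * P4^4 * P1 - 68891092992 * fps_X^3 * phiA * Cf^560 * Di^576 * P4^6 * P1)"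
    by (simp only: cert d567 R3z)
  also have "\<dots> = (- 32 * phiA * Cf^567 * Di^576 * P4 * P1) + 128 * ((- 283 * fps_X * phiA * Cf^565 * Di^576 * P4^3 * P1 - 159612 * fps_X^2 * phiA * Cf^563 * Di^576 * P4^5 * P1 - 538211664 * fps_X^3 * phiA * Cf^561 * Di^576 * P4^7 * P1) + h567 * (- 32 * Di^576 * P2^2 * P1))" by algebra
  finally show ?thesis unfolding raw T3_def by (rule cg_of_eq)
qed

definition H4 :: "int fps" where "H4 = (phiA * Cf^137 * Di^144 - 16 * fps_X * phiA * Cf^135 * Di^144 * P4^2 - 32 * fps_X^2 * phiA * Cf^133 * Di^144 * P4^4)"

lemma H4_eq: "cg (ev H3) H4"
proof -
  have dec: "H3 = sub2 0 + fps_X * sub2 0 + phiA * sub2 (phiA^65 * Bi^72) + fps_X * phiA * sub2 (48 * phiA^63 * P2^2 * Bi^72)"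
    unfolding H3_def by (simp only: sub2_add sub2_diff sub2_uminus sub2_mult sub2_power sub2_numeral sub2_X sub2_0 sub2_1 sub2_A sub2_Bi sub2_P2 sub2_P1) algebra
  have raw: "ev H3 = 0 + Cf * (phiA^65 * Bi^72) + fps_X * (2 * P4) * (48 * phiA^63 * P2^2 * Bi^72)"
    by (subst dec, simp only: ev_four ev_A od_A)
  have cert: "0 + Cf * (phiA^65 * Bi^72) + fps_X * (2 * P4) * (48 * phiA^63 * P2^2 * Bi^72) = (phiA * Cf^137 * Di^144 - 16 * fps_X * phiA * Cf^135 * Di^144 * P4^2 - 32 * fps_X^2 * phiA * Cf^133 * Di^144 * P4^4) + 128 * (3 * fps_X * phiA * Cf^135 * Di^144 * P4^2 + 486 * fps_X^2 * phiA * Cf^133 * Di^144 * P4^4 + 252054 * fps_X^3 * phiA * Cf^131 * Di^144 * P4^6 + 20694960 * fps_X^4 * phiA * Cf^129 * Di^144 * P4^8) + (phiA^135 - phiA * (Cf^134 + 268 * fps_X * Cf^132 * P4^2 + 35376 * fps_X^2 * Cf^130 * P4^4 + 27593280 * fps_X^3 * Cf^128 * P4^6)) * (96 * fps_X * Di^144 * P4 * P2^2) + (phiA^137 - phiA * (Cf^136 + 272 * fps_X * Cf^134 * P4^2 + 36448 * fps_X^2 * Cf^132 * P4^4 + 28866816 * fps_X^3 * Cf^130 * P4^6)) * (Cf * Di^144) + (P2^2 - Cf * P4) * (96 * fps_X * phiA * Cf^134 * Di^144 * P4 + 25728 * fps_X^2 * phiA * Cf^132 * Di^144 * P4^3 +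 3396096 * fps_X^3 * phiA * Cf^130 * Di^144 * P4^5 + 2648954880 * fps_X^4 * phiA * Cf^128 * Di^144 * P4^7)"
    unfolding Bi_A by algebra
  obtain h135 where h135: "phiA^135 = phiA * (Cf^134 + 268 * fps_X * Cf^132 * P4^2 + 35376 * fps_X^2 * Cf^130 * P4^4 + 27593280 * fps_X^3 * Cf^128 * P4^6) + 128 * h135" using inst_135 by blast
  have d135: "phiA^135 - phiA * (Cf^134 + 268 * fps_X * Cf^132 * P4^2 + 35376 * fps_X^2 * Cf^130 * P4^4 + 27593280 * fps_X^3 * Cf^128 * P4^6) = 128 * h135" using h135 by simp
  obtain h137 where h137: "phiA^137 = phiA * (Cf^136 + 272 * fps_X * Cf^134 * P4^2 + 36448 * fps_X^2 * Cf^132 * P4^4 + 28866816 * fps_X^3 * Cf^130 * P4^6) + 128 * h137" using inst_137 by blast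
  have d137: "phiA^137 - phiA * (Cf^136 + 272 * fps_X * Cf^134 * P4^2 + 36448 * fps_X^2 * Cf^132 * P4^4 + 28866816 * fps_X^3 * Cf^130 * P4^6) = 128 * h137" using h137 by simp
  have R3z: "P2^2 - Cf * P4 = 0" using R3 by simp
  have "0 + Cf * (phiA^65 * Bi^72) + fps_X * (2 * P4) * (48 * phiA^63 * P2^2 * Bi^72) = (phiA * Cf^137 * Di^144 - 16 * fps_X * phiA * Cf^135 * Di^144 * P4^2 - 32 * fps_X^2 * phiA * Cf^133 * Di^144 * P4^4) + 128 * (3 * fps_X * phiA * Cf^135 * Di^144 * P4^2 + 486 * fps_X^2 * phiA * Cf^133 * Di^144 * P4^4 + 252054 * fps_X^3 * phiA * Cf^131 * Di^144 * P4^6 + 20694960 * fps_X^4 * phiA * Cf^129 * Di^144 * P4^8) + (128 * h135) * (96 * fps_X * Di^144 * P4 * P2^2) + (128 * h137) * (Cf * Di^144) + 0 * (96 * fps_X * phiA * Cf^134 * Di^144 * P4 + 25728 * fps_X^2 * phiA * Cf^132 * Di^144 * P4^3 + 3396096 * fps_X^3 * phiA * Cf^130 * Di^144 * P4^5 + 2648954880 * fps_X^4 * phiA * Cf^128 * Di^144 * P4^7)"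
    by (simp only: cert d135 d137 R3z)
  also have "\<dots> = (phiA * Cf^137 * Di^144 - 16 * fps_X * phiA * Cf^135 * Di^144 * P4^2 - 32 * fps_X^2 * phiA * Cf^133 * Di^144 * P4^4) + 128 * ((3 * fps_X * phiA * Cf^135 * Di^144 * P4^2 + 486 * fps_X^2 * phiA * Cf^133 * Di^144 * P4^4 + 252054 * fps_X^3 * phiA * Cf^131 * Di^144 * P4^6 + 20694960 * fps_X^4 * phiA * Cf^129 * Di^144 * P4^8) + h135 * (96 * fps_X * Di^144 * P4 * P2^2) + h137 * (Cf * Di^144))" by algebra
  finally show ?thesis unfolding raw H4_def by (rule cg_of_eq)
qed

definition O4 :: "int fps" where "O4 = (- 14 * phiA * Cf^280 * Di^288 * P4 - 32 * fps_X * phiA * Cf^278 * Di^288 * P4^3 + 64 * fps_X^2 * phiA * Cf^276 * Di^288 * P4^5)"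

lemma O4_eq: "cg (od H4) O4"
proof -
  have dec: "H4 = sub2 0 + fps_X * sub2 0 + phiA * sub2 (phiA^137 * Bi^144 - 32 * fps_X * phiA^133 * P2^4 * Bi^144) + fps_X * phiA * sub2 (- 16 * phiA^135 * P2^2 * Bi^144)"
    unfolding H4_def by (simp only: sub2_add sub2_diff sub2_uminus sub2_mult sub2_power sub2_numeral sub2_X sub2_0 sub2_1 sub2_A sub2_Bi sub2_P2 sub2_P1) algebra
  have raw: "od H4 = 0 + (2 * P4) * (phiA^137 * Bi^144 - 32 * fps_X * phiA^133 * P2^4 * Bi^144) + Cf * (- 16 * phiA^135 * P2^2 * Bi^144)"
    by (subst dec, simp only: od_four ev_A od_A)
  have cert: "0 + (2 * P4) * (phiA^137 * Bi^144 - 32 * fps_X * phiA^133 * P2^4 * Bi^144) + Cf * (- 16 * phiA^135 * P2^2 * Bi^144) = (- 14 * phiA * Cf^280 * Di^288 * P4 - 32 * fps_X * phiA * Cf^278 * Di^288 * P4^3 + 64 * fps_X^2 * phiA * Cf^276 * Di^288 * P4^5) + 128 * (- 61 * fps_X * phiA * Cf^278 * Di^288 * P4^3 - 17026 * fps_X^2 * phiA * Cf^276 * Di^288 * P4^5 - 27582612 * fps_X^3 * phiA * Cf^274 * Di^288 * P4^7 - 123418368 * fps_X^4 * phiA * Cf^272 * Di^288 * P4^9) + (phiA^277 - phiA * (Cf^276 + 552 * fps_X * Cf^274 * P4^2 + 151248 * fps_X^2 * Cf^272 * P4^4 + 246836736 * fps_X^3 * Cf^270 * P4^6)) * (- 64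 * fps_X * Di^288 * P4 * P2^4) + (phiA^279 - phiA * (Cf^278 + 556 * fps_X * Cf^276 * P4^2 + 153456 * fps_X^2 * Cf^274 * P4^4 + 252281664 * fps_X^3 * Cf^272 * P4^6)) * (- 16 * Cf * Di^288 * P2^2) + (phiA^281 - phiA * (Cf^280 + 560 * fps_X * Cf^278 * P4^2 + 155680 * fps_X^2 * Cf^276 * P4^4 + 257806080 * fps_X^3 * Cf^274 * P4^6)) * (2 * Di^288 * P4) + (P2^2 - Cf * P4) * (- 16 * phiA * Cf^279 * Di^288 - 64 * fps_X * phiA * Cf^276 * Di^288 * P4 * P2^2 - 8960 * fps_X * phiA * Cf^277 * Di^288 * P4^2 - 35328 * fps_X^2 * phiA * Cf^274 * Di^288 * P4^3 * P2^2 - 2490624 * fps_X^2 * phiA * Cf^275 * Di^288 * P4^4 - 9679872 * fps_X^3 * phiA * Cf^272 * Di^288 * P4^5 * P2^2 - 4046186496 * fps_X^3 * phiA * Cf^273 * Di^288 * P4^6 - 15797551104 * fps_X^4 * phiA * Cf^270 * Di^288 * P4^7 * P2^2 - 15797551104 * fps_X^4 * phiA * Cf^271 * Di^288 * P4^8)"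
    unfolding Bi_A by algebra
  obtain h277 where h277: "phiA^277 = phiA * (Cf^276 + 552 * fps_X * Cf^274 * P4^2 + 151248 * fps_X^2 * Cf^272 * P4^4 + 246836736 * fps_X^3 * Cf^270 * P4^6) + 128 * h277" using inst_277 by blast
  have d277: "phiA^277 - phiA * (Cf^276 + 552 * fps_X * Cf^274 * P4^2 + 151248 * fps_X^2 * Cf^272 * P4^4 + 246836736 * fps_X^3 * Cf^270 * P4^6) = 128 * h277" using h277 by simp
  obtain h279 where h279: "phiA^279 = phiA * (Cf^278 + 556 * fps_X * Cf^276 * P4^2 + 153456 * fps_X^2 * Cf^274 * P4^4 + 252281664 * fps_X^3 * Cf^272 * P4^6) + 128 * h279" using inst_279 by blast
  have d279: "phiA^279 - phiA * (Cf^278 + 556 * fps_X * Cf^276 * P4^2 + 153456 * fps_X^2 * Cf^274 * P4^4 + 252281664 * fps_X^3 * Cf^272 * P4^6) = 128 * h279" using h279 by simp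
  obtain h281 where h281: "phiA^281 = phiA * (Cf^280 + 560 * fps_X * Cf^278 * P4^2 + 155680 * fps_X^2 * Cf^276 * P4^4 + 257806080 * fps_X^3 * Cf^274 * P4^6) + 128 * h281" using inst_281 by blast
  have d281: "phiA^281 - phiA * (Cf^280 + 560 * fps_X * Cf^278 * P4^2 + 155680 * fps_X^2 * Cf^276 * P4^4 + 257806080 * fps_X^3 * Cf^274 * P4^6) = 128 * h281" using h281 by simp
  have R3z: "P2^2 - Cf * P4 = 0" using R3 by simp
  have "0 + (2 * P4) * (phiA^137 * Bi^144 - 32 * fps_X * phiA^133 * P2^4 * Bi^144) + Cf * (- 16 * phiA^135 * P2^2 * Bi^144) = (- 14 * phiA * Cf^280 * Di^288 * P4 - 32 * fps_X * phiA * Cf^278 * Di^288 * P4^3 + 64 * fps_X^2 * phiA * Cf^276 * Di^288 * P4^5) + 128 * (- 61 * fps_X * phiA * Cf^278 * Di^288 * P4^3 - 17026 * fps_X^2 * phiA * Cf^276 * Di^288 * P4^5 - 27582612 * fps_X^3 * phiA * Cf^274 * Di^288 * P4^7 - 123418368 * fps_X^4 * phiA * Cf^272 * Di^288 * P4^9) + (128 * h277) * (- 64 * fps_X * Di^288 * P4 * P2^4) + (128 * h279) * (- 16 * Cf * Di^288 * P2^2) + (128 * h281) * (2 * Di^288 * P4) + 0 * (- 16 * phiA * Cf^279 * Di^288 - 64 * fps_X * phiA * Cf^276 * Di^288 * P4 * P2^2 - 8960 * fps_X * phiA * Cf^277 * Di^288 * P4^2 - 35328 * fps_X^2 * phiA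 * Cf^274 * Di^288 * P4^3 * P2^2 - 2490624 * fps_X^2 * phiA * Cf^275 * Di^288 * P4^4 - 9679872 * fps_X^3 * phiA * Cf^272 * Di^288 * P4^5 * P2^2 - 4046186496 * fps_X^3 * phiA * Cf^273 * Di^288 * P4^6 - 15797551104 * fps_X^4 * phiA * Cf^270 * Di^288 * P4^7 * P2^2 - 15797551104 * fps_X^4 * phiA * Cf^271 * Di^288 * P4^8)"
    by (simp only: cert d277 d279 d281 R3z)
  also have "\<dots> = (- 14 * phiA * Cf^280 * Di^288 * P4 - 32 * fps_X * phiA * Cf^278 * Di^288 * P4^3 + 64 * fps_X^2 * phiA * Cf^276 * Di^288 * P4^5) + 128 * ((- 61 * fps_X * phiA * Cf^278 * Di^288 * P4^3 - 17026 * fps_X^2 * phiA * Cf^276 * Di^288 * P4^5 - 27582612 * fps_X^3 * phiA * Cf^274 * Di^288 * P4^7 - 123418368 * fps_X^4 * phiA * Cf^272 * Di^288 * P4^9) + h277 * (- 64 * fps_X * Di^288 * P4 * P2^4) + h279 * (- 16 * Cf * Di^288 * P2^2) + h281 * (2 * Di^288 * P4))" by algebra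
  finally show ?thesis unfolding raw O4_def by (rule cg_of_eq)
qed

definition EO4 :: "int fps" where "EO4 = (- 14 * Cf^569 * Di^576 * P2 - 32 * fps_X * Cf^567 * Di^576 * P4^2 * P2 + 64 * fps_X^2 * Cf^565 * Di^576 * P4^4 * P2)"

lemma EO4_eq: "cg (ev O4) EO4"
proof -
  have dec: "O4 = sub2 0 + fps_X * sub2 0 + phiA * sub2 (- 14 * phiA^280 * P2 * Bi^288 + 64 * fps_X * phiA^276 * P2^5 * Bi^288) + fps_X * phiA * sub2 (- 32 * phiA^278 * P2^3 * Bi^288)"
    unfolding O4_def by (simp only: sub2_add sub2_diff sub2_uminus sub2_mult sub2_power sub2_numeral sub2_X sub2_0 sub2_1 sub2_A sub2_Bi sub2_P2 sub2_P1) algebra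
  have raw: "ev O4 = 0 + Cf * (- 14 * phiA^280 * P2 * Bi^288 + 64 * fps_X * phiA^276 * P2^5 * Bi^288) + fps_X * (2 * P4) * (- 32 * phiA^278 * P2^3 * Bi^288)"
    by (subst dec, simp only: ev_four ev_A od_A)
  have cert: "0 + Cf * (- 14 * phiA^280 * P2 * Bi^288 + 64 * fps_X * phiA^276 * P2^5 * Bi^288) + fps_X * (2 * P4) * (- 32 * phiA^278 * P2^3 * Bi^288) = (- 14 * Cf^569 * Di^576 * P2 - 32 * fps_X * Cf^567 * Di^576 * P4^2 * P2 + 64 * fps_X^2 * Cf^565 * Di^576 * P4^4 * P2) + 128 * (- 124 * fps_X * Cf^567 * Di^576 * P4^2 * P2 - 70328 * fps_X^2 * Cf^565 * Di^576 * P4^4 * P2 - 237983748 * fps_X^3 * Cf^563 * Di^576 * P4^6 * P2 - 11410848 * fps_X^4 * Cf^561 * Di^576 * P4^8 * P2) + (phiA^564 - (Cf^564 + 1128 * fps_X * Cf^562 * P4^2 + 633936 * fps_X^2 * Cf^560 * P4^4 + 2130024960 * fps_X^3 * Cf^558 * P4^6)) * (64 * fps_X * Cf * Di^576 * P2^5) + (phiA^566 - (Cf^566 + 1132 * fps_X * Cf^564 * P4^2 + 638448 * fps_X^2 * Cf^562 * P4^4 + 2152846656 * fps_X^3 * Cf^560 * P4^6)) * (- 64 * fps_X * Di^576 * P4 * P2^3) + (phiA^568 - (Cf^568 + 1136 * fps_X * Cf^566 * P4^2 + 642976 * fps_X^2 * Cf^564 * P4^4 + 2175830784 * fps_X^3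 * Cf^562 * P4^6)) * (- 14 * Cf * Di^576 * P2) + (P2^2 - Cf * P4) * (64 * fps_X * Cf^565 * Di^576 * P2^3 + 72192 * fps_X^2 * Cf^563 * Di^576 * P4^2 * P2^3 - 256 * fps_X^2 * Cf^564 * Di^576 * P4^3 * P2 + 40571904 * fps_X^3 * Cf^561 * Di^576 * P4^4 * P2^3 - 288768 * fps_X^3 * Cf^562 * Di^576 * P4^5 * P2 + 136321597440 * fps_X^4 * Cf^559 * Di^576 * P4^6 * P2^3 - 1460588544 * fps_X^4 * Cf^560 * Di^576 * P4^7 * P2)"
    unfolding Bi_A by algebra
  obtain h564 where h564: "phiA^564 = (Cf^564 + 1128 * fps_X * Cf^562 * P4^2 + 633936 * fps_X^2 * Cf^560 * P4^4 + 2130024960 * fps_X^3 * Cf^558 * P4^6) + 128 * h564" using inst_564 by blast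
  have d564: "phiA^564 - (Cf^564 + 1128 * fps_X * Cf^562 * P4^2 + 633936 * fps_X^2 * Cf^560 * P4^4 + 2130024960 * fps_X^3 * Cf^558 * P4^6) = 128 * h564" using h564 by simp
  obtain h566 where h566: "phiA^566 = (Cf^566 + 1132 * fps_X * Cf^564 * P4^2 + 638448 * fps_X^2 * Cf^562 * P4^4 + 2152846656 * fps_X^3 * Cf^560 * P4^6) + 128 * h566" using inst_566 by blast
  have d566: "phiA^566 - (Cf^566 + 1132 * fps_X * Cf^564 * P4^2 + 638448 * fps_X^2 * Cf^562 * P4^4 + 2152846656 * fps_X^3 * Cf^560 * P4^6) = 128 * h566" using h566 by simp
  obtain h568 where h568: "phiA^568 = (Cf^568 + 1136 * fps_X * Cf^566 * P4^2 + 642976 * fps_X^2 * Cf^564 * P4^4 + 2175830784 * fps_X^3 * Cf^562 * P4^6) + 128 * h568" using inst_568 by blast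
  have d568: "phiA^568 - (Cf^568 + 1136 * fps_X * Cf^566 * P4^2 + 642976 * fps_X^2 * Cf^564 * P4^4 + 2175830784 * fps_X^3 * Cf^562 * P4^6) = 128 * h568" using h568 by simp
  have R3z: "P2^2 - Cf * P4 = 0" using R3 by simp
  have "0 + Cf * (- 14 * phiA^280 * P2 * Bi^288 + 64 * fps_X * phiA^276 * P2^5 * Bi^288) + fps_X * (2 * P4) * (- 32 * phiA^278 * P2^3 * Bi^288) = (- 14 * Cf^569 * Di^576 * P2 - 32 * fps_X * Cf^567 * Di^576 * P4^2 * P2 + 64 * fps_X^2 * Cf^565 * Di^576 * P4^4 * P2) + 128 * (- 124 * fps_X * Cf^567 * Di^576 * P4^2 * P2 - 70328 * fps_X^2 * Cf^565 * Di^576 * P4^4 * P2 - 237983748 * fps_X^3 * Cf^563 * Di^576 * P4^6 * P2 - 11410848 * fps_X^4 * Cf^561 * Di^576 * P4^8 * P2) + (128 * h564) * (64 * fps_X * Cf * Di^576 * P2^5) + (128 * h566) * (- 64 * fps_X * Di^576 * P4 * P2^3) + (128 * h568) * (- 14 * Cf * Di^576 * P2) + 0 * (64 * fps_X * Cf^565 * Di^576 * P2^3 + 72192 * fps_X^2 * Cf^563 * Di^576 * P4^2 * P2^3 - 256 * fps_X^2 * Cf^564 * Di^576 * P4^3 * P2 + 40571904 * fps_X^3 * Cf^561 * Di^576 * P4^4 * P2^3 - 288768 * fps_X^3 * Cf^562 * Di^576 * P4^5 * P2 + 136321597440 * fps_X^4 * Cf^559 * Di^576 * P4^6 * P2^3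 - 1460588544 * fps_X^4 * Cf^560 * Di^576 * P4^7 * P2)"
    by (simp only: cert d564 d566 d568 R3z)
  also have "\<dots> = (- 14 * Cf^569 * Di^576 * P2 - 32 * fps_X * Cf^567 * Di^576 * P4^2 * P2 + 64 * fps_X^2 * Cf^565 * Di^576 * P4^4 * P2) + 128 * ((- 124 * fps_X * Cf^567 * Di^576 * P4^2 * P2 - 70328 * fps_X^2 * Cf^565 * Di^576 * P4^4 * P2 - 237983748 * fps_X^3 * Cf^563 * Di^576 * P4^6 * P2 - 11410848 * fps_X^4 * Cf^561 * Di^576 * P4^8 * P2) + h564 * (64 * fps_X * Cf * Di^576 * P2^5) + h566 * (- 64 * fps_X * Di^576 * P4 * P2^3) + h568 * (- 14 * Cf * Di^576 * P2))" by algebra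
  finally show ?thesis unfolding raw EO4_def by (rule cg_of_eq)
qed

definition T4 :: "int fps" where "T4 = (- 32 * phiA * Cf^1143 * Di^1152 * P4 * P1)"

lemma T4_eq: "cg (od EO4) T4"
proof -
  have dec: "EO4 = sub2 (- 14 * phiA^569 * P1 * Bi^576 + 64 * fps_X * phiA^565 * P2^4 * P1 * Bi^576) + fps_X * sub2 (- 32 * phiA^567 * P2^2 * P1 * Bi^576) + phiA * sub2 0 + fps_X * phiA * sub2 0"
    unfolding EO4_def by (simp only: sub2_add sub2_diff sub2_uminus sub2_mult sub2_power sub2_numeral sub2_X sub2_0 sub2_1 sub2_A sub2_Bi sub2_P2 sub2_P1) algebra
  have raw: "od EO4 = (- 32 * phiA^567 * P2^2 * P1 * Bi^576) + (2 * P4) * 0 + Cf * 0"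
    by (subst dec, simp only: od_four ev_A od_A)
  have cert: "(- 32 * phiA^567 * P2^2 * P1 * Bi^576) + (2 * P4) * 0 + Cf * 0 = (- 32 * phiA * Cf^1143 * Di^1152 * P4 * P1) + 128 * (- 571 * fps_X * phiA * Cf^1141 * Di^1152 * P4^3 * P1 - 650940 * fps_X^2 * phiA * Cf^1139 * Di^1152 * P4^5 * P1 - 4444618320 * fps_X^3 * phiA * Cf^1137 * Di^1152 * P4^7 * P1) + (phiA^1143 - phiA * (Cf^1142 + 2284 * fps_X * Cf^1140 * P4^2 + 2603760 * fps_X^2 * Cf^1138 * P4^4 + 17778473280 * fps_X^3 * Cf^1136 * P4^6)) * (- 32 * Di^1152 * P2^2 * P1) + (P2^2 - Cf * P4) * (- 32 * phiA * Cf^1142 * Di^1152 * P1 - 73088 * fps_X * phiA * Cf^1140 * Di^1152 * P4^2 * P1 - 83320320 * fps_X^2 * phiA * Cf^1138 * Di^1152 * P4^4 * P1 - 568911144960 * fps_X^3 * phiA * Cf^1136 * Di^1152 * P4^6 * P1)"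
    unfolding Bi_A by algebra
  obtain h1143 where h1143: "phiA^1143 = phiA * (Cf^1142 + 2284 * fps_X * Cf^1140 * P4^2 + 2603760 * fps_X^2 * Cf^1138 * P4^4 + 17778473280 * fps_X^3 * Cf^1136 * P4^6) + 128 * h1143" using inst_1143 by blast
  have d1143: "phiA^1143 - phiA * (Cf^1142 + 2284 * fps_X * Cf^1140 * P4^2 + 2603760 * fps_X^2 * Cf^1138 * P4^4 + 17778473280 * fps_X^3 * Cf^1136 * P4^6) = 128 * h1143" using h1143 by simp
  have R3z: "P2^2 - Cf * P4 = 0" using R3 by simp
  have "(- 32 * phiA^567 * P2^2 * P1 * Bi^576) + (2 * P4) * 0 + Cf * 0 = (- 32 * phiA * Cf^1143 * Di^1152 * P4 * P1) + 128 * (- 571 * fps_X * phiA * Cf^1141 * Di^1152 * P4^3 * P1 - 650940 * fps_X^2 * phiA * Cf^1139 * Di^1152 * P4^5 * P1 - 4444618320 * fps_X^3 * phiA * Cf^1137 * Di^1152 * P4^7 * P1) + (128 * h1143) * (- 32 * Di^1152 * P2^2 * P1) + 0 * (- 32 * phiA * Cf^1142 * Di^1152 * P1 - 73088 * fps_X * phiA * Cf^1140 * Di^1152 * P4^2 * P1 - 83320320 * fps_X^2 * phiA * Cf^1138 * Di^1152 * P4^4 * P1 - 568911144960 * fps_X^3 * phiA * Cf^1136 * Di^1152 * P4^6 * P1)"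
    by (simp only: cert d1143 R3z)
  also have "\<dots> = (- 32 * phiA * Cf^1143 * Di^1152 * P4 * P1) + 128 * ((- 571 * fps_X * phiA * Cf^1141 * Di^1152 * P4^3 * P1 - 650940 * fps_X^2 * phiA * Cf^1139 * Di^1152 * P4^5 * P1 - 4444618320 * fps_X^3 * phiA * Cf^1137 * Di^1152 * P4^7 * P1) + h1143 * (- 32 * Di^1152 * P2^2 * P1))" by algebra
  finally show ?thesis unfolding raw T4_def by (rule cg_of_eq)
qed



definition Qz :: "int fps" where "Qz = phiA * Cf * P4 * P1"

lemma unitCD: "\<exists>v. Cf^a * Di^b = 1 + 2 * v"
proof -
  obtain v1 where v1: "Cf = 1 + 2 * v1" using C_unit by blast
  obtain v2 where v2: "Di = 1 + 2 * v2" using Di_unit by blast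
  obtain w1 where w1: "Cf^a = 1 + 2 * w1" using unit_power[OF v1] by blast
  obtain w2 where w2: "Di^b = 1 + 2 * w2" using unit_power[OF v2] by blast
  have "Cf^a * Di^b = 1 + 2 * (w1 + w2 + 2 * w1 * w2)" unfolding w1 w2 by (simp add: algebra_simps)
  thus ?thesis by blast
qed

lemma cg_unit32:
  assumes "u = 1 + 2 * v"
  shows "cg (32 * u^2 * Q) (32 * Q)"
proof -
  have "32 * u^2 * Q = 32 * Q + 128 * ((v + v^2) * Q)"
    unfolding unit32[OF assms] by (simp add: algebra_simps)
  thus ?thesis by (rule cg_of_eq)
qed

lemma T1_red: "cg T1 (32 * Qz)"
proof -
  obtain v where v: "Cf^67 * Di^72 = 1 + 2 * v" using unitCD by blast
  have "T1 = 32 * (Cf^67 * Di^72)^2 * Qz" unfolding T1_def Qz_def by algebra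
  show ?thesis unfolding \<open>T1 = 32 * (Cf^67 * Di^72)^2 * Qz\<close> by (rule cg_unit32[OF v])
qed
lemma T2_red: "cg T2 (- (32 * Qz))"
proof -
  obtain v where v: "Cf^139 * Di^144 = 1 + 2 * v" using unitCD by blast
  have e: "T2 = - (32 * (Cf^139 * Di^144)^2 * Qz)" unfolding T2_def Qz_def by algebra
  show ?thesis unfolding e by (rule cg_uminus[OF cg_unit32[OF v]])
qed
lemma T3_red: "cg T3 (- (32 * Qz))"
proof -
  obtain v where v: "Cf^283 * Di^288 = 1 + 2 * v" using unitCD by blast
  have e: "T3 = - (32 * (Cf^283 * Di^288)^2 * Qz)" unfolding T3_def Qz_def by algebra
  show ?thesis unfolding e by (rule cg_uminus[OF cg_unit32[OF v]])
qed
lemma T4_red: "cg T4 (- (32 * Qz))"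
proof -
  obtain v where v: "Cf^571 * Di^576 = 1 + 2 * v" using unitCD by blast
  have e: "T4 = - (32 * (Cf^571 * Di^576)^2 * Qz)" unfolding T4_def Qz_def by algebra
  show ?thesis unfolding e by (rule cg_uminus[OF cg_unit32[OF v]])
qed

abbreviation "GG \<equiv> btbar_fps"

lemma g1: "cg (ev GG) H1" using H1_eq H0_eq by simp
lemma g2: "cg (ev (ev GG)) H2" by (rule cg_trans[OF cg_ev[OF g1] H2_eq])
lemma g3: "cg (ev (ev (ev GG))) H3" by (rule cg_trans[OF cg_ev[OF g2] H3_eq])
lemma g4: "cg (ev (ev (ev (ev GG)))) H4" by (rule cg_trans[OF cg_ev[OF g3] H4_eq])

lemma tchain:
  assumes "cg F Hk" "cg (od Hk) Ok" "cg (ev Ok) EOk" "cg (od EOk) Tk"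
  shows "cg (od (ev (od F))) Tk"
proof -
  have "cg (od F) Ok" using cg_trans[OF cg_od[OF assms(1)] assms(2)] .
  hence "cg (ev (od F)) EOk" using cg_trans[OF cg_ev assms(3)] by blast
  thus ?thesis using cg_trans[OF cg_od assms(4)] by blast
qed

lemma t1: "cg (od (ev (od (ev GG)))) (32 * Qz)"
  using cg_trans[OF tchain[OF g1 O1_eq EO1_eq T1_eq] T1_red] .
lemma t2: "cg (od (ev (od (ev (ev GG))))) (- (32 * Qz))"
  using cg_trans[OF tchain[OF g2 O2_eq EO2_eq T2_eq] T2_red] .
lemma t3: "cg (od (ev (od (ev (ev (ev GG)))))) (- (32 * Qz))"
  using cg_trans[OF tchain[OF g3 O3_eq EO3_eq T3_eq] T3_red] .
lemma t4: "cg (od (ev (od (ev (ev (ev (ev GG))))))) (- (32 * Qz))"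
  using cg_trans[OF tchain[OF g4 O4_eq EO4_eq T4_eq] T4_red] .

lemma i1: "(od (ev (od (ev GG)))) $ n = btbar (16*n+10)"
proof -
  have "(od (ev (od (ev GG)))) $ n = GG $ (2*(2*(2*(2*n+1))+1))" by (simp only: od_nth ev_nth)
  also have "2*(2*(2*(2*n+1))+1) = 16*n+10" by simp
  finally show ?thesis by (simp only: btbar_def)
qed
lemma i2: "(od (ev (od (ev (ev GG))))) $ n = btbar (32*n+20)"
proof -
  have "(od (ev (od (ev (ev GG))))) $ n = GG $ (2*(2*(2*(2*(2*n+1))+1)))" by (simp only: od_nth ev_nth)
  also have "2*(2*(2*(2*(2*n+1))+1)) = 32*n+20" by simp
  finally show ?thesis by (simp only: btbar_def)
qed
lemma i3: "(od (ev (od (ev (ev (ev GG)))))) $ n = btbar (64*n+40)"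
proof -
  have "(od (ev (od (ev (ev (ev GG)))))) $ n = GG $ (2*(2*(2*(2*(2*(2*n+1))+1))))" by (simp only: od_nth ev_nth)
  also have "2*(2*(2*(2*(2*(2*n+1))+1))) = 64*n+40" by simp
  finally show ?thesis by (simp only: btbar_def)
qed
lemma i4: "(od (ev (od (ev (ev (ev (ev GG))))))) $ n = btbar (128*n+80)"
proof -
  have "(od (ev (od (ev (ev (ev (ev GG))))))) $ n = GG $ (2*(2*(2*(2*(2*(2*(2*n+1))+1)))))" by (simp only: od_nth ev_nth)
  also have "2*(2*(2*(2*(2*(2*(2*n+1))+1)))) = 128*n+80" by simp
  finally show ?thesis by (simp only: btbar_def)
qed

theorem mainTheorem12:
  fixes n :: nat
  shows "[btbar (32*n+20) = btbar (64*n+40)] (mod 128)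
       \<and> [btbar (64*n+40) = btbar (128*n+80)] (mod 128)
       \<and> [btbar (128*n+80) = - btbar (16*n+10)] (mod 128)"
proof (intro conjI)
  show "[btbar (32*n+20) = btbar (64*n+40)] (mod 128)"
    using cg_nth[OF cg_trans[OF t2 cg_sym[OF t3]], of n] unfolding i2 i3 .
  show "[btbar (64*n+40) = btbar (128*n+80)] (mod 128)"
    using cg_nth[OF cg_trans[OF t3 cg_sym[OF t4]], of n] unfolding i3 i4 .
  have "cg (od (ev (od (ev (ev (ev (ev GG))))))) (- od (ev (od (ev GG))))"
    using cg_trans[OF t4 cg_sym[OF cg_uminus[OF t1]]] .
  from cg_nth[OF this, of n] show "[btbar (128*n+80) = - btbar (16*n+10)] (mod 128)"
    unfolding i4 fps_neg_nth i1 .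
qed


end
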